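(* Assume the standing assumptions and let $(s,c)$ be the solution of the space-discrete nonlinear system (NS) on $[0,T]\times\Omega_h^+$. Then there is a constant $K>0$, depending only on $\eta,\lambda,C_0,c_m,\varphi_{\min},\varphi_{\max},|B|,T,\|\psi\|_{C^\beta([0,T])},\|s_0\|_{L^2(\Omega_h^+)},\|D^+_hc_0\|_{L^2(\Omega_h^+)}$ (in particular independent of $h$ once these quantities are bounded), such that $$\sup_{t\in[0,T]}\|s(t,\cdot)\|^2_{L^2(\Omega_h^+)}+\int_0^T\|D^+_hs(t,\cdot)\|^2_{L^2(\Omega_h^+)}dt\le K.$$
   Context: Discrete setting: $h>0$, $\Omega_h^+=\{h,2h,\dots\}$, $\Omega_{h,0}^+=\Omega_h^+\cup\{0\}$; $\|f\|_{L^p(\Omega_h^+)}=(h\sum_{z\in\Omega_h^+}|f(z)|^p)^{1/p}$; $D^+_hf(x)=\frac{f(x+h)-f(x)}{h}$, $D^-_hf(x)=\frac{f(x)-f(x-h)}{h}$, $\Delta_h=D^+_hD^-_h$. Standing assumptions: $A=1$, $B\in\{-1,1\}$, $\varphi(c)=A+Bc$, $\lambda>0$, $T>0$, $\eta>0$; $\psi\in C^\beta([0,T])$ for some $\beta\in(1/4,1/2)$, $0\le\psi\le\eta$, $\psi(0)=0$; $0\le s_0\le\eta$, $s_0(0)=0$, $s_0,D^+_hs_0\in L^2(\Omega_h^+)$; $0<c_m\le c_0\le C_0$, $C_0-c_0,D^+_hc_0\in L^2(\Omega_h^+)$; $0<\varphi_{\min}\le\varphi(c)\le\varphi_{\max}$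 for $c\in[0,C_0]$; if $B=1$ then $\eta<1$. System (NS): with $b_c=\frac{B}{2(A+Bc)}$ and $\gamma_c=\lambda c$, $\partial_ts=\Delta_hs+b_c[D^+_hc\,D^+_hs+D^-_hc\,D^-_hs]+\gamma_cBs^2-\gamma_cs$, $\partial_tc=-\lambda\varphi(c)sc$ on $(0,T]\times\Omega_h^+$; $s(0,x)=s_0(x)$, $c(0,x)=c_0(x)$ for $x\in\Omega_h^+$; $s(t,0)=\psi(t)$, $c(t,0)=Ac_0(0)[\varphi(c_0(0))e^{\lambda A\int_0^t\psi(\tau)d\tau}-Bc_0(0)]^{-1}$. *)

theory Defs
  imports "HOL-Analysis.Analysis"
begin

text \<open>Grid functions on \<Omega>_{h,0}^+ = {0,h,2h,...} are represented as
  functions nat \<Rightarrow> real: index k stands for the grid point k*h.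
  \<Omega>_h^+ corresponds to the indices k \<ge> 1.\<close>

definition Dp :: "real \<Rightarrow> (nat \<Rightarrow> real) \<Rightarrow> nat \<Rightarrow> real" where
  "Dp h f k = (f (Suc k) - f k) / h"

definition Dm :: "real \<Rightarrow> (nat \<Rightarrow> real) \<Rightarrow> nat \<Rightarrow> real" where
  "Dm h f k = (f k - f (k - 1)) / h"

definition Lap :: "real \<Rightarrow> (nat \<Rightarrow> real) \<Rightarrow> nat \<Rightarrow> real" where
  "Lap h f k = Dp h (Dm h f) k"

text \<open>Squared L^2(\<Omega>_h^+) norm, h * sum over k \<ge> 1 of |f(kh)|^2, as an extended
  nonnegative real (always well defined).\<close>
definition l2sq :: "real \<Rightarrow> (nat \<Rightarrow> real) \<Rightarrow> ennreal" where
  "l2sq h f = (\<Sum>k. ennreal (h * (f (Suc k))\<^sup>2))"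

definition in_l2 :: "(nat \<Rightarrow> real) \<Rightarrow> bool" where
  "in_l2 f \<longleftrightarrow> summable (\<lambda>k. (f (Suc k))\<^sup>2)"

text \<open>Real-valued squared L^2(\<Omega>_h^+) norm (meaningful when in_l2 f).\<close>
definition l2sq_r :: "real \<Rightarrow> (nat \<Rightarrow> real) \<Rightarrow> real" where
  "l2sq_r h f = h * (\<Sum>k. (f (Suc k))\<^sup>2)"

definition holder_bdd :: "real \<Rightarrow> real \<Rightarrow> (real \<Rightarrow> real) \<Rightarrow> real \<Rightarrow> bool" where
  "holder_bdd \<beta> T \<psi> M \<longleftrightarrow>
     (\<forall>t\<in>{0..T}. \<bar>\<psi> t\<bar> \<le> M) \<and>
     (\<forall>t\<in>{0..T}. \<forall>u\<in>{0..T}. \<bar>\<psi> t - \<psi> u\<bar> \<le> M * \<bar>t - u\<bar> powr \<beta>)"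

text \<open>\<phi>(c) = A + B c with A = 1.\<close>
definition phi :: "real \<Rightarrow> real \<Rightarrow> real" where
  "phi B x = 1 + B * x"

definition NS_solution ::
  "real \<Rightarrow> real \<Rightarrow> real \<Rightarrow> real \<Rightarrow> (real \<Rightarrow> real) \<Rightarrow> (nat \<Rightarrow> real) \<Rightarrow> (nat \<Rightarrow> real)
   \<Rightarrow> (real \<Rightarrow> nat \<Rightarrow> real) \<Rightarrow> (real \<Rightarrow> nat \<Rightarrow> real) \<Rightarrow> bool" where
  "NS_solution h T lam B \<psi> s0 c0 s c \<longleftrightarrow>
     (\<forall>k. continuous_on {0..T} (\<lambda>t. s t k)) \<and>
     (\<forall>k. continuous_on {0..T} (\<lambda>t. c t k)) \<and>
     (\<forall>k\<ge>1. \<forall>t\<in>{0<..T}.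
        ((\<lambda>\<tau>. s \<tau> k) has_real_derivative
           (Lap h (s t) k
            + B / (2 * phi B (c t k)) *
                (Dp h (c t) k * Dp h (s t) k + Dm h (c t) k * Dm h (s t) k)
            + lam * c t k * B * (s t k)\<^sup>2 - lam * c t k * s t k))
          (at t within {0..T})) \<and>
     (\<forall>k\<ge>1. \<forall>t\<in>{0<..T}.
        ((\<lambda>\<tau>. c \<tau> k) has_real_derivative
           (- lam * phi B (c t k) * s t k * c t k)) (at t within {0..T})) \<and>
     (\<forall>k\<ge>1. s 0 k = s0 k \<and> c 0 k = c0 k) \<and>
     (\<forall>t\<in>{0..T}. s t 0 = \<psi> t \<and>
        c t 0 = c0 0 / (phi B (c0 0) * exp (lam * integral {0..t} \<psi>) - B * c0 0)) \<and>
     (\<exists>M. \<forall>t\<in>{0..T}. in_l2 (s t) \<and> l2sq_r h (s t) \<le> M) \<and>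
     (\<exists>M. \<forall>t\<in>{0..T}. \<forall>k. \<bar>c t k\<bar> \<le> M)"

end

theory Submission
  imports Defs "HOL-Analysis.Analysis"
begin



lemma mono_phi:
  fixes \<Phi> \<Phi>' :: "real \<Rightarrow> real"
  assumes "0 \<le> T" "continuous_on {0..T} \<Phi>"
    and "\<And>t. 0 < t \<Longrightarrow> t < T \<Longrightarrow> (\<Phi> has_real_derivative \<Phi>' t) (at t)"
    and "\<And>t. 0 < t \<Longrightarrow> t < T \<Longrightarrow> \<Phi>' t \<le> 0"
    and "t \<in> {0..T}"
  shows "\<Phi> t \<le> \<Phi> 0"
proof -
  have c: "continuous_on {0..t} \<Phi>"
    using assms(2) by (rule continuous_on_subset) (use assms in auto)
  have d: "\<exists>y. (\<Phi> has_real_derivative y) (at x) \<and> y \<le> 0" if "0 < x" "x < t" for x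
    using assms(3,4,5) that by fastforce
  show ?thesis
    using DERIV_nonpos_imp_decreasing_open[of 0 t \<Phi>, OF _ d c] assms(5) by auto
qed


lemma linear_ode:
  fixes u p :: "real \<Rightarrow> real"
  assumes "0 \<le> T" "continuous_on {0..T} u" "continuous_on {0..T} p"
    and "\<And>t. 0 < t \<Longrightarrow> t < T \<Longrightarrow> (u has_real_derivative (p t * u t)) (at t)"
    and "t \<in> {0..T}"
  shows "u t = u 0 * exp (integral {0..t} p)"
proof -
  define v where "v = (\<lambda>t. u t * exp (- integral {0..t} p))"
  have P: "((\<lambda>x. integral {0..x} p) has_real_derivative p t) (at t)" if "0 < t" "t < T" for t
  proof -
    have d: "((\<lambda>x. integral {0..x} p) has_real_derivative p t) (at t within {0..T})"
    proof -
      have "t \<in> {0..T}" using that by simp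
      then show ?thesis by (rule integral_has_real_derivative[OF assms(3)])
    qed
    moreover have i: "t \<in> interior {0..T}" using that by auto
    show ?thesis using d unfolding at_within_interior[OF i] .
  qed
  have cP: "continuous_on {0..T} (\<lambda>x. integral {0..x} p)"
    by (rule indefinite_integral_continuous_1) (rule integrable_continuous_real[OF assms(3)])
  have cv: "continuous_on {0..T} v"
    unfolding v_def
    by (rule continuous_on_mult[OF assms(2)], rule continuous_on_exp, rule continuous_on_minus, rule cP)
  have "v t = v 0"
  proof (cases "t = 0")
    case False
    then have t: "0 < t" "t \<le> T" using assms(5) by (auto simp: less_le)
    show ?thesis
    proof (rule DERIV_isconst_end[of 0 t v])
      show "0 < t" by fact
      show "continuous_on {0..t} v" using cv by (rule continuous_on_subset) (use t in auto)
      fix x assume x: "0 < x" "x < t"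
      have d1: "(u has_real_derivative (p x * u x)) (at x)" using assms(4) x t by auto
      have d2: "((\<lambda>x. exp (- integral {0..x} p)) has_real_derivative exp (- integral {0..x} p) * (- p x)) (at x)"
        by (rule DERIV_fun_exp, rule DERIV_minus, rule P) (use x t in auto)
      have "(v has_real_derivative (p x * u x) * exp (- integral {0..x} p) + (exp (- integral {0..x} p) * (- p x)) * u x) (at x)"
        unfolding v_def by (rule DERIV_mult[OF d1 d2])
      then show "(v has_real_derivative 0) (at x)" by (simp add: algebra_simps)
    qed
  qed simp
  then have "u t * exp (- integral {0..t} p) = u 0" unfolding v_def by simp
  then have "u t * exp (- integral {0..t} p) * exp (integral {0..t} p) = u 0 * exp (integral {0..t} p)" by simp
  then show ?thesis by (simp add: mult.assoc flip: exp_add)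
qed



lemma deriv_possq:
  fixes y :: "real \<Rightarrow> real"
  assumes "(y has_real_derivative y') (at x)"
  shows "((\<lambda>t. (max 0 (y t))\<^sup>2) has_real_derivative 2 * max 0 (y x) * y') (at x)"
proof -
  have xx: "w * w / w = w" for w :: real by (cases "w = 0") auto
  have g: "((\<lambda>z. (max 0 z)\<^sup>2) has_real_derivative 2 * max 0 z) (at z)" for z :: real
  proof (cases "z = 0")
    case True
    have "((\<lambda>w. (max 0 w)\<^sup>2) has_real_derivative 0) (at 0)"
      unfolding has_field_derivative_iff
    proof (rule tendsto_sandwich[where f="\<lambda>_. 0" and h="\<lambda>w. \<bar>w\<bar>"])
      show "\<forall>\<^sub>F w in at (0::real). (0::real) \<le> ((max 0 w)\<^sup>2 - (max 0 0)\<^sup>2) / (w - 0)"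
        by (intro eventuallyI) (simp add: max_def power2_eq_square xx)
      show "\<forall>\<^sub>F w in at (0::real). ((max 0 w)\<^sup>2 - (max 0 0)\<^sup>2) / (w - 0) \<le> \<bar>w\<bar>"
        by (intro eventuallyI) (simp add: max_def power2_eq_square xx)
      show "((\<lambda>_. 0::real) \<longlongrightarrow> 0) (at 0)" by simp
      show "((\<lambda>w::real. \<bar>w\<bar>) \<longlongrightarrow> 0) (at 0)"
        using tendsto_rabs_zero_iff[of "\<lambda>w::real. w" "at 0"] by simp
    qed
    then show ?thesis using True by simp
  next
    case False
    show ?thesis
    proof (cases "z > 0")
      case True
      have d: "((\<lambda>w. w\<^sup>2) has_real_derivative 2 * max 0 z) (at z)"
        using DERIV_pow[of 2 z] True by simp
      show ?thesis
        by (rule has_field_derivative_transform_within_open[OF d, of "{0<..}"]) (use True in auto)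
    next
      case False
      with \<open>z \<noteq> 0\<close> have z: "z < 0" by auto
      have d: "((\<lambda>w. 0) has_real_derivative 2 * max 0 z) (at z)" using z by simp
      show ?thesis
        by (rule has_field_derivative_transform_within_open[OF d, of "{..<0}"]) (use z in auto)
    qed
  qed
  show ?thesis
    using DERIV_chain2[OF g assms] by (simp add: mult.assoc)
qed


lemma sum_shift_up:
  fixes f :: "nat \<Rightarrow> real"
  shows "(\<Sum>k=1..N. f (Suc k)) = (\<Sum>k=1..N. f k) - f 1 + f (Suc N)"
  by (induction N) (auto simp: sum.cl_ivl_Suc)

lemma sum_shift_down:
  fixes f :: "nat \<Rightarrow> real"
  shows "N \<ge> 1 \<Longrightarrow> (\<Sum>k=1..N. f (k - 1)) = f 0 + (\<Sum>k=1..N. f k) - f N"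
proof (induction N)
  case 0 then show ?case by simp
next
  case (Suc n)
  show ?case
  proof (cases "n = 0")
    case True then show ?thesis by simp
  next
    case False
    then have "n \<ge> 1" by simp
    then show ?thesis using Suc.IH by (simp add: sum.cl_ivl_Suc)
  qed
qed

lemma sbp:
  fixes w s a d :: "nat \<Rightarrow> real"
  shows "(\<Sum>k=1..Suc n. w k * (a k * (s (Suc k) - s k) - d k * (s k - s (k - 1)))) =
    - (\<Sum>k=1..n. a k * (w (Suc k) - w k) * (s (Suc k) - s k))
    - (\<Sum>k=1..n. (d (Suc k) - a k) * w (Suc k) * (s (Suc k) - s k))
    + a (Suc n) * w (Suc n) * (s (Suc (Suc n)) - s (Suc n)) - d 1 * w 1 * (s 1 - s 0)"
proof (induction n)
  case 0 then show ?case by (simp add: algebra_simps)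
next
  case (Suc n)
  have e: "(\<Sum>k=1..Suc (Suc n). w k * (a k * (s (Suc k) - s k) - d k * (s k - s (k - 1)))) =
     (\<Sum>k=1..Suc n. w k * (a k * (s (Suc k) - s k) - d k * (s k - s (k - 1))))
     + w (Suc (Suc n)) * (a (Suc (Suc n)) * (s (Suc (Suc (Suc n))) - s (Suc (Suc n))) - d (Suc (Suc n)) * (s (Suc (Suc n)) - s (Suc n)))"
    by (simp add: sum.cl_ivl_Suc)
  show ?case unfolding e Suc.IH by (simp add: sum.cl_ivl_Suc algebra_simps)
qed

lemma concave_powr:
  fixes a b g :: real
  assumes "0 < g" "g < 1" "0 \<le> a" "a \<le> b" "0 < b"
  shows "(1 - g) * (b - a) * b powr (- g) \<le> b powr (1 - g) - a powr (1 - g)"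
proof (cases "a = 0")
  case True
  have "(1 - g) * b * b powr (- g) = (1 - g) * b powr (1 - g)"
    using assms by (simp add: powr_diff powr_minus divide_simps)
  also have "\<dots> \<le> b powr (1 - g)" using assms by (simp add: mult_le_cancel_right1)
  finally show ?thesis using True by simp
next
  case False
  then have a: "0 < a" using assms by simp
  show ?thesis
  proof (cases "a = b")
    case True then show ?thesis by simp
  next
    case False
    then have ab: "a < b" using assms by simp
    have der: "((\<lambda>x. x powr (1 - g)) has_real_derivative (1 - g) * x powr (1 - g - 1)) (at x)"
      if "a \<le> x" "x \<le> b" for x
    proof -
      have "0 < x" using a that by simp
      then show ?thesis by (rule has_real_derivative_powr)
    qed
    have "\<exists>z. a < z \<and> z < b \<and> b powr (1 - g) - a powr (1 - g) = (b - a) * ((1 - g) * z powr (1 - g - 1))"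
      by (rule MVT2[OF ab der])
    then obtain z where z: "a < z" "z < b" "b powr (1 - g) - a powr (1 - g) = (b - a) * ((1 - g) * z powr (- g))"
      by auto
    have "b powr (- g) \<le> z powr (- g)"
      using z a assms by (intro powr_mono2') auto
    then have "(1 - g) * (b - a) * b powr (- g) \<le> (1 - g) * (b - a) * z powr (- g)"
      using assms ab by (intro mult_left_mono) auto
    then show ?thesis using z(3) by (simp add: algebra_simps)
  qed
qed

lemma riemann_powr:
  fixes g h :: real
  assumes "0 < g" "g < 1" "0 < h"
  shows "h * (\<Sum>k=1..N. (if real k * h \<le> 1 then (real k * h) powr (- g) else 0))
          \<le> (min (real N * h) 1) powr (1 - g) / (1 - g)"
proof (induction N)
  case 0 then show ?case by simp
next
  case (Suc N)
  have NS: "real N * h \<le> real (Suc N) * h" using assms by (intro mult_right_mono) auto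
  show ?case
  proof (cases "real (Suc N) * h \<le> 1")
    case True
    from NS have mN: "min (real N * h) 1 = real N * h" and mS: "min (real (Suc N) * h) 1 = real (Suc N) * h"
      using True by auto
    have c: "(1 - g) * (real (Suc N) * h - real N * h) * (real (Suc N) * h) powr (- g)
        \<le> (real (Suc N) * h) powr (1 - g) - (real N * h) powr (1 - g)"
      by (rule concave_powr) (use assms in auto)
    have "h * (\<Sum>k=1..Suc N. (if real k * h \<le> 1 then (real k * h) powr (- g) else 0))
       = h * (\<Sum>k=1..N. (if real k * h \<le> 1 then (real k * h) powr (- g) else 0)) + h * (real (Suc N) * h) powr (- g)"
      using True by (simp add: sum.cl_ivl_Suc algebra_simps)
    also have "\<dots> \<le> (real N * h) powr (1 - g) / (1 - g) + h * (real (Suc N) * h) powr (- g)"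
      using Suc.IH mN by simp
    also have "\<dots> \<le> (real (Suc N) * h) powr (1 - g) / (1 - g)"
    proof -
      have hh: "real (Suc N) * h - real N * h = h" by (simp add: algebra_simps)
      have "(real N * h) powr (1 - g) + (1 - g) * (h * (real (Suc N) * h) powr (- g)) \<le> (real (Suc N) * h) powr (1 - g)"
        using c unfolding hh by (simp add: algebra_simps)
      then have "((real N * h) powr (1 - g) + (1 - g) * (h * (real (Suc N) * h) powr (- g))) / (1 - g) \<le> (real (Suc N) * h) powr (1 - g) / (1 - g)"
        using assms by (intro divide_right_mono) auto
      then show ?thesis using assms by (simp add: add_divide_distrib)
    qed
    finally show ?thesis using mS by simp
  next
    case False
    define F where "F = (\<lambda>k::nat. if real k * h \<le> 1 then (real k * h) powr (- g) else 0)"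
    have "F (Suc N) = 0" unfolding F_def using False by simp
    then have "h * (\<Sum>k=1..Suc N. (if real k * h \<le> 1 then (real k * h) powr (- g) else 0))
       = h * (\<Sum>k=1..N. (if real k * h \<le> 1 then (real k * h) powr (- g) else 0))"
      unfolding F_def[symmetric] by (simp add: sum.cl_ivl_Suc)
    also have "\<dots> \<le> (min (real N * h) 1) powr (1 - g) / (1 - g)" by (rule Suc.IH)
    also have "\<dots> \<le> (min (real (Suc N) * h) 1) powr (1 - g) / (1 - g)"
    proof -
      have "min (real N * h) 1 \<le> min (real (Suc N) * h) 1" using NS by (rule min.mono) simp
      then show ?thesis using assms by (intro divide_right_mono powr_mono2) auto
    qed
    finally show ?thesis .
  qed
qed

lemma riemann_powr1:
  fixes g h :: real
  assumes "0 < g" "g < 1" "0 < h"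
  shows "h * (\<Sum>k=1..N. (if real k * h \<le> 1 then (real k * h) powr (- g) else 0)) \<le> 1 / (1 - g)"
proof -
  have "(min (real N * h) 1) powr (1 - g) \<le> 1"
    using assms by (intro powr_le1) auto
  then show ?thesis using riemann_powr[OF assms, of N] assms
    by (smt (verit) divide_right_mono)
qed


lemma cont_int0:
  fixes f :: "real \<Rightarrow> real"
  assumes "continuous_on {0..T} f"
  shows "continuous_on {0..T} (\<lambda>t. integral {0..t} f)"
  by (rule indefinite_integral_continuous_1) (rule integrable_continuous_real[OF assms])

lemma deriv_int0:
  fixes f :: "real \<Rightarrow> real"
  assumes "continuous_on {0..T} f" "0 < t" "t < T"
  shows "((\<lambda>t. integral {0..t} f) has_real_derivative f t) (at t)"
proof -
  have "t \<in> {0..T}" using assms by simp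
  then have d: "((\<lambda>t. integral {0..t} f) has_real_derivative f t) (at t within {0..T})"
    by (rule integral_has_real_derivative[OF assms(1)])
  have i: "t \<in> interior {0..T}" using assms by simp
  show ?thesis using d unfolding at_within_interior[OF i] .
qed

lemma int_mono_sub:
  fixes f :: "real \<Rightarrow> real"
  assumes "continuous_on {0..T} f" "\<And>t. t \<in> {0..T} \<Longrightarrow> 0 \<le> f t" "t \<in> {0..T}"
  shows "integral {0..t} f \<le> integral {0..T} f"
proof -
  have i: "f integrable_on {0..T}" by (rule integrable_continuous_real[OF assms(1)])
  have "f integrable_on {0..t}" by (rule integrable_on_subinterval[OF i]) (use assms in auto)
  then show ?thesis
    by (intro integral_subset_le i) (use assms in auto)
qed

lemma maxprin:
  fixes y a d r :: "real \<Rightarrow> nat \<Rightarrow> real" and h T A L :: real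
  assumes h: "h > 0" and T: "T > 0" and L: "L \<ge> 0" and A: "A \<ge> 0"
    and cont: "\<And>k. continuous_on {0..T} (\<lambda>t. y t k)"
    and der: "\<And>k t. k \<ge> 1 \<Longrightarrow> 0 < t \<Longrightarrow> t < T \<Longrightarrow> ((\<lambda>\<tau>. y \<tau> k) has_real_derivative
        ((a t k * (y t (Suc k) - y t k) + d t k * (y t (k - 1) - y t k)) / h\<^sup>2 + r t k)) (at t)"
    and ad: "\<And>k t. k \<ge> 1 \<Longrightarrow> 0 < t \<Longrightarrow> t < T \<Longrightarrow> 0 \<le> a t k \<and> a t k \<le> A \<and> 0 \<le> d t k \<and> d t k \<le> A"
    and r: "\<And>k t. k \<ge> 1 \<Longrightarrow> 0 < t \<Longrightarrow> t < T \<Longrightarrow> y t k > 0 \<Longrightarrow> r t k \<le> L * y t k"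
    and b0: "\<And>t. t \<in> {0..T} \<Longrightarrow> y t 0 \<le> 0"
    and i0: "\<And>k. k \<ge> 1 \<Longrightarrow> y 0 k \<le> 0"
    and tail: "(\<lambda>N. integral {0..T} (\<lambda>t. (max 0 (y t N))\<^sup>2)) \<longlonglongrightarrow> 0"
    and tk: "t \<in> {0..T}" "k \<ge> 1"
  shows "y t k \<le> 0"
proof -
  define p where "p = (\<lambda>t k. max 0 (y t k))"
  define L1 where "L1 = 4 * A / h\<^sup>2 + 2 * L"
  have L1: "L1 \<ge> 0" unfolding L1_def using A L h by simp
  have p0: "p t 0 = 0" if "t \<in> {0..T}" for t using b0[OF that] unfolding p_def by simp
  have pnn: "p t k \<ge> 0" for t k unfolding p_def by simp
  have cp: "continuous_on {0..T} (\<lambda>t. (p t k)\<^sup>2)" for k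
    unfolding p_def by (intro continuous_intros cont)
  have key: "\<And>N. N \<ge> 1 \<Longrightarrow> (\<Sum>k=1..N. (p t k)\<^sup>2) \<le> exp (L1 * T) * (A / h\<^sup>2) * integral {0..T} (\<lambda>t. (p t (Suc N))\<^sup>2)"
  proof -
    fix N :: nat assume N: "N \<ge> 1"
    note t = tk(1)
    define V where "V = (\<lambda>t. \<Sum>k=1..N. (p t k)\<^sup>2)"
    define q where "q = (\<lambda>t. (A / h\<^sup>2) * (exp (- L1 * t) * (p t (Suc N))\<^sup>2))"
    define \<Phi> where "\<Phi> = (\<lambda>t. exp (- L1 * t) * V t - integral {0..t} q)"
    have cq: "continuous_on {0..T} q" unfolding q_def by (intro continuous_intros cp)
    have cV: "continuous_on {0..T} V" unfolding V_def by (intro continuous_intros cp)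
    have c\<Phi>: "continuous_on {0..T} \<Phi>" unfolding \<Phi>_def
      by (intro continuous_intros cV cont_int0 cq)
    define V' where "V' = (\<lambda>t. \<Sum>k=1..N. 2 * p t k * ((a t k * (y t (Suc k) - y t k) + d t k * (y t (k - 1) - y t k)) / h\<^sup>2 + r t k))"
    have dV: "(V has_real_derivative V' t) (at t)" if "0 < t" "t < T" for t
      unfolding V_def V'_def p_def
      by (rule DERIV_sum, rule deriv_possq, rule der) (use that in auto)
    have V'le: "V' t \<le> L1 * V t + (A / h\<^sup>2) * (p t (Suc N))\<^sup>2" if tl: "0 < t" "t < T" for t
    proof -
      have tt: "t \<in> {0..T}" using that by auto
      have trm: "p t k * ((a t k * (y t (Suc k) - y t k) + d t k * (y t (k - 1) - y t k)) / h\<^sup>2 + r t k)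
          \<le> (A / (2 * h\<^sup>2)) * (2 * (p t k)\<^sup>2 + (p t (Suc k))\<^sup>2 + (p t (k - 1))\<^sup>2) + L * (p t k)\<^sup>2"
        if k: "k \<ge> 1" for k
      proof (cases "y t k > 0")
        case False
        then have "p t k = 0" unfolding p_def by simp
        then show ?thesis using A h L by (simp add: pnn)
      next
        case True
        then have pk: "p t k = y t k" unfolding p_def by simp
        have a1: "y t (Suc k) - y t k \<le> p t (Suc k) - p t k" using pk unfolding p_def by simp
        have d1: "y t (k - 1) - y t k \<le> p t (k - 1) - p t k" using pk unfolding p_def by simp
        have ad': "0 \<le> a t k" "a t k \<le> A" "0 \<le> d t k" "d t k \<le> A"
          using ad[OF k tl] by auto
        have "a t k * (y t (Suc k) - y t k) \<le> a t k * (p t (Suc k) - p t k)"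
          using a1 ad' by (intro mult_left_mono) auto
        also have "\<dots> \<le> a t k * p t (Suc k)" using ad' pnn by (simp add: algebra_simps mult_nonneg_nonneg)
        finally have A1: "a t k * (y t (Suc k) - y t k) \<le> a t k * p t (Suc k)" .
        have "d t k * (y t (k - 1) - y t k) \<le> d t k * (p t (k - 1) - p t k)"
          using d1 ad' by (intro mult_left_mono) auto
        also have "\<dots> \<le> d t k * p t (k - 1)" using ad' pnn by (simp add: algebra_simps mult_nonneg_nonneg)
        finally have D1: "d t k * (y t (k - 1) - y t k) \<le> d t k * p t (k - 1)" .
        have "y t k * r t k \<le> y t k * (L * y t k)"
          using r[OF k tl True] True by (intro mult_left_mono) auto
        then have R1: "p t k * r t k \<le> L * (p t k)\<^sup>2"
          using pk by (simp add: power2_eq_square algebra_simps)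
        have "p t k * ((a t k * (y t (Suc k) - y t k) + d t k * (y t (k - 1) - y t k)) / h\<^sup>2 + r t k)
            = p t k * (a t k * (y t (Suc k) - y t k) + d t k * (y t (k - 1) - y t k)) / h\<^sup>2 + p t k * r t k"
          by (simp add: algebra_simps)
        also have "\<dots> \<le> p t k * (a t k * p t (Suc k) + d t k * p t (k - 1)) / h\<^sup>2 + L * (p t k)\<^sup>2"
        proof -
          have "p t k * (a t k * (y t (Suc k) - y t k) + d t k * (y t (k - 1) - y t k)) \<le> p t k * (a t k * p t (Suc k) + d t k * p t (k - 1))"
            by (rule mult_left_mono) (use A1 D1 pnn in auto)
          then show ?thesis using R1 h by (intro add_mono divide_right_mono) auto
        qed
        also have "\<dots> \<le> p t k * (A * p t (Suc k) + A * p t (k - 1)) / h\<^sup>2 + L * (p t k)\<^sup>2"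
        proof -
          have "a t k * p t (Suc k) \<le> A * p t (Suc k)" "d t k * p t (k - 1) \<le> A * p t (k - 1)"
            using ad' pnn by (auto intro: mult_right_mono)
          then have "p t k * (a t k * p t (Suc k) + d t k * p t (k - 1)) \<le> p t k * (A * p t (Suc k) + A * p t (k - 1))"
            by (intro mult_left_mono) (use pnn in auto)
          then show ?thesis using h by (intro add_mono divide_right_mono) auto
        qed
        also have "\<dots> \<le> (A / (2 * h\<^sup>2)) * (2 * (p t k)\<^sup>2 + (p t (Suc k))\<^sup>2 + (p t (k - 1))\<^sup>2) + L * (p t k)\<^sup>2"
        proof -
          have "2 * (p t k * p t (Suc k)) \<le> (p t k)\<^sup>2 + (p t (Suc k))\<^sup>2"
            using sum_squares_bound[of "p t k" "p t (Suc k)"] by (simp add: power2_eq_square)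
          moreover have "2 * (p t k * p t (k - 1)) \<le> (p t k)\<^sup>2 + (p t (k - 1))\<^sup>2"
            using sum_squares_bound[of "p t k" "p t (k - 1)"] by (simp add: power2_eq_square)
          ultimately have "A * (2 * (p t k * p t (Suc k)) + 2 * (p t k * p t (k - 1))) \<le> A * (2 * (p t k)\<^sup>2 + (p t (Suc k))\<^sup>2 + (p t (k - 1))\<^sup>2)"
            using A by (intro mult_left_mono) auto
          then have "A * (2 * (p t k * p t (Suc k)) + 2 * (p t k * p t (k - 1))) / (2 * h\<^sup>2) \<le> A * (2 * (p t k)\<^sup>2 + (p t (Suc k))\<^sup>2 + (p t (k - 1))\<^sup>2) / (2 * h\<^sup>2)"
            using h by (intro divide_right_mono) auto
          moreover have "p t k * (A * p t (Suc k) + A * p t (k - 1)) / h\<^sup>2 = A * (2 * (p t k * p t (Suc k)) + 2 * (p t k * p t (k - 1))) / (2 * h\<^sup>2)"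
            using h by (simp add: field_simps)
          ultimately show ?thesis by simp
        qed
        finally show ?thesis .
      qed
      have "V' t = 2 * (\<Sum>k=1..N. p t k * ((a t k * (y t (Suc k) - y t k) + d t k * (y t (k - 1) - y t k)) / h\<^sup>2 + r t k))"
        unfolding V'_def by (simp add: sum_distrib_left mult.assoc)
      also have "\<dots> \<le> 2 * (\<Sum>k=1..N. (A / (2 * h\<^sup>2)) * (2 * (p t k)\<^sup>2 + (p t (Suc k))\<^sup>2 + (p t (k - 1))\<^sup>2) + L * (p t k)\<^sup>2)"
        using trm by (intro mult_left_mono sum_mono) auto
      also have "\<dots> = (A / h\<^sup>2) * (2 * V t + (\<Sum>k=1..N. (p t (Suc k))\<^sup>2) + (\<Sum>k=1..N. (p t (k - 1))\<^sup>2)) + 2 * L * V t"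
        unfolding V_def by (simp add: sum.distrib sum_distrib_left algebra_simps)
      also have "\<dots> \<le> (A / h\<^sup>2) * (2 * V t + (V t + (p t (Suc N))\<^sup>2) + V t) + 2 * L * V t"
      proof -
        have s1: "(\<Sum>k=1..N. (p t (Suc k))\<^sup>2) \<le> V t + (p t (Suc N))\<^sup>2"
          unfolding V_def using sum_shift_up[of "\<lambda>k. (p t k)\<^sup>2" N] by simp
        have s2: "(\<Sum>k=1..N. (p t (k - 1))\<^sup>2) \<le> V t"
          unfolding V_def using sum_shift_down[of N "\<lambda>k. (p t k)\<^sup>2"] N p0[OF tt] by simp
        show ?thesis using s1 s2 A h L by (intro add_mono mult_left_mono) auto
      qed
      also have "\<dots> = L1 * V t + (A / h\<^sup>2) * (p t (Suc N))\<^sup>2"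
        unfolding L1_def by (simp add: algebra_simps)
      finally show ?thesis .
    qed
    have "\<Phi> t \<le> \<Phi> 0"
    proof (rule mono_phi[where \<Phi>'="\<lambda>t. exp (- L1 * t) * (V' t - L1 * V t) - q t"])
      show "0 \<le> T" using T by simp
      show "continuous_on {0..T} \<Phi>" by fact
      show "t \<in> {0..T}" by fact
      fix s assume s: "0 < s" "s < T"
      have "((\<lambda>t. exp (- L1 * t)) has_real_derivative exp (- L1 * s) * (- L1)) (at s)"
        using DERIV_fun_exp[OF DERIV_cmult_Id[of "- L1"]] by simp
      from DERIV_mult[OF this dV[OF s]] have "((\<lambda>t. exp (- L1 * t) * V t) has_real_derivative exp (- L1 * s) * (- L1) * V s + V' s * exp (- L1 * s)) (at s)" .
      from DERIV_diff[OF this deriv_int0[OF cq s]]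
      show "(\<Phi> has_real_derivative exp (- L1 * s) * (V' s - L1 * V s) - q s) (at s)"
        unfolding \<Phi>_def by (simp add: algebra_simps)
      show "exp (- L1 * s) * (V' s - L1 * V s) - q s \<le> 0"
      proof -
        have "exp (- L1 * s) * (V' s - L1 * V s) \<le> exp (- L1 * s) * ((A / h\<^sup>2) * (p s (Suc N))\<^sup>2)"
          using V'le[OF s] by (intro mult_left_mono) auto
        then show ?thesis unfolding q_def by (simp add: algebra_simps)
      qed
    qed
    moreover have "\<Phi> 0 = 0"
    proof -
      have "p 0 k = 0" if "k \<ge> 1" for k using i0[OF that] unfolding p_def by simp
      then have "V 0 = 0" unfolding V_def by simp
      then show ?thesis unfolding \<Phi>_def by simp
    qed
    ultimately have "exp (- L1 * t) * V t \<le> integral {0..t} q" unfolding \<Phi>_def by simp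
    also have "\<dots> \<le> integral {0..T} q"
      by (rule int_mono_sub[OF cq _ t]) (auto simp: q_def A h)
    also have "\<dots> \<le> integral {0..T} (\<lambda>t. (A / h\<^sup>2) * (p t (Suc N))\<^sup>2)"
    proof (rule integral_le)
      show "q integrable_on {0..T}" by (rule integrable_continuous_real[OF cq])
      show "(\<lambda>t. A / h\<^sup>2 * (p t (Suc N))\<^sup>2) integrable_on {0..T}"
        by (rule integrable_continuous_real, rule continuous_on_mult_left, rule cp)
      fix x assume "x \<in> {0..T}"
      then have "exp (- L1 * x) \<le> 1" using L1 by simp
      then show "q x \<le> A / h\<^sup>2 * (p x (Suc N))\<^sup>2" unfolding q_def using A h
        by (intro mult_left_mono) (auto intro: mult_left_le_one_le)
    qed
    also have "\<dots> = (A / h\<^sup>2) * integral {0..T} (\<lambda>t. (p t (Suc N))\<^sup>2)" by simp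
    finally have "exp (- L1 * t) * V t \<le> (A / h\<^sup>2) * integral {0..T} (\<lambda>t. (p t (Suc N))\<^sup>2)" .
    then have "V t \<le> exp (L1 * t) * ((A / h\<^sup>2) * integral {0..T} (\<lambda>t. (p t (Suc N))\<^sup>2))"
      by (simp add: exp_minus field_simps)
    also have "\<dots> \<le> exp (L1 * T) * ((A / h\<^sup>2) * integral {0..T} (\<lambda>t. (p t (Suc N))\<^sup>2))"
    proof (rule mult_right_mono)
      show "exp (L1 * t) \<le> exp (L1 * T)" using t L1 by (simp add: mult_left_mono)
      have ip: "(\<lambda>t. (p t (Suc N))\<^sup>2) integrable_on {0..T}" by (rule integrable_continuous_real[OF cp])
      show "0 \<le> A / h\<^sup>2 * integral {0..T} (\<lambda>t. (p t (Suc N))\<^sup>2)"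
        using A by (intro mult_nonneg_nonneg integral_nonneg ip) auto
    qed
    finally show "(\<Sum>k=1..N. (p t k)\<^sup>2) \<le> exp (L1 * T) * (A / h\<^sup>2) * integral {0..T} (\<lambda>t. (p t (Suc N))\<^sup>2)"
      unfolding V_def by (simp add: mult.assoc)
  qed
  have lim: "(\<lambda>N. exp (L1 * T) * (A / h\<^sup>2) * integral {0..T} (\<lambda>t. (p t (Suc N))\<^sup>2)) \<longlonglongrightarrow> 0"
  proof -
    have "(\<lambda>N. integral {0..T} (\<lambda>t. (p t (Suc N))\<^sup>2)) \<longlonglongrightarrow> 0"
      using LIMSEQ_Suc[OF tail] unfolding p_def .
    then show ?thesis using tendsto_mult_right_zero by blast
  qed
  have "(p t k)\<^sup>2 \<le> 0"
  proof (rule LIMSEQ_le_const[OF lim], intro exI allI impI)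
    fix N assume "N \<ge> k"
    then have "(p t k)\<^sup>2 \<le> (\<Sum>j=1..N. (p t j)\<^sup>2)"
      using tk by (intro member_le_sum) auto
    also have "\<dots> \<le> exp (L1 * T) * (A / h\<^sup>2) * integral {0..T} (\<lambda>t. (p t (Suc N))\<^sup>2)"
      using key[of N] \<open>N \<ge> k\<close> tk by simp
    finally show "(p t k)\<^sup>2 \<le> exp (L1 * T) * (A / h\<^sup>2) * integral {0..T} (\<lambda>t. (p t (Suc N))\<^sup>2)" .
  qed
  then have "p t k = 0" by simp
  then show ?thesis unfolding p_def by simp
qed


locale setting =
  fixes \<eta> lam C0 cm \<phi>min \<phi>max B T \<beta> M\<psi> Ms0 Mc0 :: real
    and h :: real and \<psi> :: "real \<Rightarrow> real" and s0 c0 :: "nat \<Rightarrow> real" and s c :: "real \<Rightarrow> nat \<Rightarrow> real"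
  assumes B: "B = -1 \<or> B = 1" and lam: "lam > 0" and T: "T > 0" and eta: "\<eta> > 0"
    and beta1: "1/4 < \<beta>" and beta2: "\<beta> < 1/2"
    and cm: "0 < cm" "cm \<le> C0" and phimin: "0 < \<phi>min"
    and phib: "\<forall>x\<in>{0..C0}. \<phi>min \<le> phi B x \<and> phi B x \<le> \<phi>max"
    and B1: "B = 1 \<longrightarrow> \<eta> < 1"
    and h: "h > 0"
    and hold: "holder_bdd \<beta> T \<psi> M\<psi>" and psi: "\<forall>t\<in>{0..T}. 0 \<le> \<psi> t \<and> \<psi> t \<le> \<eta>" and psi0: "\<psi> 0 = 0"
    and s0b: "\<forall>k. 0 \<le> s0 k \<and> s0 k \<le> \<eta>"
    and s0l2: "in_l2 s0" and s0n: "l2sq_r h s0 \<le> Ms0\<^sup>2"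
    and c0b: "\<forall>k. cm \<le> c0 k \<and> c0 k \<le> C0"
    and c0l2: "in_l2 (Dp h c0)" and c0n: "l2sq_r h (Dp h c0) \<le> Mc0\<^sup>2"
    and NS: "NS_solution h T lam B \<psi> s0 c0 s c"
begin

lemma cs: "continuous_on {0..T} (\<lambda>t. s t k)" using NS unfolding NS_solution_def by blast
lemma cc: "continuous_on {0..T} (\<lambda>t. c t k)" using NS unfolding NS_solution_def by blast

lemma int_at: "t \<in> {0<..<T} \<Longrightarrow> at t within {0..T} = at t"
  by (rule at_within_interior) simp

lemma ds: "k \<ge> 1 \<Longrightarrow> 0 < t \<Longrightarrow> t < T \<Longrightarrow>
  ((\<lambda>\<tau>. s \<tau> k) has_real_derivative
           (Lap h (s t) k
            + B / (2 * phi B (c t k)) *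
                (Dp h (c t) k * Dp h (s t) k + Dm h (c t) k * Dm h (s t) k)
            + lam * c t k * B * (s t k)\<^sup>2 - lam * c t k * s t k)) (at t)"
proof -
  assume a: "k \<ge> 1" "0 < t" "t < T"
  then have "((\<lambda>\<tau>. s \<tau> k) has_real_derivative
           (Lap h (s t) k
            + B / (2 * phi B (c t k)) *
                (Dp h (c t) k * Dp h (s t) k + Dm h (c t) k * Dm h (s t) k)
            + lam * c t k * B * (s t k)\<^sup>2 - lam * c t k * s t k)) (at t within {0..T})"
    using NS unfolding NS_solution_def by auto
  then show ?thesis using int_at[of t] a by simp
qed

lemma dc: "k \<ge> 1 \<Longrightarrow> 0 < t \<Longrightarrow> t < T \<Longrightarrow>
  ((\<lambda>\<tau>. c \<tau> k) has_real_derivative (- lam * phi B (c t k) * s t k * c t k)) (at t)"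
proof -
  assume a: "k \<ge> 1" "0 < t" "t < T"
  then have "((\<lambda>\<tau>. c \<tau> k) has_real_derivative (- lam * phi B (c t k) * s t k * c t k)) (at t within {0..T})"
    using NS unfolding NS_solution_def by auto
  then show ?thesis using int_at[of t] a by simp
qed

lemma sinit: "k \<ge> 1 \<Longrightarrow> s 0 k = s0 k" and cinit: "k \<ge> 1 \<Longrightarrow> c 0 k = c0 k"
  using NS unfolding NS_solution_def by auto

lemma sb0: "t \<in> {0..T} \<Longrightarrow> s t 0 = \<psi> t"
  and cb0: "t \<in> {0..T} \<Longrightarrow> c t 0 = c0 0 / (phi B (c0 0) * exp (lam * integral {0..t} \<psi>) - B * c0 0)"
  using NS unfolding NS_solution_def by auto

definition Ms where "Ms = (SOME M. \<forall>t\<in>{0..T}. in_l2 (s t) \<and> l2sq_r h (s t) \<le> M)"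
definition Mc where "Mc = (SOME M. \<forall>t\<in>{0..T}. \<forall>k. \<bar>c t k\<bar> \<le> M)"

lemma Ms: "t \<in> {0..T} \<Longrightarrow> in_l2 (s t) \<and> l2sq_r h (s t) \<le> Ms"
proof -
  have "\<exists>M. \<forall>t\<in>{0..T}. in_l2 (s t) \<and> l2sq_r h (s t) \<le> M" using NS unfolding NS_solution_def by blast
  then have "\<forall>t\<in>{0..T}. in_l2 (s t) \<and> l2sq_r h (s t) \<le> Ms" unfolding Ms_def by (rule someI_ex)
  then show "t \<in> {0..T} \<Longrightarrow> ?thesis" by blast
qed

lemma Mc: "t \<in> {0..T} \<Longrightarrow> \<bar>c t k\<bar> \<le> Mc"
proof -
  have "\<exists>M. \<forall>t\<in>{0..T}. \<forall>k. \<bar>c t k\<bar> \<le> M" using NS unfolding NS_solution_def by blast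
  then have "\<forall>t\<in>{0..T}. \<forall>k. \<bar>c t k\<bar> \<le> Mc" unfolding Mc_def by (rule someI_ex)
  then show "t \<in> {0..T} \<Longrightarrow> ?thesis" by blast
qed

lemma B2: "B * B = 1" using B by auto

lemma phiC0: "B = -1 \<Longrightarrow> C0 < 1"
proof -
  assume "B = -1"
  moreover have "\<phi>min \<le> phi B C0" using phib cm by auto
  ultimately show "C0 < 1" using phimin unfolding phi_def by simp
qed

lemma C0pos: "0 < C0" using cm by simp

lemma c0in: "c0 k \<in> {0..C0}"
proof -
  have "cm \<le> c0 k" "c0 k \<le> C0" using c0b by auto
  then show ?thesis using cm by simp
qed

lemma c0phi: "\<phi>min \<le> phi B (c0 k)" "phi B (c0 k) \<le> \<phi>max"
  using phib c0in[of k] by auto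

lemma phimax: "\<phi>min \<le> \<phi>max" using c0phi[of 0] by simp

lemma sq_le_suminf:
  fixes f :: "nat \<Rightarrow> real"
  assumes "in_l2 f" "k \<ge> 1"
  shows "(f k)\<^sup>2 \<le> (\<Sum>j. (f (Suc j))\<^sup>2)"
proof -
  have su: "summable (\<lambda>j. (f (Suc j))\<^sup>2)" using assms(1) unfolding in_l2_def .
  obtain j where j: "k = Suc j" using assms by (cases k) auto
  have "(f k)\<^sup>2 \<le> (\<Sum>i\<in>{j}. (f (Suc i))\<^sup>2)" using j by simp
  also have "\<dots> \<le> (\<Sum>i. (f (Suc i))\<^sup>2)"
    by (rule sum_le_suminf[OF su]) auto
  finally show ?thesis .
qed

definition Sb where "Sb = sqrt (\<bar>Ms\<bar> / h) + \<eta>"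

lemma sqrt_nn: "0 \<le> sqrt (\<bar>Ms\<bar> / h)" using h by simp

lemma sbound: "t \<in> {0..T} \<Longrightarrow> \<bar>s t k\<bar> \<le> Sb"
proof -
  assume t: "t \<in> {0..T}"
  show ?thesis
  proof (cases "k = 0")
    case True
    have e: "s t k = \<psi> t" using True sb0[OF t] by simp
    have p: "0 \<le> \<psi> t" "\<psi> t \<le> \<eta>" using psi t by auto
    have "\<bar>s t k\<bar> \<le> \<eta>" using e p by simp
    then show ?thesis using sqrt_nn unfolding Sb_def by linarith
  next
    case False
    have "(s t k)\<^sup>2 \<le> (\<Sum>j. (s t (Suc j))\<^sup>2)" using sq_le_suminf[of "s t" k] Ms[OF t] False by auto
    also have "\<dots> \<le> \<bar>Ms\<bar> / h"
    proof -
      have "h * (\<Sum>j. (s t (Suc j))\<^sup>2) \<le> \<bar>Ms\<bar>" using Ms[OF t] unfolding l2sq_r_def by linarith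
      then show ?thesis using h by (simp add: pos_le_divide_eq mult.commute)
    qed
    finally have "(s t k)\<^sup>2 \<le> \<bar>Ms\<bar> / h" .
    then have "\<bar>s t k\<bar> \<le> sqrt (\<bar>Ms\<bar> / h)" using real_sqrt_le_mono by fastforce
    then show ?thesis unfolding Sb_def using eta by simp
  qed
qed

lemma Sb_nn: "0 \<le> Sb" unfolding Sb_def using eta sqrt_nn by simp
lemma Mc_nn: "0 \<le> Mc" using Mc[of 0 0] T by auto

end


lemma alg_F:
  fixes hh X sp s sm cp c cm r1 r2 :: real
  assumes "hh \<noteq> 0"
  shows "((sp - s) + (sm - s)) / hh\<^sup>2 + X * (((cp - c) * (sp - s) + (c - cm) * (s - sm)) / hh\<^sup>2) + r1 - r2
    = ((1 + X * (cp - c)) * (sp - s) + (1 + X * (cm - c)) * (sm - s)) / hh\<^sup>2 + (r1 - r2)"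
  using assms by (simp add: field_simps)

context setting begin

lemma cont_phi: "continuous_on {0..T} (\<lambda>t. phi B (c t k))"
  unfolding phi_def by (intro continuous_intros cc)

lemma cpsi: "continuous_on {0..T} \<psi>"
proof -
  have "continuous_on {0..T} (\<lambda>t. s t 0)" by (rule cs)
  then show ?thesis by (rule continuous_on_cong[THEN iffD1, rotated 2]) (auto simp: sb0)
qed

lemma int_lower:
  fixes f :: "real \<Rightarrow> real"
  assumes "continuous_on {0..T} f" "\<And>t. t \<in> {0..T} \<Longrightarrow> \<bar>f t\<bar> \<le> K" "t \<in> {0..T}"
  shows "- K * T \<le> integral {0..t} f"
proof -
  have K: "0 \<le> K" using assms(2)[of 0] T by auto
  have i: "f integrable_on {0..t}"
    by (rule integrable_continuous_real, rule continuous_on_subset[OF assms(1)]) (use assms in auto)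
  have "integral {0..t} (\<lambda>_. - K) \<le> integral {0..t} f"
  proof (rule integral_le[OF _ i])
    show "(\<lambda>_. - K) integrable_on {0..t}" by (intro integrable_continuous_real continuous_on_const)
    fix x assume "x \<in> {0..t}"
    then have "x \<in> {0..T}" using assms(3) by auto
    then have "\<bar>f x\<bar> \<le> K" by (rule assms(2))
    then show "- K \<le> f x" by linarith
  qed
  moreover have "integral {0..t} (\<lambda>_. - K) = - K * t" using assms(3) by simp
  moreover have "- K * T \<le> - K * t" using assms(3) K by (simp add: mult_left_mono)
  ultimately show ?thesis by linarith
qed

lemma cexp: "k \<ge> 1 \<Longrightarrow> t \<in> {0..T} \<Longrightarrow>
  c t k = c0 k * exp (integral {0..t} (\<lambda>\<tau>. - lam * phi B (c \<tau> k) * s \<tau> k))"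
proof -
  assume k: "k \<ge> 1" and t: "t \<in> {0..T}"
  have "c t k = c 0 k * exp (integral {0..t} (\<lambda>\<tau>. - lam * phi B (c \<tau> k) * s \<tau> k))"
  proof (rule linear_ode[where u="\<lambda>t. c t k" and T=T])
    show "0 \<le> T" using T by simp
    show "continuous_on {0..T} (\<lambda>t. c t k)" by (rule cc)
    show "continuous_on {0..T} (\<lambda>\<tau>. - lam * phi B (c \<tau> k) * s \<tau> k)"
      by (intro continuous_intros cont_phi cs)
    show "t \<in> {0..T}" by fact
    fix x assume "0 < x" "x < T"
    then have "((\<lambda>\<tau>. c \<tau> k) has_real_derivative (- lam * phi B (c x k) * s x k * c x k)) (at x)"
      using dc k by blast
    then show "((\<lambda>t. c t k) has_real_derivative (- lam * phi B (c x k) * s x k) * c x k) (at x)"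
      by simp
  qed
  then show ?thesis using cinit[OF k] by simp
qed

lemma Psi_nn: "t \<in> {0..T} \<Longrightarrow> 0 \<le> integral {0..t} \<psi>"
proof -
  assume t: "t \<in> {0..T}"
  have i: "\<psi> integrable_on {0..t}"
    by (rule integrable_continuous_real, rule continuous_on_subset[OF cpsi]) (use t in auto)
  show ?thesis by (rule integral_nonneg[OF i]) (use psi t in auto)
qed

lemma den0: "t \<in> {0..T} \<Longrightarrow> 1 \<le> phi B (c0 0) * exp (lam * integral {0..t} \<psi>) - B * c0 0"
proof -
  assume t: "t \<in> {0..T}"
  have "1 \<le> exp (lam * integral {0..t} \<psi>)" using Psi_nn[OF t] lam by simp
  moreover have "0 \<le> phi B (c0 0)" using c0phi[of 0] phimin by simp
  ultimately have "phi B (c0 0) * 1 \<le> phi B (c0 0) * exp (lam * integral {0..t} \<psi>)"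
    by (intro mult_left_mono) auto
  then show ?thesis unfolding phi_def by simp
qed

lemma c0t: "t \<in> {0..T} \<Longrightarrow> 0 < c t 0 \<and> c t 0 \<le> c0 0"
proof -
  assume t: "t \<in> {0..T}"
  have d: "1 \<le> phi B (c0 0) * exp (lam * integral {0..t} \<psi>) - B * c0 0" by (rule den0[OF t])
  have p: "0 < c0 0" using c0b cm by (auto intro: less_le_trans)
  have "c t 0 = c0 0 / (phi B (c0 0) * exp (lam * integral {0..t} \<psi>) - B * c0 0)" by (rule cb0[OF t])
  moreover have "c0 0 / (phi B (c0 0) * exp (lam * integral {0..t} \<psi>) - B * c0 0) \<le> c0 0"
    using d p by (simp add: divide_le_eq)
  moreover have "0 < c0 0 / (phi B (c0 0) * exp (lam * integral {0..t} \<psi>) - B * c0 0)"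
    using d p by simp
  ultimately show ?thesis by simp
qed

lemma cpos: "t \<in> {0..T} \<Longrightarrow> 0 < c t k"
proof (cases "k = 0")
  case True
  then show "t \<in> {0..T} \<Longrightarrow> 0 < c t k" using c0t by simp
next
  case False
  assume t: "t \<in> {0..T}"
  have "0 < c0 k" using c0b cm by (auto intro: less_le_trans)
  then show ?thesis using cexp[OF _ t, of k] False by simp
qed

lemma one_minus_c: "B = -1 \<Longrightarrow> k \<ge> 1 \<Longrightarrow> t \<in> {0..T} \<Longrightarrow>
  1 - c t k = (1 - c0 k) * exp (integral {0..t} (\<lambda>\<tau>. lam * s \<tau> k * c \<tau> k))"
proof -
  assume B': "B = -1" and k: "k \<ge> 1" and t: "t \<in> {0..T}"
  have "1 - c t k = (1 - c 0 k) * exp (integral {0..t} (\<lambda>\<tau>. lam * s \<tau> k * c \<tau> k))"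
  proof (rule linear_ode[where u="\<lambda>t. 1 - c t k" and T=T])
    show "0 \<le> T" using T by simp
    show "continuous_on {0..T} (\<lambda>t. 1 - c t k)" by (intro continuous_intros cc)
    show "continuous_on {0..T} (\<lambda>\<tau>. lam * s \<tau> k * c \<tau> k)"
      by (intro continuous_intros cc cs)
    show "t \<in> {0..T}" by fact
    fix x assume "0 < x" "x < T"
    then have "((\<lambda>\<tau>. c \<tau> k) has_real_derivative (- lam * phi B (c x k) * s x k * c x k)) (at x)"
      using dc k by blast
    then have "((\<lambda>\<tau>. 1 - c \<tau> k) has_real_derivative 0 - (- lam * phi B (c x k) * s x k * c x k)) (at x)"
      by (rule DERIV_diff[OF DERIV_const])
    then show "((\<lambda>t. 1 - c t k) has_real_derivative (lam * s x k * c x k) * (1 - c x k)) (at x)"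
      using B' by (simp add: phi_def algebra_simps)
  qed
  then show ?thesis using cinit[OF k] by simp
qed

definition \<delta>0 where "\<delta>0 = (if B = 1 then 1 else (1 - C0) * exp (- (lam * Sb * Mc * T)))"

lemma delta0: "0 < \<delta>0"
  unfolding \<delta>0_def using phiC0 B by auto

lemma phi_lower: "t \<in> {0..T} \<Longrightarrow> \<delta>0 \<le> phi B (c t k)"
proof -
  assume t: "t \<in> {0..T}"
  show ?thesis
  proof (cases "B = 1")
    case True
    then show ?thesis using cpos[OF t, of k] unfolding \<delta>0_def phi_def by simp
  next
    case False
    then have B': "B = -1" using B by simp
    have C0: "C0 < 1" by (rule phiC0[OF B'])
    have e1: "exp (- (lam * Sb * Mc * T)) \<le> 1" using lam Sb_nn Mc_nn T by simp
    show ?thesis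
    proof (cases "k = 0")
      case True
      have "c t 0 \<le> C0" using c0t[OF t] c0b by (meson order_trans)
      then have "(1 - C0) * exp (- (lam * Sb * Mc * T)) \<le> (1 - C0) * 1" using e1 C0
        by (intro mult_left_mono) auto
      then show ?thesis using True B' \<open>c t 0 \<le> C0\<close> unfolding \<delta>0_def phi_def by simp
    next
      case False
      then have k: "k \<ge> 1" by simp
      have "- (lam * Sb * Mc) * T \<le> integral {0..t} (\<lambda>\<tau>. lam * s \<tau> k * c \<tau> k)"
      proof (rule int_lower[OF _ _ t])
        show "continuous_on {0..T} (\<lambda>\<tau>. lam * s \<tau> k * c \<tau> k)" by (intro continuous_intros cc cs)
        fix x assume x: "x \<in> {0..T}"
        have "\<bar>lam * s x k * c x k\<bar> = lam * \<bar>s x k\<bar> * \<bar>c x k\<bar>" using lam by (simp add: abs_mult)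
        also have "\<dots> \<le> lam * Sb * Mc"
          using sbound[OF x, of k] Mc[OF x, of k] lam Sb_nn
          by (intro mult_mono mult_left_mono) auto
        finally show "\<bar>lam * s x k * c x k\<bar> \<le> lam * Sb * Mc" .
      qed
      then have "exp (- (lam * Sb * Mc * T)) \<le> exp (integral {0..t} (\<lambda>\<tau>. lam * s \<tau> k * c \<tau> k))"
        by simp
      moreover have "1 - C0 \<le> 1 - c0 k" using c0b by simp
      moreover have "0 \<le> 1 - C0" using C0 by simp
      ultimately have "(1 - C0) * exp (- (lam * Sb * Mc * T)) \<le> (1 - c0 k) * exp (integral {0..t} (\<lambda>\<tau>. lam * s \<tau> k * c \<tau> k))"
        by (intro mult_mono) auto
      then show ?thesis using one_minus_c[OF B' k t] B' unfolding \<delta>0_def phi_def by simp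
    qed
  qed
qed

lemma phi_upper: "t \<in> {0..T} \<Longrightarrow> phi B (c t k) \<le> 1 + Mc"
proof -
  assume t: "t \<in> {0..T}"
  have "\<bar>c t k\<bar> \<le> Mc" by (rule Mc[OF t])
  then show ?thesis using B cpos[OF t, of k] Mc_nn unfolding phi_def by auto
qed

definition aw where "aw t k = (phi B (c t k) + phi B (c t (Suc k))) / (2 * phi B (c t k))"
definition dw where "dw t k = (phi B (c t k) + phi B (c t (k - 1))) / (2 * phi B (c t k))"
definition R where "R t k = lam * c t k * B * (s t k)\<^sup>2 - lam * c t k * s t k"

lemma Fform: "k \<ge> 1 \<Longrightarrow> t \<in> {0..T} \<Longrightarrow>
  Lap h (s t) k + B / (2 * phi B (c t k)) * (Dp h (c t) k * Dp h (s t) k + Dm h (c t) k * Dm h (s t) k)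
   + lam * c t k * B * (s t k)\<^sup>2 - lam * c t k * s t k
  = (aw t k * (s t (Suc k) - s t k) + dw t k * (s t (k - 1) - s t k)) / h\<^sup>2 + R t k"
proof -
  assume k: "k \<ge> 1" and t: "t \<in> {0..T}"
  have p: "phi B (c t k) \<noteq> 0" using phi_lower[OF t, of k] delta0 by simp
  define X where "X = B / (2 * phi B (c t k))"
  have aw': "aw t k = 1 + X * (c t (Suc k) - c t k)"
    unfolding aw_def X_def using p by (simp add: phi_def field_simps)
  have dw': "dw t k = 1 + X * (c t (k - 1) - c t k)"
    unfolding dw_def X_def using p by (simp add: phi_def field_simps)
  have L: "Lap h (s t) k = ((s t (Suc k) - s t k) + (s t (k - 1) - s t k)) / h\<^sup>2"
    unfolding Lap_def Dm_def Dp_def using h by (simp add: field_simps power2_eq_square)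
  have D: "Dp h (c t) k * Dp h (s t) k + Dm h (c t) k * Dm h (s t) k
      = ((c t (Suc k) - c t k) * (s t (Suc k) - s t k) + (c t k - c t (k - 1)) * (s t k - s t (k - 1))) / h\<^sup>2"
    unfolding Dm_def Dp_def using h by (simp add: field_simps power2_eq_square)
  have h0: "h \<noteq> 0" using h by simp
  show ?thesis
    unfolding L D aw' dw' R_def X_def[symmetric] by (rule alg_F[OF h0])
qed

end


context setting begin

lemma phi_pos: "t \<in> {0..T} \<Longrightarrow> 0 < phi B (c t k)"
  using phi_lower[of t k] delta0 by simp

lemma aw_eq: "t \<in> {0..T} \<Longrightarrow> aw t k = 1/2 + phi B (c t (Suc k)) / (2 * phi B (c t k))"
  unfolding aw_def using phi_pos[of t k] by (simp add: field_simps)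

lemma dw_eq: "t \<in> {0..T} \<Longrightarrow> dw t k = 1/2 + phi B (c t (k - 1)) / (2 * phi B (c t k))"
  unfolding dw_def using phi_pos[of t k] by (simp add: field_simps)

lemma ratio_le:
  assumes "t \<in> {0..T}" "0 < lo" "\<And>j. lo \<le> phi B (c t j)" "\<And>j. phi B (c t j) \<le> hi"
  shows "phi B (c t j) / (2 * phi B (c t k)) \<le> hi / (2 * lo)"
proof -
  have "phi B (c t j) / (2 * phi B (c t k)) \<le> hi / (2 * phi B (c t k))"
    using assms phi_pos[OF assms(1), of k] by (intro divide_right_mono) auto
  also have "\<dots> \<le> hi / (2 * lo)"
  proof (rule divide_left_mono)
    show "0 \<le> hi" using assms(2) assms(3)[of 0] assms(4)[of 0] by linarith
    show "2 * lo \<le> 2 * phi B (c t k)" using assms(3)[of k] by simp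
    show "0 < 2 * phi B (c t k) * (2 * lo)" using assms(2) phi_pos[OF assms(1), of k] by simp
  qed
  finally show ?thesis .
qed

definition A1 where "A1 = 1/2 + (1 + Mc) / (2 * \<delta>0)"

lemma aw_bd: "t \<in> {0..T} \<Longrightarrow> 1/2 \<le> aw t k \<and> aw t k \<le> A1"
proof -
  assume t: "t \<in> {0..T}"
  have "0 \<le> phi B (c t (Suc k)) / (2 * phi B (c t k))"
    using phi_pos[OF t, of k] phi_pos[OF t, of "Suc k"] by simp
  moreover have "phi B (c t (Suc k)) / (2 * phi B (c t k)) \<le> (1 + Mc) / (2 * \<delta>0)"
    by (rule ratio_le[OF t delta0 phi_lower[OF t] phi_upper[OF t]])
  ultimately show ?thesis using aw_eq[OF t, of k] unfolding A1_def by simp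
qed

lemma dw_bd: "t \<in> {0..T} \<Longrightarrow> 1/2 \<le> dw t k \<and> dw t k \<le> A1"
proof -
  assume t: "t \<in> {0..T}"
  have "0 \<le> phi B (c t (k - 1)) / (2 * phi B (c t k))"
    using phi_pos[OF t, of k] phi_pos[OF t, of "k - 1"] by simp
  moreover have "phi B (c t (k - 1)) / (2 * phi B (c t k)) \<le> (1 + Mc) / (2 * \<delta>0)"
    by (rule ratio_le[OF t delta0 phi_lower[OF t] phi_upper[OF t]])
  ultimately show ?thesis using dw_eq[OF t, of k] unfolding A1_def by simp
qed

lemma A1_nn: "0 \<le> A1" unfolding A1_def using delta0 Mc_nn by simp

lemma ds2: "k \<ge> 1 \<Longrightarrow> 0 < t \<Longrightarrow> t < T \<Longrightarrow>
  ((\<lambda>\<tau>. s \<tau> k) has_real_derivative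
     (aw t k * (s t (Suc k) - s t k) + dw t k * (s t (k - 1) - s t k)) / h\<^sup>2 + R t k) (at t)"
  using ds[of k t] Fform[of k t] by simp

lemma tail_s: "(\<lambda>N. integral {0..T} (\<lambda>t. (s t N)\<^sup>2)) \<longlonglongrightarrow> 0"
proof -
  have int: "(\<lambda>t. (s t N)\<^sup>2) integrable_on {0..T}" for N
    by (intro integrable_continuous_real continuous_intros cs)
  have pt: "(\<Sum>N<K. (s t (Suc N))\<^sup>2) \<le> \<bar>Ms\<bar> / h" if t: "t \<in> {0..T}" for t K
  proof -
    have su: "summable (\<lambda>j. (s t (Suc j))\<^sup>2)" using Ms[OF t] unfolding in_l2_def by simp
    have "(\<Sum>N<K. (s t (Suc N))\<^sup>2) \<le> (\<Sum>N. (s t (Suc N))\<^sup>2)"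
      by (rule sum_le_suminf[OF su]) auto
    also have "\<dots> \<le> \<bar>Ms\<bar> / h"
    proof -
      have "h * (\<Sum>j. (s t (Suc j))\<^sup>2) \<le> \<bar>Ms\<bar>" using Ms[OF t] unfolding l2sq_r_def by linarith
      then show ?thesis using h by (simp add: pos_le_divide_eq mult.commute)
    qed
    finally show ?thesis .
  qed
  have "summable (\<lambda>N. integral {0..T} (\<lambda>t. (s t (Suc N))\<^sup>2))"
  proof (rule summableI_nonneg_bounded)
    show "0 \<le> integral {0..T} (\<lambda>t. (s t (Suc N))\<^sup>2)" for N
      by (rule integral_nonneg[OF int]) auto
    fix K
    have "(\<Sum>N<K. integral {0..T} (\<lambda>t. (s t (Suc N))\<^sup>2)) = integral {0..T} (\<lambda>t. \<Sum>N<K. (s t (Suc N))\<^sup>2)"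
      by (rule integral_sum[symmetric]) (auto intro: int)
    also have "\<dots> \<le> integral {0..T} (\<lambda>t. \<bar>Ms\<bar> / h)"
      by (rule integral_le) (auto intro!: integrable_sum int pt)
    also have "\<dots> = T * (\<bar>Ms\<bar> / h)" using T by simp
    finally show "(\<Sum>N<K. integral {0..T} (\<lambda>t. (s t (Suc N))\<^sup>2)) \<le> T * (\<bar>Ms\<bar> / h)" .
  qed
  then have "(\<lambda>N. integral {0..T} (\<lambda>t. (s t (Suc N))\<^sup>2)) \<longlonglongrightarrow> 0" by (rule summable_LIMSEQ_zero)
  then show ?thesis by (rule LIMSEQ_imp_Suc)
qed

lemma tail_cmp:
  assumes "\<And>N. continuous_on {0..T} (\<lambda>t. f t N)" "\<And>t N. t \<in> {0..T} \<Longrightarrow> 0 \<le> f t N \<and> f t N \<le> (s t N)\<^sup>2"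
  shows "(\<lambda>N. integral {0..T} (\<lambda>t. f t N)) \<longlonglongrightarrow> 0"
proof (rule tendsto_sandwich[OF _ _ tendsto_const tail_s])
  have i: "(\<lambda>t. f t N) integrable_on {0..T}" for N by (rule integrable_continuous_real[OF assms(1)])
  have i2: "(\<lambda>t. (s t N)\<^sup>2) integrable_on {0..T}" for N
    by (intro integrable_continuous_real continuous_intros cs)
  show "\<forall>\<^sub>F N in sequentially. 0 \<le> integral {0..T} (\<lambda>t. f t N)"
    using assms(2) by (intro always_eventually allI integral_nonneg[OF i]) auto
  show "\<forall>\<^sub>F N in sequentially. integral {0..T} (\<lambda>t. f t N) \<le> integral {0..T} (\<lambda>t. (s t N)\<^sup>2)"
    using assms(2) by (intro always_eventually allI integral_le[OF i i2]) auto
qed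

definition Lr where "Lr = lam * Mc * (Sb + 1)"
lemma Lr_nn: "0 \<le> Lr" unfolding Lr_def using lam Mc_nn Sb_nn by simp

lemma R_upper: "t \<in> {0..T} \<Longrightarrow> s t k > \<eta> \<Longrightarrow> R t k \<le> Lr * (s t k - \<eta>)"
proof -
  assume t: "t \<in> {0..T}" and sk: "s t k > \<eta>"
  have c: "0 < c t k" "c t k \<le> Mc" using cpos[OF t] Mc[OF t, of k] by auto
  have sp: "0 < s t k" using sk eta by simp
  have sS: "s t k \<le> Sb" using sbound[OF t, of k] by simp
  show ?thesis
  proof (cases "B = 1")
    case True
    have e1: "\<eta> < 1" using B1 True by simp
    have "R t k = lam * c t k * (s t k * (s t k - 1))" unfolding R_def using True by (simp add: power2_eq_square algebra_simps)
    also have "\<dots> \<le> lam * c t k * ((s t k - \<eta>) * s t k)"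
    proof (rule mult_left_mono)
      have "s t k * (s t k - 1) = (s t k - \<eta>) * (s t k + \<eta> - 1) + \<eta> * (\<eta> - 1)" by (simp add: algebra_simps)
      also have "\<dots> \<le> (s t k - \<eta>) * (s t k + \<eta> - 1)"
      proof -
        have "\<eta> * (\<eta> - 1) \<le> 0" using e1 eta by (intro mult_nonneg_nonpos) auto
        then show ?thesis by simp
      qed
      also have "\<dots> \<le> (s t k - \<eta>) * s t k" using e1 sk by (intro mult_left_mono) auto
      finally show "s t k * (s t k - 1) \<le> (s t k - \<eta>) * s t k" .
      show "0 \<le> lam * c t k" using lam c by simp
    qed
    also have "\<dots> \<le> lam * Mc * ((s t k - \<eta>) * (Sb + 1))"
      using lam c sk sS sp by (intro mult_mono mult_left_mono) auto
    also have "\<dots> = Lr * (s t k - \<eta>)" unfolding Lr_def by (simp add: algebra_simps)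
    finally show ?thesis .
  next
    case False
    then have "B = -1" using B by simp
    then have "R t k = - (lam * c t k * (s t k * (s t k + 1)))" unfolding R_def by (simp add: power2_eq_square algebra_simps)
    also have "\<dots> \<le> 0" using lam c sp by simp
    also have "0 \<le> Lr * (s t k - \<eta>)" using Lr_nn sk by simp
    finally show ?thesis .
  qed
qed

lemma R_lower: "t \<in> {0..T} \<Longrightarrow> s t k < 0 \<Longrightarrow> - R t k \<le> Lr * (- s t k)"
proof -
  assume t: "t \<in> {0..T}" and sk: "s t k < 0"
  have c: "0 < c t k" "c t k \<le> Mc" using cpos[OF t] Mc[OF t, of k] by auto
  have sS: "- s t k \<le> Sb" using sbound[OF t, of k] by simp
  show ?thesis
  proof (cases "B = 1")
    case True
    then have "- R t k = - (lam * c t k * ((- s t k) * (1 - s t k)))" unfolding R_def by (simp add: power2_eq_square algebra_simps)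
    also have "\<dots> \<le> 0"
    proof -
      have "0 \<le> (- s t k) * (1 - s t k)" using sk by (intro mult_nonneg_nonneg) auto
      then have "0 \<le> lam * c t k * ((- s t k) * (1 - s t k))" using lam c sk by (intro mult_nonneg_nonneg) auto
      then show ?thesis by simp
    qed
    also have "0 \<le> Lr * (- s t k)" using Lr_nn sk by (intro mult_nonneg_nonneg) auto
    finally show ?thesis .
  next
    case False
    then have "B = -1" using B by simp
    then have "- R t k = lam * c t k * ((- s t k) * (- s t k - 1))" unfolding R_def by (simp add: power2_eq_square algebra_simps)
    also have "\<dots> \<le> lam * c t k * ((- s t k) * (Sb + 1))"
    proof (rule mult_left_mono)
      show "- s t k * (- s t k - 1) \<le> - s t k * (Sb + 1)" using sk sS by (intro mult_left_mono) auto
      show "0 \<le> lam * c t k" using lam c by simp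
    qed
    also have "\<dots> \<le> lam * Mc * ((- s t k) * (Sb + 1))"
      using lam c sk Sb_nn by (intro mult_right_mono mult_left_mono mult_nonneg_nonneg) auto
    also have "\<dots> = Lr * (- s t k)" unfolding Lr_def by (simp add: algebra_simps)
    finally show ?thesis .
  qed
qed

lemma s_le: "t \<in> {0..T} \<Longrightarrow> s t k \<le> \<eta>"
proof (cases "k = 0")
  case True
  then show "t \<in> {0..T} \<Longrightarrow> s t k \<le> \<eta>" using sb0 psi by auto
next
  case False
  assume t: "t \<in> {0..T}"
  have "s t k - \<eta> \<le> 0"
  proof (rule maxprin[where y="\<lambda>t k. s t k - \<eta>" and a=aw and d=dw and r=R and h=h and T=T and A=A1 and L=Lr])
    show "h > 0" "T > 0" "Lr \<ge> 0" "A1 \<ge> 0" using h T Lr_nn A1_nn by auto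
    show "continuous_on {0..T} (\<lambda>t. s t k - \<eta>)" for k by (intro continuous_intros cs)
    show "((\<lambda>\<tau>. s \<tau> k - \<eta>) has_real_derivative
        (aw t k * (s t (Suc k) - \<eta> - (s t k - \<eta>)) + dw t k * (s t (k - 1) - \<eta> - (s t k - \<eta>))) / h\<^sup>2 + R t k) (at t)"
      if "k \<ge> 1" "0 < t" "t < T" for k t
      using DERIV_diff[OF ds2[OF that] DERIV_const[of \<eta>]] by simp
    show "0 \<le> aw t k \<and> aw t k \<le> A1 \<and> 0 \<le> dw t k \<and> dw t k \<le> A1" if "k \<ge> 1" "0 < t" "t < T" for k t
      using aw_bd[of t k] dw_bd[of t k] that by auto
    show "R t k \<le> Lr * (s t k - \<eta>)" if "k \<ge> 1" "0 < t" "t < T" "s t k - \<eta> > 0" for k t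
      using R_upper[of t k] that by auto
    show "s t 0 - \<eta> \<le> 0" if "t \<in> {0..T}" for t using sb0[OF that] psi that by auto
    show "s 0 k - \<eta> \<le> 0" if "k \<ge> 1" for k using sinit[OF that] s0b by auto
    show "(\<lambda>N. integral {0..T} (\<lambda>t. (max 0 (s t N - \<eta>))\<^sup>2)) \<longlonglongrightarrow> 0"
    proof (rule tail_cmp)
      show "continuous_on {0..T} (\<lambda>t. (max 0 (s t N - \<eta>))\<^sup>2)" for N by (intro continuous_intros cs)
      show "0 \<le> (max 0 (s t N - \<eta>))\<^sup>2 \<and> (max 0 (s t N - \<eta>))\<^sup>2 \<le> (s t N)\<^sup>2" for t N
        using eta by (auto simp: max_def intro!: power_mono)
    qed
    show "t \<in> {0..T}" "k \<ge> 1" using t False by auto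
  qed
  then show ?thesis by simp
qed

lemma s_ge: "t \<in> {0..T} \<Longrightarrow> 0 \<le> s t k"
proof (cases "k = 0")
  case True
  then show "t \<in> {0..T} \<Longrightarrow> 0 \<le> s t k" using sb0 psi by auto
next
  case False
  assume t: "t \<in> {0..T}"
  have "- s t k \<le> 0"
  proof (rule maxprin[where y="\<lambda>t k. - s t k" and a=aw and d=dw and r="\<lambda>t k. - R t k" and h=h and T=T and A=A1 and L=Lr])
    show "h > 0" "T > 0" "Lr \<ge> 0" "A1 \<ge> 0" using h T Lr_nn A1_nn by auto
    show "continuous_on {0..T} (\<lambda>t. - s t k)" for k by (intro continuous_intros cs)
    show "((\<lambda>\<tau>. - s \<tau> k) has_real_derivative
        (aw t k * (- s t (Suc k) - - s t k) + dw t k * (- s t (k - 1) - - s t k)) / h\<^sup>2 + - R t k) (at t)"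
      if "k \<ge> 1" "0 < t" "t < T" for k t
    proof -
      have h2: "h\<^sup>2 \<noteq> 0" using h by simp
      have "(aw t k * (- s t (Suc k) - - s t k) + dw t k * (- s t (k - 1) - - s t k)) / h\<^sup>2 + - R t k
          = - ((aw t k * (s t (Suc k) - s t k) + dw t k * (s t (k - 1) - s t k)) / h\<^sup>2 + R t k)"
        using h2 by (simp add: field_simps)
      then show ?thesis using DERIV_minus[OF ds2[OF that]] by simp
    qed
    show "0 \<le> aw t k \<and> aw t k \<le> A1 \<and> 0 \<le> dw t k \<and> dw t k \<le> A1" if "k \<ge> 1" "0 < t" "t < T" for k t
      using aw_bd[of t k] dw_bd[of t k] that by auto
    show "- R t k \<le> Lr * - s t k" if "k \<ge> 1" "0 < t" "t < T" "- s t k > 0" for k t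
      using R_lower[of t k] that by auto
    show "- s t 0 \<le> 0" if "t \<in> {0..T}" for t using sb0[OF that] psi that by auto
    show "- s 0 k \<le> 0" if "k \<ge> 1" for k using sinit[OF that] s0b by auto
    show "(\<lambda>N. integral {0..T} (\<lambda>t. (max 0 (- s t N))\<^sup>2)) \<longlonglongrightarrow> 0"
    proof (rule tail_cmp)
      show "continuous_on {0..T} (\<lambda>t. (max 0 (- s t N))\<^sup>2)" for N by (intro continuous_intros cs)
      show "0 \<le> (max 0 (- s t N))\<^sup>2 \<and> (max 0 (- s t N))\<^sup>2 \<le> (s t N)\<^sup>2" for t N
        by (auto simp: max_def)
    qed
    show "t \<in> {0..T}" "k \<ge> 1" using t False by auto
  qed
  then show ?thesis by simp
qed

lemma c_le: "t \<in> {0..T} \<Longrightarrow> c t k \<le> C0"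
proof (cases "k = 0")
  case True
  show "t \<in> {0..T} \<Longrightarrow> c t k \<le> C0"
  proof -
    assume t: "t \<in> {0..T}"
    have "c t 0 \<le> c0 0" using c0t[OF t] by simp
    moreover have "c0 0 \<le> C0" using c0b by simp
    ultimately show ?thesis using True by simp
  qed
next
  case False
  assume t: "t \<in> {0..T}"
  have "integral {0..t} (\<lambda>\<tau>. - lam * phi B (c \<tau> k) * s \<tau> k) \<le> integral {0..t} (\<lambda>\<tau>. 0)"
  proof (rule integral_le)
    show "(\<lambda>\<tau>. - lam * phi B (c \<tau> k) * s \<tau> k) integrable_on {0..t}"
      by (rule integrable_continuous_real, rule continuous_on_subset[of "{0..T}"])
         (use t in \<open>auto intro!: continuous_intros cont_phi cs\<close>)
    show "(\<lambda>\<tau>. 0) integrable_on {0..t}" by (rule integrable_0)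
    fix x assume "x \<in> {0..t}"
    then have x: "x \<in> {0..T}" using t by auto
    show "- lam * phi B (c x k) * s x k \<le> 0"
      using lam phi_pos[OF x, of k] s_ge[OF x, of k] by (simp add: mult_nonneg_nonneg)
  qed
  then have "exp (integral {0..t} (\<lambda>\<tau>. - lam * phi B (c \<tau> k) * s \<tau> k)) \<le> 1" by simp
  moreover have "0 < c0 k" "c0 k \<le> C0" using c0b cm by (auto intro: less_le_trans)
  ultimately have "c0 k * exp (integral {0..t} (\<lambda>\<tau>. - lam * phi B (c \<tau> k) * s \<tau> k)) \<le> c0 k * 1"
    by (intro mult_left_mono) auto
  then have "c0 k * exp (integral {0..t} (\<lambda>\<tau>. - lam * phi B (c \<tau> k) * s \<tau> k)) \<le> C0"
    using \<open>c0 k \<le> C0\<close> by simp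
  then show ?thesis using cexp[OF _ t, of k] False by simp
qed

lemma c_in: "t \<in> {0..T} \<Longrightarrow> c t k \<in> {0..C0}"
  using cpos[of t k] c_le[of t k] by auto

lemma phi_bd: "t \<in> {0..T} \<Longrightarrow> \<phi>min \<le> phi B (c t k) \<and> phi B (c t k) \<le> \<phi>max"
  using phib c_in[of t k] by auto

end


context setting begin

definition psit where "psit u = \<psi> (max 0 (min T u))"
definition Psi where "Psi x = integral {-2..x} psit"
definition avg where "avg \<sigma> t = (Psi t - Psi (t - \<sigma>)) / \<sigma>"

lemma clamp_in: "max 0 (min T u) \<in> {0..T}" using T by auto

lemma psit_eq: "t \<in> {0..T} \<Longrightarrow> psit t = \<psi> t"
proof -
  assume t: "t \<in> {0..T}"
  then have "max 0 (min T t) = t" by auto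
  then show ?thesis unfolding psit_def by simp
qed

lemma psit_range: "0 \<le> psit u \<and> psit u \<le> \<eta>" unfolding psit_def using psi clamp_in[of u] by blast

lemma psit_neg: "u \<le> 0 \<Longrightarrow> psit u = 0" unfolding psit_def using psi0 T by (simp add: max_def min_def)

lemma Mpsi_nn: "0 \<le> M\<psi>" using hold T unfolding holder_bdd_def by (metis abs_ge_zero atLeastAtMost_iff less_imp_le order_trans order_refl)

lemma psit_hold: "\<bar>psit u - psit v\<bar> \<le> M\<psi> * \<bar>u - v\<bar> powr \<beta>"
proof -
  have "\<bar>psit u - psit v\<bar> \<le> M\<psi> * \<bar>max 0 (min T u) - max 0 (min T v)\<bar> powr \<beta>"
    using hold clamp_in[of u] clamp_in[of v] unfolding holder_bdd_def psit_def by blast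
  also have "\<dots> \<le> M\<psi> * \<bar>u - v\<bar> powr \<beta>"
  proof (rule mult_left_mono[OF _ Mpsi_nn], rule powr_mono2)
    show "0 \<le> \<beta>" using beta1 by simp
    show "0 \<le> \<bar>max 0 (min T u) - max 0 (min T v)\<bar>" by simp
    show "\<bar>max 0 (min T u) - max 0 (min T v)\<bar> \<le> \<bar>u - v\<bar>" by (auto simp: max_def min_def)
  qed
  finally show ?thesis .
qed

lemma psit_cont: "continuous_on UNIV psit"
  unfolding psit_def
  by (rule continuous_on_compose2[OF cpsi]) (auto intro!: continuous_intros simp: T less_imp_le)

lemma psit_int: "psit integrable_on {a..b}"
  by (rule integrable_continuous_real, rule continuous_on_subset[OF psit_cont]) auto

lemma Psi_deriv: "x > -2 \<Longrightarrow> (Psi has_real_derivative psit x) (at x)"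
proof -
  assume x: "x > -2"
  have c: "continuous_on {-2..x+1} psit" by (rule continuous_on_subset[OF psit_cont]) auto
  have "(Psi has_real_derivative psit x) (at x within {-2..x+1})"
    unfolding Psi_def by (rule integral_has_real_derivative[OF c]) (use x in auto)
  moreover have "x \<in> interior {-2..x+1}" using x by auto
  ultimately show ?thesis using at_within_interior by metis
qed

lemma Psi_int: "-2 \<le> a \<Longrightarrow> a \<le> b \<Longrightarrow> Psi b - Psi a = integral {a..b} psit"
proof -
  assume ab: "-2 \<le> a" "a \<le> b"
  have "integral {-2..a} psit + integral {a..b} psit = integral {-2..b} psit"
    by (rule Henstock_Kurzweil_Integration.integral_combine[OF ab psit_int])
  then show ?thesis unfolding Psi_def by simp
qed

lemma avg_int: "0 < \<sigma> \<Longrightarrow> -2 \<le> t - \<sigma> \<Longrightarrow> avg \<sigma> t = integral {t - \<sigma>..t} psit / \<sigma>"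
  unfolding avg_def using Psi_int[of "t - \<sigma>" t] by simp

lemma avg_range: "0 < \<sigma> \<Longrightarrow> -2 \<le> t - \<sigma> \<Longrightarrow> 0 \<le> avg \<sigma> t \<and> avg \<sigma> t \<le> \<eta>"
proof -
  assume s: "0 < \<sigma>" "-2 \<le> t - \<sigma>"
  have "integral {t - \<sigma>..t} psit \<le> integral {t - \<sigma>..t} (\<lambda>_. \<eta>)"
    by (rule integral_le[OF psit_int]) (auto simp: psit_range)
  moreover have "integral {t - \<sigma>..t} (\<lambda>_. \<eta>) = \<sigma> * \<eta>" using s by simp
  moreover have "0 \<le> integral {t - \<sigma>..t} psit"
    by (rule integral_nonneg[OF psit_int]) (auto simp: psit_range)
  ultimately show ?thesis using avg_int[OF s] s by (simp add: divide_le_eq mult.commute)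
qed

lemma avg_close: "0 < \<sigma> \<Longrightarrow> -2 \<le> t - \<sigma> \<Longrightarrow> \<bar>avg \<sigma> t - psit t\<bar> \<le> M\<psi> * \<sigma> powr \<beta>"
proof -
  assume s: "0 < \<sigma>" "-2 \<le> t - \<sigma>"
  define C where "C = M\<psi> * \<sigma> powr \<beta>"
  have pt: "\<bar>psit u - psit t\<bar> \<le> C" if "u \<in> {t - \<sigma>..t}" for u
  proof -
    have "\<bar>psit u - psit t\<bar> \<le> M\<psi> * \<bar>u - t\<bar> powr \<beta>" by (rule psit_hold)
    also have "\<dots> \<le> M\<psi> * \<sigma> powr \<beta>"
      using that beta1 by (intro mult_left_mono[OF _ Mpsi_nn] powr_mono2) auto
    finally show ?thesis unfolding C_def .
  qed
  have i: "(\<lambda>u. psit u - psit t) integrable_on {t - \<sigma>..t}"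
    by (intro integrable_diff psit_int integrable_continuous_real continuous_on_const)
  have eq: "integral {t - \<sigma>..t} (\<lambda>u. psit u - psit t) = integral {t - \<sigma>..t} psit - \<sigma> * psit t"
    using s by (simp add: integral_diff[OF psit_int] integrable_continuous_real)
  have "integral {t - \<sigma>..t} (\<lambda>u. psit u - psit t) \<le> integral {t - \<sigma>..t} (\<lambda>_. C)"
    by (rule integral_le[OF i]) (use pt in \<open>auto simp: abs_le_iff\<close>)
  moreover have "integral {t - \<sigma>..t} (\<lambda>_. - C) \<le> integral {t - \<sigma>..t} (\<lambda>u. psit u - psit t)"
  proof (rule integral_le[OF _ i])
    show "(\<lambda>_. - C) integrable_on {t - \<sigma>..t}" by (intro integrable_continuous_real continuous_on_const)
    fix x assume "x \<in> {t - \<sigma>..t}"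
    then have "\<bar>psit x - psit t\<bar> \<le> C" by (rule pt)
    then show "- C \<le> psit x - psit t" by linarith
  qed
  ultimately have "\<bar>integral {t - \<sigma>..t} psit - \<sigma> * psit t\<bar> \<le> \<sigma> * C" using s eq by simp
  then have "\<bar>(integral {t - \<sigma>..t} psit - \<sigma> * psit t) / \<sigma>\<bar> \<le> C" using s
    by (simp add: abs_divide divide_le_eq mult.commute)
  moreover have "(integral {t - \<sigma>..t} psit - \<sigma> * psit t) / \<sigma> = avg \<sigma> t - psit t"
    using avg_int[OF s] s by (simp add: field_simps)
  ultimately show ?thesis unfolding C_def by simp
qed

lemma avg_deriv_sigma: "0 < \<sigma> \<Longrightarrow> -2 < t - \<sigma> \<Longrightarrow>
  ((\<lambda>\<sigma>. avg \<sigma> t) has_real_derivative (psit (t - \<sigma>) - avg \<sigma> t) / \<sigma>) (at \<sigma>)"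
proof -
  assume s: "0 < \<sigma>" "-2 < t - \<sigma>"
  have d1: "((\<lambda>\<sigma>. Psi (t - \<sigma>)) has_real_derivative psit (t - \<sigma>) * (0 - 1)) (at \<sigma>)"
  proof -
    have "((\<lambda>\<sigma>. t - \<sigma>) has_real_derivative (0 - 1)) (at \<sigma>)" by (rule DERIV_diff[OF DERIV_const DERIV_ident])
    then show ?thesis by (rule DERIV_chain2[where f=Psi and g="\<lambda>\<sigma>. t - \<sigma>", OF Psi_deriv[OF s(2)]])
  qed
  have d2: "((\<lambda>\<sigma>. Psi t - Psi (t - \<sigma>)) has_real_derivative 0 - psit (t - \<sigma>) * (0 - 1)) (at \<sigma>)"
    by (rule DERIV_diff[OF DERIV_const d1])
  have "((\<lambda>\<sigma>. (Psi t - Psi (t - \<sigma>)) / \<sigma>) has_real_derivative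
      ((0 - psit (t - \<sigma>) * (0 - 1)) * \<sigma> - (Psi t - Psi (t - \<sigma>)) * 1) / (\<sigma> * \<sigma>)) (at \<sigma>)"
    by (rule DERIV_divide[OF d2 DERIV_ident]) (use s in simp)
  moreover have "((0 - psit (t - \<sigma>) * (0 - 1)) * \<sigma> - (Psi t - Psi (t - \<sigma>)) * 1) / (\<sigma> * \<sigma>)
      = (psit (t - \<sigma>) - avg \<sigma> t) / \<sigma>"
    unfolding avg_def using s by (simp add: field_simps)
  ultimately show ?thesis unfolding avg_def by simp
qed

lemma avg_diff:
  assumes "0 < s1" "s1 \<le> s2" "-1 \<le> t - s2"
  shows "\<bar>avg s2 t - avg s1 t\<bar> \<le> (s2 - s1) * (2 * M\<psi> * s1 powr (\<beta> - 1))"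
proof (cases "s1 = s2")
  case True then show ?thesis by simp
next
  case False
  then have lt: "s1 < s2" using assms by simp
  have der: "((\<lambda>\<sigma>. avg \<sigma> t) has_real_derivative (psit (t - x) - avg x t) / x) (at x)"
    if "s1 \<le> x" "x \<le> s2" for x
    by (rule avg_deriv_sigma) (use that assms in auto)
  obtain z where z: "s1 < z" "z < s2" "avg s2 t - avg s1 t = (s2 - s1) * ((psit (t - z) - avg z t) / z)"
    using MVT2[OF lt der] by blast
  have zb: "\<bar>(psit (t - z) - avg z t) / z\<bar> \<le> 2 * M\<psi> * s1 powr (\<beta> - 1)"
  proof -
    have z0: "0 < z" using z assms by simp
    have "\<bar>psit (t - z) - psit t\<bar> \<le> M\<psi> * \<bar>t - z - t\<bar> powr \<beta>" by (rule psit_hold)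
    then have a: "\<bar>psit (t - z) - psit t\<bar> \<le> M\<psi> * z powr \<beta>" using z0 by simp
    have b: "\<bar>avg z t - psit t\<bar> \<le> M\<psi> * z powr \<beta>" by (rule avg_close) (use z0 z assms in auto)
    have "\<bar>psit (t - z) - avg z t\<bar> \<le> 2 * M\<psi> * z powr \<beta>" using a b by linarith
    then have "\<bar>(psit (t - z) - avg z t) / z\<bar> \<le> 2 * M\<psi> * z powr \<beta> / z"
      using z0 by (simp add: abs_divide divide_right_mono)
    also have "\<dots> = 2 * M\<psi> * z powr (\<beta> - 1)"
      using z0 by (simp add: powr_diff)
    also have "\<dots> \<le> 2 * M\<psi> * s1 powr (\<beta> - 1)"
      using Mpsi_nn beta2 z assms by (intro mult_left_mono powr_mono2') auto
    finally show ?thesis .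
  qed
  have "\<bar>avg s2 t - avg s1 t\<bar> = (s2 - s1) * \<bar>(psit (t - z) - avg z t) / z\<bar>"
    using z(3) lt by (simp add: abs_mult)
  also have "\<dots> \<le> (s2 - s1) * (2 * M\<psi> * s1 powr (\<beta> - 1))"
    using zb lt by (intro mult_left_mono) auto
  finally show ?thesis .
qed

lemma avg_deriv_t: "-2 < t - \<sigma> \<Longrightarrow> -2 < t \<Longrightarrow> ((\<lambda>t. avg \<sigma> t) has_real_derivative (psit t - psit (t - \<sigma>)) / \<sigma>) (at t)"
proof -
  assume s: "-2 < t - \<sigma>" and tt: "-2 < t"
  have "((\<lambda>t. t - \<sigma>) has_real_derivative (1 - 0)) (at t)" by (rule DERIV_diff[OF DERIV_ident DERIV_const])
  then have d1: "((\<lambda>t. Psi (t - \<sigma>)) has_real_derivative psit (t - \<sigma>) * (1 - 0)) (at t)"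
    by (rule DERIV_chain2[where f=Psi and g="\<lambda>t. t - \<sigma>", OF Psi_deriv[OF s]])
  have "((\<lambda>t. (Psi t - Psi (t - \<sigma>)) / \<sigma>) has_real_derivative (psit t - psit (t - \<sigma>) * (1 - 0)) / \<sigma>) (at t)"
    by (rule DERIV_cdivide[OF DERIV_diff[OF Psi_deriv[OF tt] d1]])
  then show ?thesis unfolding avg_def by simp
qed

end


lemma sq_powr: "0 < (x::real) \<Longrightarrow> (x\<^sup>2) powr a = x powr (2 * a)"
proof -
  assume x: "0 < x"
  have "x\<^sup>2 = x powr 2" using x by simp
  then show ?thesis by (simp add: powr_powr)
qed

lemma count_le1:
  fixes h :: real assumes "0 < h"
  shows "h * (\<Sum>k=1..N. (if real k * h \<le> 1 then 1 else 0)) \<le> min (real N * h) 1"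
proof (induction N)
  case 0 then show ?case by simp
next
  case (Suc N)
  have NS: "real N * h \<le> real (Suc N) * h" using assms by (intro mult_right_mono) auto
  show ?case
  proof (cases "real (Suc N) * h \<le> 1")
    case True
    have "h * (\<Sum>k=1..Suc N. (if real k * h \<le> 1 then 1 else 0)) = h * (\<Sum>k=1..N. (if real k * h \<le> 1 then 1 else 0)) + h"
      using True by (simp add: sum.cl_ivl_Suc algebra_simps)
    also have "\<dots> \<le> real N * h + h" using Suc.IH by simp
    also have "\<dots> = min (real (Suc N) * h) 1" using True by (simp add: algebra_simps)
    finally show ?thesis .
  next
    case False
    define F where "F = (\<lambda>k::nat. if real k * h \<le> 1 then 1 else (0::real))"
    have "F (Suc N) = 0" unfolding F_def using False by simp
    then have "h * (\<Sum>k=1..Suc N. (if real k * h \<le> 1 then 1 else 0)) = h * (\<Sum>k=1..N. (if real k * h \<le> 1 then 1 else 0))"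
      unfolding F_def[symmetric] by (simp add: sum.cl_ivl_Suc)
    also have "\<dots> \<le> min (real N * h) 1" by (rule Suc.IH)
    also have "\<dots> \<le> min (real (Suc N) * h) 1" using NS by (rule min.mono) simp
    finally show ?thesis .
  qed
qed

context setting begin

definition chi where "chi k = max 0 (1 - real k * h)"
definition tau where "tau k = (real k * h)\<^sup>2"
definition Aav where "Aav k t = (if k = 0 then psit t else avg (tau k) t)"
definition gl where "gl t k = chi k * Aav k t"
definition gd where "gd t k = chi k * ((psit t - psit (t - tau k)) / tau k)"

lemma chi_range: "0 \<le> chi k \<and> chi k \<le> 1" unfolding chi_def using h by auto
lemma chi0: "chi 0 = 1" unfolding chi_def by simp
lemma chi_pos: "chi k > 0 \<Longrightarrow> real k * h < 1" unfolding chi_def by auto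
lemma chi_zero: "\<not> real k * h < 1 \<Longrightarrow> chi k = 0" unfolding chi_def by auto

lemma tau_pos: "k \<ge> 1 \<Longrightarrow> 0 < tau k" unfolding tau_def using h by simp

lemma tau_lt1: "chi k > 0 \<Longrightarrow> tau k < 1"
proof -
  assume "chi k > 0"
  then have "real k * h < 1" by (rule chi_pos)
  moreover have "0 \<le> real k * h" using h by simp
  ultimately have "(real k * h) * (real k * h) \<le> (real k * h) * 1" by (intro mult_left_mono) auto
  then show ?thesis unfolding tau_def using \<open>real k * h < 1\<close> by (simp add: power2_eq_square)
qed

lemma gl0: "t \<in> {0..T} \<Longrightarrow> gl t 0 = \<psi> t"
  unfolding gl_def Aav_def using chi0 psit_eq by simp

lemma gl_range: "t \<in> {0..T} \<Longrightarrow> 0 \<le> gl t k \<and> gl t k \<le> \<eta>"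
proof (cases "chi k = 0")
  case True then show "t \<in> {0..T} \<Longrightarrow> ?thesis" unfolding gl_def using eta by simp
next
  case False
  assume t: "t \<in> {0..T}"
  have c: "0 < chi k" "chi k \<le> 1" using chi_range[of k] False by auto
  have A: "0 \<le> Aav k t \<and> Aav k t \<le> \<eta>"
  proof (cases "k = 0")
    case True then show ?thesis unfolding Aav_def using psit_range by simp
  next
    case False
    have "tau k < 1" "0 < tau k" using tau_lt1[OF c(1)] tau_pos[of k] False by auto
    then show ?thesis unfolding Aav_def using False avg_range[of "tau k" t] t by auto
  qed
  have "chi k * Aav k t \<le> 1 * \<eta>" using c A by (intro mult_mono) auto
  then show ?thesis unfolding gl_def using c A by simp
qed

lemma gl_init: "k \<ge> 1 \<Longrightarrow> gl 0 k = 0"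
proof (cases "chi k = 0")
  case True then show "k \<ge> 1 \<Longrightarrow> ?thesis" unfolding gl_def by simp
next
  case False
  assume k: "k \<ge> 1"
  have tp: "0 < tau k" "tau k < 1" using tau_pos[OF k] tau_lt1[of k] chi_range[of k] False by auto
  have "integral {0 - tau k..0} psit = integral {0 - tau k..0} (\<lambda>_. 0)"
    by (rule integral_cong) (auto intro: psit_neg)
  then have "avg (tau k) 0 = 0" using avg_int[of "tau k" 0] tp by simp
  then show ?thesis unfolding gl_def Aav_def using k by simp
qed

lemma gl_deriv: "k \<ge> 1 \<Longrightarrow> 0 < t \<Longrightarrow> t < T \<Longrightarrow> ((\<lambda>t. gl t k) has_real_derivative gd t k) (at t)"
proof (cases "chi k = 0")
  case True
  then have e: "(\<lambda>t. gl t k) = (\<lambda>t. 0)" unfolding gl_def by auto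
  show "k \<ge> 1 \<Longrightarrow> 0 < t \<Longrightarrow> t < T \<Longrightarrow> ?thesis" unfolding e gd_def True by simp
next
  case False
  assume k: "k \<ge> 1" and t: "0 < t" "t < T"
  have tp: "0 < tau k" "tau k < 1" using tau_pos[OF k] tau_lt1[of k] chi_range[of k] False by auto
  have "((\<lambda>t. avg (tau k) t) has_real_derivative (psit t - psit (t - tau k)) / tau k) (at t)"
    by (rule avg_deriv_t) (use tp t in auto)
  then have "((\<lambda>t. chi k * avg (tau k) t) has_real_derivative chi k * ((psit t - psit (t - tau k)) / tau k)) (at t)"
    by (rule DERIV_cmult)
  then show ?thesis unfolding gl_def gd_def Aav_def using k by simp
qed

lemma gl_cont: "continuous_on {0..T} (\<lambda>t. gl t k)"
proof (cases "k = 0")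
  case True
  have e: "(\<lambda>t. gl t k) = (\<lambda>t. chi 0 * psit t)" unfolding gl_def Aav_def using True by simp
  show ?thesis unfolding e
    by (intro continuous_intros continuous_on_subset[OF psit_cont] subset_UNIV)
next
  case False
  then have k: "k \<ge> 1" by simp
  show ?thesis
  proof (cases "chi k = 0")
    case True
    then have e: "(\<lambda>t. gl t k) = (\<lambda>t. 0)" unfolding gl_def by auto
    show ?thesis unfolding e by simp
  next
    case False
    have tp: "0 < tau k" "tau k < 1" using tau_pos[OF k] tau_lt1[of k] chi_range[of k] False by auto
    have "isCont (\<lambda>t. gl t k) t" if "t \<in> {0..T}" for t
    proof -
      have "((\<lambda>t. avg (tau k) t) has_real_derivative (psit t - psit (t - tau k)) / tau k) (at t)"
        by (rule avg_deriv_t) (use tp that in auto)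
      then have "isCont (\<lambda>t. avg (tau k) t) t" by (rule DERIV_isCont)
      then show ?thesis unfolding gl_def Aav_def using k by simp
    qed
    then show ?thesis by (intro continuous_at_imp_continuous_on ballI)
  qed
qed

lemma gd_bd: "k \<ge> 1 \<Longrightarrow> t \<in> {0..T} \<Longrightarrow>
  \<bar>gd t k\<bar> \<le> (if real k * h \<le> 1 then M\<psi> * (real k * h) powr (- (2 - 2 * \<beta>)) else 0)"
proof (cases "chi k = 0")
  case True
  then show "k \<ge> 1 \<Longrightarrow> t \<in> {0..T} \<Longrightarrow> ?thesis" unfolding gd_def using Mpsi_nn by auto
next
  case False
  assume k: "k \<ge> 1" and t: "t \<in> {0..T}"
  have c: "0 < chi k" "chi k \<le> 1" using chi_range[of k] False by auto
  have kh: "real k * h < 1" "0 < real k * h" using chi_pos[OF c(1)] k h by auto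
  have tp: "0 < tau k" using tau_pos[OF k] .
  have "\<bar>psit t - psit (t - tau k)\<bar> \<le> M\<psi> * \<bar>t - (t - tau k)\<bar> powr \<beta>" by (rule psit_hold)
  then have a: "\<bar>psit t - psit (t - tau k)\<bar> \<le> M\<psi> * tau k powr \<beta>" using tp by simp
  have "\<bar>gd t k\<bar> = chi k * (\<bar>psit t - psit (t - tau k)\<bar> / tau k)"
    unfolding gd_def using c tp by (simp add: abs_mult abs_divide)
  also have "\<dots> \<le> 1 * (M\<psi> * tau k powr \<beta> / tau k)"
    using c a tp by (intro mult_mono divide_right_mono) auto
  also have "\<dots> = M\<psi> * tau k powr (\<beta> - 1)" using tp by (simp add: powr_diff)
  also have "\<dots> = M\<psi> * (real k * h) powr (- (2 - 2 * \<beta>))"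
    unfolding tau_def using sq_powr[OF kh(2), of "\<beta> - 1"] by (simp add: algebra_simps)
  finally show ?thesis using kh by simp
qed

lemma dA0: "chi 1 > 0 \<Longrightarrow> t \<in> {0..T} \<Longrightarrow> \<bar>Aav 1 t - Aav 0 t\<bar> \<le> M\<psi> * h powr (2 * \<beta>)"
proof -
  assume c: "chi 1 > 0" and t: "t \<in> {0..T}"
  have tp: "0 < tau 1" "tau 1 < 1" using tau_pos[of 1] tau_lt1[OF c] by auto
  have "\<bar>avg (tau 1) t - psit t\<bar> \<le> M\<psi> * tau 1 powr \<beta>" by (rule avg_close) (use tp t in auto)
  also have "tau 1 powr \<beta> = h powr (2 * \<beta>)" unfolding tau_def using sq_powr[OF h] by simp
  finally show ?thesis unfolding Aav_def by simp
qed

lemma dAk: "k \<ge> 1 \<Longrightarrow> chi (Suc k) > 0 \<Longrightarrow> t \<in> {0..T} \<Longrightarrow>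
  \<bar>Aav (Suc k) t - Aav k t\<bar> \<le> 6 * M\<psi> * h * (real k * h) powr (2 * \<beta> - 1)"
proof -
  assume k: "k \<ge> 1" and c: "chi (Suc k) > 0" and t: "t \<in> {0..T}"
  have tp: "0 < tau k" "tau k \<le> tau (Suc k)" "tau (Suc k) < 1"
    using tau_pos[OF k] tau_lt1[OF c] h unfolding tau_def by (auto intro!: power_mono mult_right_mono)
  have kh: "0 < real k * h" using k h by simp
  have "\<bar>avg (tau (Suc k)) t - avg (tau k) t\<bar> \<le> (tau (Suc k) - tau k) * (2 * M\<psi> * tau k powr (\<beta> - 1))"
    by (rule avg_diff) (use tp t in auto)
  also have "\<dots> \<le> (3 * real k * h\<^sup>2) * (2 * M\<psi> * tau k powr (\<beta> - 1))"
  proof (rule mult_right_mono)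
    have "tau (Suc k) - tau k = (2 * real k + 1) * h\<^sup>2" unfolding tau_def by (simp add: power2_eq_square algebra_simps)
    also have "\<dots> \<le> (3 * real k) * h\<^sup>2" using k by (intro mult_right_mono) auto
    finally show "tau (Suc k) - tau k \<le> 3 * real k * h\<^sup>2" by simp
    show "0 \<le> 2 * M\<psi> * tau k powr (\<beta> - 1)" using Mpsi_nn by simp
  qed
  also have "\<dots> = 6 * M\<psi> * h * ((real k * h) * (real k * h) powr (2 * \<beta> - 2))"
    unfolding tau_def using sq_powr[OF kh, of "\<beta> - 1"] by (simp add: power2_eq_square algebra_simps)
  also have "(real k * h) * (real k * h) powr (2 * \<beta> - 2) = (real k * h) powr (2 * \<beta> - 1)"
  proof -
    have "(real k * h) powr (2 * \<beta> - 1) = (real k * h) powr (1 + (2 * \<beta> - 2))" by simp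
    also have "\<dots> = (real k * h) powr 1 * (real k * h) powr (2 * \<beta> - 2)" by (rule powr_add)
    then show ?thesis using kh by simp
  qed
  finally show ?thesis unfolding Aav_def using k by simp
qed

end


context setting begin

lemma sq_le: "\<bar>x\<bar> \<le> y \<Longrightarrow> x\<^sup>2 \<le> (y::real)\<^sup>2" using power_mono[of "\<bar>x\<bar>" y 2] by simp
lemma sq_sum_le: "(a + b)\<^sup>2 \<le> 2 * a\<^sup>2 + 2 * (b::real)\<^sup>2"
  using sum_squares_bound[of a b] by (simp add: power2_eq_square algebra_simps)

lemma chi_mono: "chi (Suc k) \<le> chi k" unfolding chi_def using h by (intro max.mono) (simp_all add: algebra_simps)
lemma chi_step: "chi k - chi (Suc k) \<le> h" unfolding chi_def using h by (auto simp: max_def algebra_simps)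

lemma Aav_range: "t \<in> {0..T} \<Longrightarrow> chi k > 0 \<Longrightarrow> \<bar>Aav k t\<bar> \<le> \<eta>"
proof (cases "k = 0")
  case True then show "t \<in> {0..T} \<Longrightarrow> chi k > 0 \<Longrightarrow> ?thesis" unfolding Aav_def using psit_range[of t] by simp
next
  case False
  assume t: "t \<in> {0..T}" and c: "chi k > 0"
  have "tau k < 1" "0 < tau k" using tau_lt1[OF c] tau_pos[of k] False by auto
  then show ?thesis unfolding Aav_def using False avg_range[of "tau k" t] t by auto
qed

definition Gstar where "Gstar = 2 * M\<psi>\<^sup>2 + 72 * M\<psi>\<^sup>2 / (4 * \<beta> - 1) + 2 * \<eta>\<^sup>2"

lemma term2: "t \<in> {0..T} \<Longrightarrow> ((chi (Suc k) - chi k) * Aav k t)\<^sup>2 \<le> \<eta>\<^sup>2 * (h * (chi k - chi (Suc k)))"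
proof (cases "chi k = 0")
  case True
  then have "chi (Suc k) = 0" using chi_mono[of k] chi_range[of "Suc k"] by simp
  then show "t \<in> {0..T} \<Longrightarrow> ?thesis" using True by simp
next
  case False
  assume t: "t \<in> {0..T}"
  have A: "(Aav k t)\<^sup>2 \<le> \<eta>\<^sup>2" using Aav_range[OF t, of k] False chi_range[of k]
    by (intro sq_le) auto
  have d: "0 \<le> chi k - chi (Suc k)" "chi k - chi (Suc k) \<le> h" using chi_mono[of k] chi_step[of k] by auto
  have "(chi (Suc k) - chi k)\<^sup>2 = (chi k - chi (Suc k)) * (chi k - chi (Suc k))" by (simp add: power2_eq_square algebra_simps)
  also have "\<dots> \<le> h * (chi k - chi (Suc k))" using d by (intro mult_right_mono) auto
  finally have c: "(chi (Suc k) - chi k)\<^sup>2 \<le> h * (chi k - chi (Suc k))" .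
  have "((chi (Suc k) - chi k) * Aav k t)\<^sup>2 = (chi (Suc k) - chi k)\<^sup>2 * (Aav k t)\<^sup>2" by (simp add: power_mult_distrib)
  also have "\<dots> \<le> (h * (chi k - chi (Suc k))) * \<eta>\<^sup>2" using c A d h by (intro mult_mono) auto
  finally show ?thesis by (simp add: mult.commute)
qed

lemma term1_0: "t \<in> {0..T} \<Longrightarrow> (chi 1 * (Aav 1 t - Aav 0 t))\<^sup>2 \<le> M\<psi>\<^sup>2 * h"
proof (cases "chi 1 = 0")
  case True then show "t \<in> {0..T} \<Longrightarrow> ?thesis" using h by simp
next
  case False
  assume t: "t \<in> {0..T}"
  have c: "0 < chi 1" "chi 1 \<le> 1" using chi_range[of 1] False by auto
  have h1: "h < 1" using chi_pos[OF c(1)] by simp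
  have a: "\<bar>Aav 1 t - Aav 0 t\<bar> \<le> M\<psi> * h powr (2 * \<beta>)" by (rule dA0[OF c(1) t])
  have "(chi 1 * (Aav 1 t - Aav 0 t))\<^sup>2 \<le> (Aav 1 t - Aav 0 t)\<^sup>2"
    using c by (simp add: power_mult_distrib mult_left_le_one_le power_le_one)
  also have "\<dots> \<le> (M\<psi> * h powr (2 * \<beta>))\<^sup>2" using a by (intro sq_le) simp
  also have "\<dots> = M\<psi>\<^sup>2 * (h powr (4 * \<beta> - 1) * h)"
  proof -
    have "(h powr (2 * \<beta>))\<^sup>2 = h powr (4 * \<beta>)" using h by (simp add: power2_eq_square powr_add[symmetric])
    also have "\<dots> = h powr ((4 * \<beta> - 1) + 1)" by simp
    also have "\<dots> = h powr (4 * \<beta> - 1) * h powr 1" by (rule powr_add)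
    also have "h powr 1 = h" using h by simp
    finally show ?thesis by (simp add: power_mult_distrib)
  qed
  also have "\<dots> \<le> M\<psi>\<^sup>2 * (1 * h)"
  proof (intro mult_left_mono mult_right_mono)
    show "h powr (4 * \<beta> - 1) \<le> 1" using h h1 beta1 by (intro powr_le1) auto
  qed (use h in auto)
  finally show ?thesis by simp
qed

lemma term1_k: "k \<ge> 1 \<Longrightarrow> t \<in> {0..T} \<Longrightarrow> (chi (Suc k) * (Aav (Suc k) t - Aav k t))\<^sup>2
   \<le> 36 * M\<psi>\<^sup>2 * h\<^sup>2 * (if real k * h \<le> 1 then (real k * h) powr (- (2 - 4 * \<beta>)) else 0)"
proof (cases "chi (Suc k) = 0")
  case True then show "k \<ge> 1 \<Longrightarrow> t \<in> {0..T} \<Longrightarrow> ?thesis" using h by simp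
next
  case False
  assume k: "k \<ge> 1" and t: "t \<in> {0..T}"
  have c: "0 < chi (Suc k)" "chi (Suc k) \<le> 1" using chi_range[of "Suc k"] False by auto
  have kh1: "real (Suc k) * h < 1" using chi_pos[OF c(1)] .
  have kh: "real k * h \<le> 1" "0 < real k * h" using kh1 k h by (auto simp: algebra_simps)
  have a: "\<bar>Aav (Suc k) t - Aav k t\<bar> \<le> 6 * M\<psi> * h * (real k * h) powr (2 * \<beta> - 1)" by (rule dAk[OF k c(1) t])
  have "(chi (Suc k) * (Aav (Suc k) t - Aav k t))\<^sup>2 \<le> (Aav (Suc k) t - Aav k t)\<^sup>2"
    using c by (simp add: power_mult_distrib mult_left_le_one_le power_le_one)
  also have "\<dots> \<le> (6 * M\<psi> * h * (real k * h) powr (2 * \<beta> - 1))\<^sup>2" using a by (intro sq_le) simp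
  also have "\<dots> = 36 * M\<psi>\<^sup>2 * h\<^sup>2 * (real k * h) powr (- (2 - 4 * \<beta>))"
  proof -
    have "((real k * h) powr (2 * \<beta> - 1))\<^sup>2 = (real k * h) powr (- (2 - 4 * \<beta>))"
      using kh by (simp add: power2_eq_square powr_add[symmetric])
    then show ?thesis by (simp add: power_mult_distrib)
  qed
  finally show ?thesis using kh by simp
qed

lemma Gg_bd: "t \<in> {0..T} \<Longrightarrow> (1 / h) * (\<Sum>k=0..n. (gl t (Suc k) - gl t k)\<^sup>2) \<le> Gstar"
proof -
  assume t: "t \<in> {0..T}"
  define t1 where "t1 = (\<lambda>k. (chi (Suc k) * (Aav (Suc k) t - Aav k t))\<^sup>2)"
  define t2 where "t2 = (\<lambda>k. ((chi (Suc k) - chi k) * Aav k t)\<^sup>2)"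
  have pt: "(gl t (Suc k) - gl t k)\<^sup>2 \<le> 2 * t1 k + 2 * t2 k" for k
  proof -
    have "gl t (Suc k) - gl t k = chi (Suc k) * (Aav (Suc k) t - Aav k t) + (chi (Suc k) - chi k) * Aav k t"
      unfolding gl_def by (simp add: algebra_simps)
    then show ?thesis unfolding t1_def t2_def
      using sq_sum_le[of "chi (Suc k) * (Aav (Suc k) t - Aav k t)" "(chi (Suc k) - chi k) * Aav k t"]
      by simp
  qed
  have s2: "(\<Sum>k=0..n. t2 k) \<le> \<eta>\<^sup>2 * h"
  proof -
    have "(\<Sum>k=0..n. t2 k) \<le> (\<Sum>k=0..n. \<eta>\<^sup>2 * (h * (chi k - chi (Suc k))))"
      unfolding t2_def by (intro sum_mono term2[OF t])
    also have "\<dots> = \<eta>\<^sup>2 * h * (\<Sum>k=0..n. chi k - chi (Suc k))" by (simp add: sum_distrib_left mult.assoc)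
    also have "(\<Sum>k=0..n. chi k - chi (Suc k)) = chi 0 - chi (Suc n)"
      using sum_telescope[of chi n] by (simp add: atLeast0AtMost)
    also have "\<eta>\<^sup>2 * h * (chi 0 - chi (Suc n)) \<le> \<eta>\<^sup>2 * h * 1"
      using chi0 chi_range[of "Suc n"] h by (intro mult_left_mono) auto
    finally show ?thesis by simp
  qed
  have s1: "(\<Sum>k=0..n. t1 k) \<le> M\<psi>\<^sup>2 * h + 36 * M\<psi>\<^sup>2 * h / (4 * \<beta> - 1)"
  proof -
    have "(\<Sum>k=0..n. t1 k) = t1 0 + (\<Sum>k=1..n. t1 k)" by (simp add: sum.atLeast_Suc_atMost)
    also have "\<dots> \<le> M\<psi>\<^sup>2 * h + (\<Sum>k=1..n. 36 * M\<psi>\<^sup>2 * h\<^sup>2 * (if real k * h \<le> 1 then (real k * h) powr (- (2 - 4 * \<beta>)) else 0))"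
      using term1_0[OF t] term1_k[OF _ t] unfolding t1_def by (intro add_mono sum_mono) auto
    also have "(\<Sum>k=1..n. 36 * M\<psi>\<^sup>2 * h\<^sup>2 * (if real k * h \<le> 1 then (real k * h) powr (- (2 - 4 * \<beta>)) else 0))
        = 36 * M\<psi>\<^sup>2 * h * (h * (\<Sum>k=1..n. (if real k * h \<le> 1 then (real k * h) powr (- (2 - 4 * \<beta>)) else 0)))"
      by (simp add: sum_distrib_left power2_eq_square algebra_simps)
    also have "\<dots> \<le> 36 * M\<psi>\<^sup>2 * h * (1 / (1 - (2 - 4 * \<beta>)))"
      by (intro mult_left_mono riemann_powr1) (use h beta1 beta2 in auto)
    finally show ?thesis by (simp add: algebra_simps)
  qed
  have "(1 / h) * (\<Sum>k=0..n. (gl t (Suc k) - gl t k)\<^sup>2) \<le> (1 / h) * (\<Sum>k=0..n. 2 * t1 k + 2 * t2 k)"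
    using h pt by (intro mult_left_mono sum_mono) auto
  also have "\<dots> = (2 / h) * (\<Sum>k=0..n. t1 k) + (2 / h) * (\<Sum>k=0..n. t2 k)"
  proof -
    have "(\<Sum>k=0..n. 2 * t1 k + 2 * t2 k) = 2 * (\<Sum>k=0..n. t1 k) + 2 * (\<Sum>k=0..n. t2 k)"
      by (simp add: sum.distrib sum_distrib_left)
    then show ?thesis using h by (simp add: field_simps)
  qed
  also have "\<dots> \<le> (2 / h) * (M\<psi>\<^sup>2 * h + 36 * M\<psi>\<^sup>2 * h / (4 * \<beta> - 1)) + (2 / h) * (\<eta>\<^sup>2 * h)"
    using s1 s2 h by (intro add_mono mult_left_mono) auto
  also have "\<dots> = Gstar" unfolding Gstar_def using h by (simp add: field_simps)
  finally show ?thesis .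
qed

lemma Gstar_nn: "0 \<le> Gstar" unfolding Gstar_def using beta1 by simp

lemma gsq_bd: "t \<in> {0..T} \<Longrightarrow> h * (\<Sum>k=1..N. (gl t k)\<^sup>2) \<le> \<eta>\<^sup>2"
proof -
  assume t: "t \<in> {0..T}"
  have "(gl t k)\<^sup>2 \<le> \<eta>\<^sup>2 * (if real k * h \<le> 1 then 1 else 0)" for k
  proof (cases "real k * h < 1")
    case True
    then show ?thesis using gl_range[OF t, of k] by (simp add: power_mono)
  next
    case False
    then show ?thesis using chi_zero[OF False] unfolding gl_def by simp
  qed
  then have "h * (\<Sum>k=1..N. (gl t k)\<^sup>2) \<le> h * (\<Sum>k=1..N. \<eta>\<^sup>2 * (if real k * h \<le> 1 then 1 else 0))"
    using h by (intro mult_left_mono sum_mono) auto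
  also have "\<dots> = \<eta>\<^sup>2 * (h * (\<Sum>k=1..N. (if real k * h \<le> 1 then 1 else 0)))"
    by (simp add: sum_distrib_left algebra_simps)
  also have "\<dots> \<le> \<eta>\<^sup>2 * 1"
    using count_le1[OF h, of N] by (intro mult_left_mono) auto
  finally show ?thesis by simp
qed

end


lemma amgm: "0 < th \<Longrightarrow> p * q \<le> th * p\<^sup>2 + q\<^sup>2 / (4 * th)" for p q th :: real
proof -
  assume th: "0 < th"
  have eq: "th * p\<^sup>2 + q\<^sup>2 / (4 * th) - p * q = (2 * th * p - q)\<^sup>2 / (4 * th)"
    using th by (simp add: field_simps power2_eq_square)
  have "0 \<le> (2 * th * p - q)\<^sup>2 / (4 * th)" using th by simp
  then show ?thesis using eq by linarith
qed

lemma neg_le_abs: "- (x * y) \<le> \<bar>x\<bar> * \<bar>y::real\<bar>"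
proof -
  have "- (x * y) \<le> \<bar>x * y\<bar>" by simp
  then show ?thesis by (simp add: abs_mult)
qed

lemma half_le: "1/2 \<le> a \<Longrightarrow> - a * x * x \<le> - (1/2) * (x::real)\<^sup>2"
proof -
  assume a: "1/2 \<le> a"
  have "(1/2) * (x * x) \<le> a * (x * x)" by (rule mult_right_mono) (use a in auto)
  then show ?thesis by (simp add: power2_eq_square algebra_simps)
qed

lemma term_k:
  fixes a e wk1 dw dg dc A Ke eta :: real
  assumes "1/2 \<le> a" "a \<le> A" "\<bar>e\<bar> \<le> Ke * \<bar>dc\<bar>" "\<bar>wk1\<bar> \<le> eta" "0 \<le> Ke" "0 \<le> eta"
  shows "- a * dw * (dw + dg) - e * wk1 * (dw + dg) \<le> - (3/8) * dw\<^sup>2 + (4 * A\<^sup>2 + 1/2) * dg\<^sup>2 + (9/2) * Ke\<^sup>2 * eta\<^sup>2 * dc\<^sup>2"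
proof -
  have A0: "0 \<le> A" using assms by simp
  have t1: "- a * dw * dw \<le> - (1/2) * dw\<^sup>2" by (rule half_le[OF assms(1)])
  have "- a * dw * dg \<le> A * \<bar>dw\<bar> * \<bar>dg\<bar>"
  proof -
    have "- a * dw * dg \<le> \<bar>a * dw * dg\<bar>" by linarith
    also have "\<dots> = a * \<bar>dw\<bar> * \<bar>dg\<bar>" using assms(1) by (simp add: abs_mult)
    also have "\<dots> \<le> A * \<bar>dw\<bar> * \<bar>dg\<bar>" using assms(2) by (intro mult_right_mono) auto
    finally show ?thesis .
  qed
  also have "\<dots> = \<bar>dw\<bar> * (A * \<bar>dg\<bar>)" by simp
  also have "\<dots> \<le> (1/16) * \<bar>dw\<bar>\<^sup>2 + (A * \<bar>dg\<bar>)\<^sup>2 / (4 * (1/16))" by (rule amgm) simp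
  finally have t2: "- a * dw * dg \<le> (1/16) * dw\<^sup>2 + 4 * A\<^sup>2 * dg\<^sup>2" by (simp add: power_mult_distrib)
  have ew: "\<bar>e * wk1\<bar> \<le> Ke * eta * \<bar>dc\<bar>"
  proof -
    have "\<bar>e * wk1\<bar> = \<bar>e\<bar> * \<bar>wk1\<bar>" by (simp add: abs_mult)
    also have "\<dots> \<le> (Ke * \<bar>dc\<bar>) * eta" using assms by (intro mult_mono) auto
    finally show ?thesis by (simp add: algebra_simps)
  qed
  have "- e * wk1 * dw \<le> \<bar>dw\<bar> * (Ke * eta * \<bar>dc\<bar>)"
  proof -
    have "- e * wk1 * dw \<le> \<bar>e * wk1\<bar> * \<bar>dw\<bar>" using neg_le_abs[of "e * wk1" dw] by simp
    also have "\<dots> \<le> (Ke * eta * \<bar>dc\<bar>) * \<bar>dw\<bar>" using ew by (intro mult_right_mono) auto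
    finally show ?thesis by (simp add: algebra_simps)
  qed
  also have "\<dots> \<le> (1/16) * \<bar>dw\<bar>\<^sup>2 + (Ke * eta * \<bar>dc\<bar>)\<^sup>2 / (4 * (1/16))" by (rule amgm) simp
  finally have t3: "- e * wk1 * dw \<le> (1/16) * dw\<^sup>2 + 4 * Ke\<^sup>2 * eta\<^sup>2 * dc\<^sup>2" by (simp add: power_mult_distrib)
  have "- e * wk1 * dg \<le> \<bar>dg\<bar> * (Ke * eta * \<bar>dc\<bar>)"
  proof -
    have "- e * wk1 * dg \<le> \<bar>e * wk1\<bar> * \<bar>dg\<bar>" using neg_le_abs[of "e * wk1" dg] by simp
    also have "\<dots> \<le> (Ke * eta * \<bar>dc\<bar>) * \<bar>dg\<bar>" using ew by (intro mult_right_mono) auto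
    finally show ?thesis by (simp add: algebra_simps)
  qed
  also have "\<dots> \<le> (1/2) * \<bar>dg\<bar>\<^sup>2 + (Ke * eta * \<bar>dc\<bar>)\<^sup>2 / (4 * (1/2))" by (rule amgm) simp
  finally have t4: "- e * wk1 * dg \<le> (1/2) * dg\<^sup>2 + (1/2) * Ke\<^sup>2 * eta\<^sup>2 * dc\<^sup>2" by (simp add: power_mult_distrib)
  have "- a * dw * (dw + dg) - e * wk1 * (dw + dg) = (- a * dw * dw) + (- a * dw * dg) + (- e * wk1 * dw) + (- e * wk1 * dg)"
    by (simp add: algebra_simps)
  also have "\<dots> \<le> - (1/2) * dw\<^sup>2 + ((1/16) * dw\<^sup>2 + 4 * A\<^sup>2 * dg\<^sup>2) + ((1/16) * dw\<^sup>2 + 4 * Ke\<^sup>2 * eta\<^sup>2 * dc\<^sup>2) + ((1/2) * dg\<^sup>2 + (1/2) * Ke\<^sup>2 * eta\<^sup>2 * dc\<^sup>2)"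
    using t1 t2 t3 t4 by linarith
  also have "\<dots> = - (3/8) * dw\<^sup>2 + (4 * A\<^sup>2 + 1/2) * dg\<^sup>2 + (9/2) * Ke\<^sup>2 * eta\<^sup>2 * dc\<^sup>2"
    by (simp add: algebra_simps)
  finally show ?thesis .
qed

lemma term_0:
  fixes d w1 dg A :: real
  assumes "1/2 \<le> d" "d \<le> A"
  shows "- d * w1 * (w1 + dg) \<le> - (3/8) * w1\<^sup>2 + 4 * A\<^sup>2 * dg\<^sup>2"
proof -
  have t1: "- d * w1 * w1 \<le> - (1/2) * w1\<^sup>2" by (rule half_le[OF assms(1)])
  have "- d * w1 * dg \<le> A * \<bar>w1\<bar> * \<bar>dg\<bar>"
  proof -
    have "- d * w1 * dg \<le> \<bar>d * w1 * dg\<bar>" by linarith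
    also have "\<dots> = d * \<bar>w1\<bar> * \<bar>dg\<bar>" using assms(1) by (simp add: abs_mult)
    also have "\<dots> \<le> A * \<bar>w1\<bar> * \<bar>dg\<bar>" using assms(2) by (intro mult_right_mono) auto
    finally show ?thesis .
  qed
  also have "\<dots> = \<bar>w1\<bar> * (A * \<bar>dg\<bar>)" by simp
  also have "\<dots> \<le> (1/16) * \<bar>w1\<bar>\<^sup>2 + (A * \<bar>dg\<bar>)\<^sup>2 / (4 * (1/16))" by (rule amgm) simp
  finally have t2: "- d * w1 * dg \<le> (1/16) * w1\<^sup>2 + 4 * A\<^sup>2 * dg\<^sup>2" by (simp add: power_mult_distrib)
  have "- d * w1 * (w1 + dg) = - d * w1 * w1 + - d * w1 * dg" by (simp add: algebra_simps)
  also have "\<dots> \<le> - (1/2) * w1\<^sup>2 + ((1/16) * w1\<^sup>2 + 4 * A\<^sup>2 * dg\<^sup>2)" using t1 t2 by linarith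
  also have "\<dots> \<le> - (3/8) * w1\<^sup>2 + 4 * A\<^sup>2 * dg\<^sup>2" by (simp add: algebra_simps)
  finally show ?thesis .
qed

lemma sum_tele0:
  fixes w :: "nat \<Rightarrow> real"
  assumes "w 0 = 0"
  shows "w k = (\<Sum>j<k. w (Suc j) - w j)"
  using assms by (induction k) auto

lemma wk_sq:
  fixes w :: "nat \<Rightarrow> real"
  assumes "w 0 = 0" "k \<le> Suc n"
  shows "(w k)\<^sup>2 \<le> real k * ((w 1)\<^sup>2 + (\<Sum>j=1..n. (w (Suc j) - w j)\<^sup>2))"
proof -
  have "(w k)\<^sup>2 = (\<Sum>j<k. w (Suc j) - w j)\<^sup>2" using sum_tele0[of w k, OF assms(1)] by simp
  also have "\<dots> \<le> (\<Sum>j<k. (w (Suc j) - w j)\<^sup>2) * real (card {..<k})" by (rule sum_squared_le_sum_of_squares)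
  also have "\<dots> = real k * (\<Sum>j<k. (w (Suc j) - w j)\<^sup>2)" by simp
  also have "(\<Sum>j<k. (w (Suc j) - w j)\<^sup>2) \<le> (\<Sum>j\<le>n. (w (Suc j) - w j)\<^sup>2)"
    using assms(2) by (intro sum_mono2) auto
  also have "(\<Sum>j\<le>n. (w (Suc j) - w j)\<^sup>2) = (w 1)\<^sup>2 + (\<Sum>j=1..n. (w (Suc j) - w j)\<^sup>2)"
  proof -
    have "(\<Sum>j\<le>n. (w (Suc j) - w j)\<^sup>2) = (\<Sum>j=0..n. (w (Suc j) - w j)\<^sup>2)" by (simp add: atLeast0AtMost)
    also have "\<dots> = (w 1 - w 0)\<^sup>2 + (\<Sum>j=Suc 0..n. (w (Suc j) - w j)\<^sup>2)" by (simp add: sum.atLeast_Suc_atMost)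
    finally show ?thesis using assms(1) by simp
  qed
  finally show ?thesis by (simp add: mult_left_mono)
qed


context setting begin

definition wv where "wv t k = s t k - gl t k"
definition Aup where "Aup = 1/2 + \<phi>max / (2 * \<phi>min)"
definition Ke where "Ke = \<phi>max / \<phi>min\<^sup>2"
definition KR where "KR = lam * C0 * (1 + \<eta>)"
definition Lc where "Lc = lam * (1 + 2 * C0) * \<eta>"
definition Ls where "Ls = lam * \<phi>max * C0"
definition mu where "mu = 1 / (8 * Ls)"
definition Jc where "Jc = 1 / (2 * \<beta> - 1/2)"
definition LZ where "LZ = max (3 * KR) (9 * Ke\<^sup>2 * \<eta>\<^sup>2 / mu + 2 * Lc + Ls)"
definition C6 where "C6 = (8 * Aup\<^sup>2 + 2) * Gstar + 2 * KR * \<eta>\<^sup>2 + 4 * M\<psi>\<^sup>2 * Jc\<^sup>2"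

definition En where "En n t = h * (\<Sum>k=1..Suc n. (wv t k)\<^sup>2)"
definition Ga where "Ga n t = (1 / h) * (\<Sum>k=1..n. (c t (Suc k) - c t k)\<^sup>2)"
definition Dn where "Dn n t = (1 / h) * ((wv t 1)\<^sup>2 + (\<Sum>k=1..n. (wv t (Suc k) - wv t k)\<^sup>2))"
definition Gg where "Gg n t = (1 / h) * (\<Sum>k=0..n. (gl t (Suc k) - gl t k)\<^sup>2)"
definition eps where "eps n t = (2 / h) * aw t (Suc n) * wv t (Suc n) * (s t (Suc (Suc n)) - s t (Suc n))"
definition Fs where "Fs t k = (aw t k * (s t (Suc k) - s t k) + dw t k * (s t (k - 1) - s t k)) / h\<^sup>2 + R t k"
definition Gc where "Gc t k = - lam * phi B (c t k) * s t k * c t k"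
definition En' where "En' n t = h * (\<Sum>k=1..Suc n. 2 * wv t k * (Fs t k - gd t k))"
definition Ga' where "Ga' n t = (1 / h) * (\<Sum>k=1..n. 2 * (c t (Suc k) - c t k) * (Gc t (Suc k) - Gc t k))"

lemma Ls_pos: "0 < Ls" unfolding Ls_def using lam phimin phimax C0pos by simp
lemma mu_pos: "0 < mu" unfolding mu_def using Ls_pos by simp
lemma Ke_nn: "0 \<le> Ke" unfolding Ke_def using phimin phimax by simp
lemma KR_nn: "0 \<le> KR" unfolding KR_def using lam C0pos eta by simp
lemma Lc_nn: "0 \<le> Lc" unfolding Lc_def using lam C0pos eta by simp

lemma wv0: "t \<in> {0..T} \<Longrightarrow> wv t 0 = 0" unfolding wv_def using sb0 gl0 by simp

lemma wv_bd: "t \<in> {0..T} \<Longrightarrow> \<bar>wv t k\<bar> \<le> \<eta>"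
  unfolding wv_def using s_ge[of t k] s_le[of t k] gl_range[of t k] by auto

lemma s_in: "t \<in> {0..T} \<Longrightarrow> 0 \<le> s t k \<and> s t k \<le> \<eta>" using s_ge s_le by auto

lemma aw_A: "t \<in> {0..T} \<Longrightarrow> 1/2 \<le> aw t k \<and> aw t k \<le> Aup"
proof -
  assume t: "t \<in> {0..T}"
  have "phi B (c t (Suc k)) / (2 * phi B (c t k)) \<le> \<phi>max / (2 * \<phi>min)"
    by (rule ratio_le[OF t phimin]) (use phi_bd[OF t] in auto)
  moreover have "0 \<le> phi B (c t (Suc k)) / (2 * phi B (c t k))"
    using phi_pos[OF t, of k] phi_pos[OF t, of "Suc k"] by simp
  ultimately show ?thesis using aw_eq[OF t, of k] unfolding Aup_def by simp
qed

lemma dw_A: "t \<in> {0..T} \<Longrightarrow> 1/2 \<le> dw t k \<and> dw t k \<le> Aup"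
proof -
  assume t: "t \<in> {0..T}"
  have "phi B (c t (k - 1)) / (2 * phi B (c t k)) \<le> \<phi>max / (2 * \<phi>min)"
    by (rule ratio_le[OF t phimin]) (use phi_bd[OF t] in auto)
  moreover have "0 \<le> phi B (c t (k - 1)) / (2 * phi B (c t k))"
    using phi_pos[OF t, of k] phi_pos[OF t, of "k - 1"] by simp
  ultimately show ?thesis using dw_eq[OF t, of k] unfolding Aup_def by simp
qed

lemma e_bd: "t \<in> {0..T} \<Longrightarrow> \<bar>dw t (Suc k) - aw t k\<bar> \<le> Ke * \<bar>c t (Suc k) - c t k\<bar>"
proof -
  assume t: "t \<in> {0..T}"
  define P where "P = phi B (c t k)"
  define Q where "Q = phi B (c t (Suc k))"
  have P: "\<phi>min \<le> P" "P \<le> \<phi>max" and Q: "\<phi>min \<le> Q" "Q \<le> \<phi>max"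
    using phi_bd[OF t, of k] phi_bd[OF t, of "Suc k"] unfolding P_def Q_def by auto
  have P0: "0 < P" "0 < Q" using P Q phimin by auto
  have dwq: "dw t (Suc k) = (Q + P) / (2 * Q)" unfolding dw_def P_def Q_def by simp
  have awq: "aw t k = (P + Q) / (2 * P)" unfolding aw_def P_def Q_def by simp
  have e: "dw t (Suc k) - aw t k = (P + Q) * (P - Q) / (2 * P * Q)"
    unfolding dwq awq using P0 by (simp add: field_simps)
  have PQ: "\<bar>P - Q\<bar> = \<bar>c t (Suc k) - c t k\<bar>" unfolding P_def Q_def phi_def using B by auto
  have "\<bar>(P + Q) * (P - Q) / (2 * P * Q)\<bar> = (P + Q) * \<bar>P - Q\<bar> / (2 * P * Q)"
    using P0 by (simp add: abs_mult abs_divide)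
  also have "\<dots> \<le> (2 * \<phi>max) * \<bar>P - Q\<bar> / (2 * \<phi>min * \<phi>min)"
  proof (rule frac_le)
    show "0 \<le> 2 * \<phi>max * \<bar>P - Q\<bar>" using phimax phimin by simp
    show "(P + Q) * \<bar>P - Q\<bar> \<le> 2 * \<phi>max * \<bar>P - Q\<bar>" using P Q by (intro mult_right_mono) auto
    show "0 < 2 * \<phi>min * \<phi>min" using phimin by simp
    show "2 * \<phi>min * \<phi>min \<le> 2 * P * Q" using P Q phimin by (simp add: mult_mono)
  qed
  also have "\<dots> = Ke * \<bar>c t (Suc k) - c t k\<bar>" unfolding Ke_def PQ using phimin by (simp add: power2_eq_square field_simps)
  finally show ?thesis using e by simp
qed

lemma P1: "t \<in> {0..T} \<Longrightarrow>
  (2 / h) * (\<Sum>k=1..Suc n. wv t k * (aw t k * (s t (Suc k) - s t k) + dw t k * (s t (k - 1) - s t k)))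
  \<le> - (3/4) * Dn n t + (8 * Aup\<^sup>2 + 1) * Gg n t + 9 * Ke\<^sup>2 * \<eta>\<^sup>2 * Ga n t + eps n t"
proof -
  assume t: "t \<in> {0..T}"
  let ?w = "wv t" and ?s = "s t" and ?g = "gl t" and ?c = "c t"
  have sw: "?s k = ?w k + ?g k" for k unfolding wv_def by simp
  have w0: "?w 0 = 0" by (rule wv0[OF t])
  have r1: "(\<Sum>k=1..Suc n. ?w k * (aw t k * (?s (Suc k) - ?s k) + dw t k * (?s (k - 1) - ?s k)))
     = (\<Sum>k=1..Suc n. ?w k * (aw t k * (?s (Suc k) - ?s k) - dw t k * (?s k - ?s (k - 1))))"
    by (intro sum.cong refl) (simp add: algebra_simps)
  have sb: "(\<Sum>k=1..Suc n. ?w k * (aw t k * (?s (Suc k) - ?s k) - dw t k * (?s k - ?s (k - 1)))) =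
    (\<Sum>k=1..n. - aw t k * (?w (Suc k) - ?w k) * ((?w (Suc k) - ?w k) + (?g (Suc k) - ?g k))
               - (dw t (Suc k) - aw t k) * ?w (Suc k) * ((?w (Suc k) - ?w k) + (?g (Suc k) - ?g k)))
    + aw t (Suc n) * ?w (Suc n) * (?s (Suc (Suc n)) - ?s (Suc n))
    + (- dw t 1 * ?w 1 * (?w 1 + (?g 1 - ?g 0)))"
  proof -
    have d1: "?s (Suc k) - ?s k = (?w (Suc k) - ?w k) + (?g (Suc k) - ?g k)" for k using sw[of k] sw[of "Suc k"] by simp
    have d0: "?s 1 - ?s 0 = ?w 1 + (?g 1 - ?g 0)" using sw[of 0] sw[of 1] w0 by simp
    show ?thesis unfolding sbp d0
      by (simp add: d1 sum_subtractf[symmetric] sum_negf[symmetric] algebra_simps)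
  qed
  have tk: "- aw t k * (?w (Suc k) - ?w k) * ((?w (Suc k) - ?w k) + (?g (Suc k) - ?g k))
               - (dw t (Suc k) - aw t k) * ?w (Suc k) * ((?w (Suc k) - ?w k) + (?g (Suc k) - ?g k))
      \<le> - (3/8) * (?w (Suc k) - ?w k)\<^sup>2 + (4 * Aup\<^sup>2 + 1/2) * (?g (Suc k) - ?g k)\<^sup>2 + (9/2) * Ke\<^sup>2 * \<eta>\<^sup>2 * (?c (Suc k) - ?c k)\<^sup>2" for k
    by (rule term_k) (use aw_A[OF t, of k] e_bd[OF t, of k] wv_bd[OF t, of "Suc k"] Ke_nn eta in auto)
  have t0: "- dw t 1 * ?w 1 * (?w 1 + (?g 1 - ?g 0)) \<le> - (3/8) * (?w 1)\<^sup>2 + 4 * Aup\<^sup>2 * (?g 1 - ?g 0)\<^sup>2"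
    by (rule term_0) (use dw_A[OF t, of 1] in auto)
  have t0': "4 * Aup\<^sup>2 * (?g 1 - ?g 0)\<^sup>2 \<le> (4 * Aup\<^sup>2 + 1/2) * (?g 1 - ?g 0)\<^sup>2"
    by (intro mult_right_mono) auto
  define SW where "SW = (\<Sum>k=1..n. (?w (Suc k) - ?w k)\<^sup>2)"
  define SG where "SG = (\<Sum>k=1..n. (?g (Suc k) - ?g k)\<^sup>2)"
  define SC where "SC = (\<Sum>k=1..n. (?c (Suc k) - ?c k)\<^sup>2)"
  define \<alpha> where "\<alpha> = 4 * Aup\<^sup>2 + 1/2"
  define \<kappa> where "\<kappa> = (9/2) * Ke\<^sup>2 * \<eta>\<^sup>2"
  define bN where "bN = aw t (Suc n) * ?w (Suc n) * (?s (Suc (Suc n)) - ?s (Suc n))"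
  define T0 where "T0 = - dw t 1 * ?w 1 * (?w 1 + (?g 1 - ?g 0))"
  define SK where "SK = (\<Sum>k=1..n. - aw t k * (?w (Suc k) - ?w k) * ((?w (Suc k) - ?w k) + (?g (Suc k) - ?g k))
               - (dw t (Suc k) - aw t k) * ?w (Suc k) * ((?w (Suc k) - ?w k) + (?g (Suc k) - ?g k)))"
  have sum_le: "SK \<le> - (3/8) * SW + \<alpha> * SG + \<kappa> * SC"
  proof -
    have "SK \<le> (\<Sum>k=1..n. - (3/8) * (?w (Suc k) - ?w k)\<^sup>2 + \<alpha> * (?g (Suc k) - ?g k)\<^sup>2 + \<kappa> * (?c (Suc k) - ?c k)\<^sup>2)"
      unfolding SK_def \<alpha>_def \<kappa>_def by (rule sum_mono) (rule tk)
    also have "\<dots> = (\<Sum>k=1..n. - (3/8) * (?w (Suc k) - ?w k)\<^sup>2) + (\<Sum>k=1..n. \<alpha> * (?g (Suc k) - ?g k)\<^sup>2) + (\<Sum>k=1..n. \<kappa> * (?c (Suc k) - ?c k)\<^sup>2)"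
      by (simp only: sum.distrib)
    also have "\<dots> = - (3/8) * SW + \<alpha> * SG + \<kappa> * SC"
      unfolding SW_def SG_def SC_def by (simp only: sum_distrib_left[symmetric])
    finally show ?thesis .
  qed
  have t0a: "T0 \<le> - (3/8) * (?w 1)\<^sup>2 + \<alpha> * (?g 1 - ?g 0)\<^sup>2"
    using t0 t0' unfolding T0_def \<alpha>_def by linarith
  have GgE: "h * Gg n t = (?g 1 - ?g 0)\<^sup>2 + SG"
    unfolding Gg_def SG_def using h by (simp add: sum.atLeast_Suc_atMost)
  have DnE: "h * Dn n t = (?w 1)\<^sup>2 + SW" unfolding Dn_def SW_def using h by simp
  have GaE: "h * Ga n t = SC" unfolding Ga_def SC_def using h by simp
  have epsE: "eps n t = (2 / h) * bN" unfolding eps_def bN_def by simp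
  have LHS: "(\<Sum>k=1..Suc n. ?w k * (aw t k * (?s (Suc k) - ?s k) + dw t k * (?s (k - 1) - ?s k))) = SK + bN + T0"
    unfolding r1 sb SK_def bN_def T0_def by simp
  have tot: "SK + bN + T0 \<le> - (3/8) * (h * Dn n t) + \<alpha> * (h * Gg n t) + \<kappa> * (h * Ga n t) + bN"
    unfolding GgE DnE GaE distrib_left using sum_le t0a by linarith
  have "(2 / h) * (SK + bN + T0) \<le> (2 / h) * (- (3/8) * (h * Dn n t) + \<alpha> * (h * Gg n t) + \<kappa> * (h * Ga n t) + bN)"
    using tot h by (intro mult_left_mono) auto
  also have "\<dots> = - (3/4) * Dn n t + (8 * Aup\<^sup>2 + 1) * Gg n t + 9 * Ke\<^sup>2 * \<eta>\<^sup>2 * Ga n t + eps n t"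
    unfolding epsE \<alpha>_def \<kappa>_def using h by (simp add: field_simps)
  finally show ?thesis unfolding LHS .
qed

end


context setting begin

lemma R_bd: "t \<in> {0..T} \<Longrightarrow> \<bar>R t k\<bar> \<le> KR * s t k"
proof -
  assume t: "t \<in> {0..T}"
  have sk: "0 \<le> s t k" "s t k \<le> \<eta>" using s_in[OF t, of k] by auto
  have ck: "0 < c t k" "c t k \<le> C0" using cpos[OF t, of k] c_le[OF t, of k] by auto
  have "R t k = lam * c t k * s t k * (B * s t k - 1)" unfolding R_def by (simp add: power2_eq_square algebra_simps)
  then have "\<bar>R t k\<bar> = lam * c t k * s t k * \<bar>B * s t k - 1\<bar>" using lam ck sk by (simp add: abs_mult)
  also have "\<dots> \<le> lam * C0 * s t k * (1 + \<eta>)"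
  proof (rule mult_mono)
    show "lam * c t k * s t k \<le> lam * C0 * s t k" using lam ck sk by (intro mult_right_mono mult_left_mono) auto
    show "\<bar>B * s t k - 1\<bar> \<le> 1 + \<eta>" using B sk by auto
    show "0 \<le> lam * C0 * s t k" using lam C0pos sk by simp
  qed simp
  finally show ?thesis unfolding KR_def by (simp add: algebra_simps)
qed

lemma P2: "t \<in> {0..T} \<Longrightarrow> 2 * h * (\<Sum>k=1..Suc n. wv t k * R t k) \<le> 3 * KR * En n t + 2 * KR * \<eta>\<^sup>2"
proof -
  assume t: "t \<in> {0..T}"
  have pk: "2 * (wv t k * R t k) \<le> KR * (3 * (wv t k)\<^sup>2 + 2 * (gl t k)\<^sup>2)" for k
  proof -
    have sk: "0 \<le> s t k" using s_in[OF t, of k] by simp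
    have "2 * (wv t k * R t k) \<le> 2 * (\<bar>wv t k\<bar> * (KR * s t k))"
    proof -
      have "wv t k * R t k \<le> \<bar>wv t k\<bar> * \<bar>R t k\<bar>" by (simp add: abs_mult[symmetric])
      also have "\<dots> \<le> \<bar>wv t k\<bar> * (KR * s t k)" using R_bd[OF t, of k] by (intro mult_left_mono) auto
      finally show ?thesis by simp
    qed
    also have "\<dots> = KR * (2 * (\<bar>wv t k\<bar> * s t k))" by simp
    also have "\<dots> \<le> KR * ((wv t k)\<^sup>2 + (s t k)\<^sup>2)"
      using sum_squares_bound[of "\<bar>wv t k\<bar>" "s t k"] KR_nn by (intro mult_left_mono) (auto simp: power2_eq_square)
    also have "\<dots> \<le> KR * (3 * (wv t k)\<^sup>2 + 2 * (gl t k)\<^sup>2)"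
    proof (rule mult_left_mono[OF _ KR_nn])
      have "(s t k)\<^sup>2 \<le> 2 * (wv t k)\<^sup>2 + 2 * (gl t k)\<^sup>2" using sq_sum_le[of "wv t k" "gl t k"] unfolding wv_def by simp
      then show "(wv t k)\<^sup>2 + (s t k)\<^sup>2 \<le> 3 * (wv t k)\<^sup>2 + 2 * (gl t k)\<^sup>2" by simp
    qed
    finally show ?thesis .
  qed
  have "2 * h * (\<Sum>k=1..Suc n. wv t k * R t k) = h * (\<Sum>k=1..Suc n. 2 * (wv t k * R t k))"
    by (simp add: sum_distrib_left)
  also have "\<dots> \<le> h * (\<Sum>k=1..Suc n. KR * (3 * (wv t k)\<^sup>2 + 2 * (gl t k)\<^sup>2))"
    using h pk by (intro mult_left_mono sum_mono) auto
  also have "\<dots> = 3 * KR * (h * (\<Sum>k=1..Suc n. (wv t k)\<^sup>2)) + 2 * KR * (h * (\<Sum>k=1..Suc n. (gl t k)\<^sup>2))"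
    by (simp add: sum.distrib sum_distrib_left algebra_simps)
  also have "\<dots> \<le> 3 * KR * En n t + 2 * KR * \<eta>\<^sup>2"
    unfolding En_def using gsq_bd[OF t, of "Suc n"] KR_nn h by (intro add_mono mult_left_mono) auto
  finally show ?thesis .
qed

lemma Dn_nn: "0 \<le> Dn n t" unfolding Dn_def using h by (intro mult_nonneg_nonneg sum_nonneg add_nonneg_nonneg) auto

lemma P3: "t \<in> {0..T} \<Longrightarrow> - (h * (\<Sum>k=1..Suc n. 2 * wv t k * gd t k)) \<le> Dn n t / 4 + 4 * M\<psi>\<^sup>2 * Jc\<^sup>2"
proof -
  assume t: "t \<in> {0..T}"
  define D where "D = Dn n t"
  have D0: "0 \<le> D" unfolding D_def by (rule Dn_nn)
  define g where "g = 3/2 - 2 * \<beta>"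
  have g: "0 < g" "g < 1" unfolding g_def using beta1 beta2 by auto
  have Jg: "1 / (1 - g) = Jc" unfolding g_def Jc_def by simp
  have pk: "- (2 * wv t k * gd t k) \<le> 2 * sqrt D * M\<psi> * (if real k * h \<le> 1 then (real k * h) powr (- g) else 0)"
    if k: "k \<in> {1..Suc n}" for k
  proof -
    have kh: "0 < real k * h" using k h by auto
    have "(wv t k)\<^sup>2 \<le> real k * ((wv t 1)\<^sup>2 + (\<Sum>j=1..n. (wv t (Suc j) - wv t j)\<^sup>2))"
      by (rule wk_sq) (use wv0[OF t] k in auto)
    also have "\<dots> = real k * h * D" unfolding D_def Dn_def using h by simp
    finally have "sqrt ((wv t k)\<^sup>2) \<le> sqrt (real k * h * D)" by (rule real_sqrt_le_mono)
    then have wb: "\<bar>wv t k\<bar> \<le> sqrt (real k * h) * sqrt D" by (simp add: real_sqrt_mult)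
    have gb: "\<bar>gd t k\<bar> \<le> (if real k * h \<le> 1 then M\<psi> * (real k * h) powr (- (2 - 2 * \<beta>)) else 0)"
      by (rule gd_bd) (use k t in auto)
    have "- (2 * wv t k * gd t k) \<le> 2 * (\<bar>wv t k\<bar> * \<bar>gd t k\<bar>)"
    proof -
      have "- (wv t k * gd t k) \<le> \<bar>wv t k\<bar> * \<bar>gd t k\<bar>" by (rule neg_le_abs)
      then show ?thesis by linarith
    qed
    also have "\<dots> \<le> 2 * ((sqrt (real k * h) * sqrt D) * (if real k * h \<le> 1 then M\<psi> * (real k * h) powr (- (2 - 2 * \<beta>)) else 0))"
      using wb gb by (intro mult_left_mono mult_mono) auto
    also have "\<dots> = 2 * sqrt D * M\<psi> * (if real k * h \<le> 1 then (real k * h) powr (- g) else 0)"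
    proof (cases "real k * h \<le> 1")
      case True
      have "sqrt (real k * h) * (real k * h) powr (- (2 - 2 * \<beta>)) = (real k * h) powr (1/2) * (real k * h) powr (- (2 - 2 * \<beta>))"
        using kh by (simp add: powr_half_sqrt)
      also have "\<dots> = (real k * h) powr (- g)" unfolding g_def by (simp add: powr_add[symmetric])
      finally show ?thesis using True by (simp add: algebra_simps)
    qed simp
    finally show ?thesis .
  qed
  have "- (h * (\<Sum>k=1..Suc n. 2 * wv t k * gd t k)) = h * (\<Sum>k=1..Suc n. - (2 * wv t k * gd t k))"
    by (simp only: sum_negf mult_minus_right)
  also have "\<dots> \<le> h * (\<Sum>k=1..Suc n. 2 * sqrt D * M\<psi> * (if real k * h \<le> 1 then (real k * h) powr (- g) else 0))"
    using h by (intro mult_left_mono sum_mono pk) auto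
  also have "\<dots> = 2 * sqrt D * M\<psi> * (h * (\<Sum>k=1..Suc n. (if real k * h \<le> 1 then (real k * h) powr (- g) else 0)))"
    by (simp add: sum_distrib_left algebra_simps)
  also have "\<dots> \<le> 2 * sqrt D * M\<psi> * Jc"
    using riemann_powr1[OF g h, of "Suc n"] Jg D0 Mpsi_nn by (intro mult_left_mono) auto
  also have "\<dots> = sqrt D * (2 * M\<psi> * Jc)" by simp
  also have "\<dots> \<le> (1/4) * (sqrt D)\<^sup>2 + (2 * M\<psi> * Jc)\<^sup>2 / (4 * (1/4))" by (rule amgm) simp
  also have "\<dots> = D / 4 + 4 * M\<psi>\<^sup>2 * Jc\<^sup>2" using D0 by (simp add: power_mult_distrib)
  finally show ?thesis unfolding D_def .
qed

lemma Gc_lip: "t \<in> {0..T} \<Longrightarrow> \<bar>Gc t (Suc k) - Gc t k\<bar> \<le> Lc * \<bar>c t (Suc k) - c t k\<bar> + Ls * \<bar>s t (Suc k) - s t k\<bar>"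
proof -
  assume t: "t \<in> {0..T}"
  define c1 where "c1 = c t k"
  define c2 where "c2 = c t (Suc k)"
  define s1 where "s1 = s t k"
  define s2 where "s2 = s t (Suc k)"
  have c: "0 < c1" "c1 \<le> C0" "0 < c2" "c2 \<le> C0" unfolding c1_def c2_def using cpos[OF t] c_le[OF t] by auto
  have s: "0 \<le> s1" "s1 \<le> \<eta>" "0 \<le> s2" "s2 \<le> \<eta>" unfolding s1_def s2_def using s_in[OF t] by auto
  have p1: "\<phi>min \<le> 1 + B * c1" "1 + B * c1 \<le> \<phi>max" using phi_bd[OF t, of k] unfolding c1_def phi_def by auto
  have eq: "Gc t (Suc k) - Gc t k = - lam * ((c2 - c1) * (1 + B * (c2 + c1)) * s2 + (1 + B * c1) * c1 * (s2 - s1))"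
    unfolding Gc_def c1_def[symmetric] c2_def[symmetric] s1_def[symmetric] s2_def[symmetric] phi_def
    by (simp add: algebra_simps)
  have a1: "\<bar>(c2 - c1) * (1 + B * (c2 + c1)) * s2\<bar> \<le> \<bar>c2 - c1\<bar> * (1 + 2 * C0) * \<eta>"
  proof -
    have "\<bar>1 + B * (c2 + c1)\<bar> \<le> 1 + 2 * C0" using B c by auto
    then show ?thesis using s by (simp add: abs_mult mult_mono)
  qed
  have a2: "\<bar>(1 + B * c1) * c1 * (s2 - s1)\<bar> \<le> \<phi>max * C0 * \<bar>s2 - s1\<bar>"
  proof -
    have "\<bar>(1 + B * c1) * c1\<bar> \<le> \<phi>max * C0" using p1 c phimin by (simp add: abs_mult mult_mono)
    then show ?thesis by (simp add: abs_mult mult_right_mono)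
  qed
  have "\<bar>Gc t (Suc k) - Gc t k\<bar> = lam * \<bar>(c2 - c1) * (1 + B * (c2 + c1)) * s2 + (1 + B * c1) * c1 * (s2 - s1)\<bar>"
    unfolding eq using lam by (simp add: abs_mult)
  also have "\<dots> \<le> lam * (\<bar>c2 - c1\<bar> * (1 + 2 * C0) * \<eta> + \<phi>max * C0 * \<bar>s2 - s1\<bar>)"
    using a1 a2 lam by (intro mult_left_mono) (auto intro: order_trans[OF abs_triangle_ineq])
  also have "\<dots> = Lc * \<bar>c2 - c1\<bar> + Ls * \<bar>s2 - s1\<bar>" unfolding Lc_def Ls_def by (simp add: algebra_simps)
  finally show ?thesis unfolding c1_def c2_def s1_def s2_def .
qed

lemma Gg_nn: "0 \<le> Gg n t" unfolding Gg_def using h by (intro mult_nonneg_nonneg sum_nonneg) auto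
lemma Ga_nn: "0 \<le> Ga n t" unfolding Ga_def using h by (intro mult_nonneg_nonneg sum_nonneg) auto

lemma P4: "t \<in> {0..T} \<Longrightarrow> Ga' n t \<le> (2 * Lc + Ls) * Ga n t + 2 * Ls * Dn n t + 2 * Ls * Gg n t"
proof -
  assume t: "t \<in> {0..T}"
  let ?dc = "\<lambda>k. c t (Suc k) - c t k" and ?dw = "\<lambda>k. wv t (Suc k) - wv t k" and ?dg = "\<lambda>k. gl t (Suc k) - gl t k"
  have pk: "2 * ?dc k * (Gc t (Suc k) - Gc t k) \<le> (2 * Lc + Ls) * (?dc k)\<^sup>2 + 2 * Ls * (?dw k)\<^sup>2 + 2 * Ls * (?dg k)\<^sup>2" for k
  proof -
    have ds: "s t (Suc k) - s t k = ?dw k + ?dg k" unfolding wv_def by simp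
    have "2 * ?dc k * (Gc t (Suc k) - Gc t k) \<le> 2 * (\<bar>?dc k\<bar> * \<bar>Gc t (Suc k) - Gc t k\<bar>)"
    proof -
      have "?dc k * (Gc t (Suc k) - Gc t k) \<le> \<bar>?dc k\<bar> * \<bar>Gc t (Suc k) - Gc t k\<bar>"
        by (metis abs_ge_self abs_mult)
      then show ?thesis by linarith
    qed
    also have "\<dots> \<le> 2 * (\<bar>?dc k\<bar> * (Lc * \<bar>?dc k\<bar> + Ls * \<bar>s t (Suc k) - s t k\<bar>))"
      using Gc_lip[OF t, of k] by (intro mult_left_mono) auto
    also have "\<dots> = 2 * Lc * (?dc k)\<^sup>2 + Ls * (2 * (\<bar>?dc k\<bar> * \<bar>s t (Suc k) - s t k\<bar>))"
      by (simp add: power2_eq_square algebra_simps)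
    also have "\<dots> \<le> 2 * Lc * (?dc k)\<^sup>2 + Ls * ((?dc k)\<^sup>2 + (s t (Suc k) - s t k)\<^sup>2)"
      using sum_squares_bound[of "\<bar>?dc k\<bar>" "\<bar>s t (Suc k) - s t k\<bar>"] Ls_pos
      by (intro add_left_mono mult_left_mono) (auto simp: power2_eq_square)
    also have "\<dots> \<le> 2 * Lc * (?dc k)\<^sup>2 + Ls * ((?dc k)\<^sup>2 + (2 * (?dw k)\<^sup>2 + 2 * (?dg k)\<^sup>2))"
      using sq_sum_le[of "?dw k" "?dg k"] Ls_pos unfolding ds by (intro add_left_mono mult_left_mono) auto
    also have "\<dots> = (2 * Lc + Ls) * (?dc k)\<^sup>2 + 2 * Ls * (?dw k)\<^sup>2 + 2 * Ls * (?dg k)\<^sup>2"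
      by (simp add: algebra_simps)
    finally show ?thesis .
  qed
  have "Ga' n t \<le> (1 / h) * (\<Sum>k=1..n. (2 * Lc + Ls) * (?dc k)\<^sup>2 + 2 * Ls * (?dw k)\<^sup>2 + 2 * Ls * (?dg k)\<^sup>2)"
    unfolding Ga'_def using h pk by (intro mult_left_mono sum_mono) auto
  also have "\<dots> = (2 * Lc + Ls) * ((1 / h) * (\<Sum>k=1..n. (?dc k)\<^sup>2)) + 2 * Ls * ((1 / h) * (\<Sum>k=1..n. (?dw k)\<^sup>2))
      + 2 * Ls * ((1 / h) * (\<Sum>k=1..n. (?dg k)\<^sup>2))"
    by (simp only: sum.distrib sum_distrib_left[symmetric]) (simp add: algebra_simps add_divide_distrib)
  also have "\<dots> \<le> (2 * Lc + Ls) * Ga n t + 2 * Ls * Dn n t + 2 * Ls * Gg n t"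
  proof (intro add_mono mult_left_mono)
    show "(1 / h) * (\<Sum>k=1..n. (?dc k)\<^sup>2) \<le> Ga n t" unfolding Ga_def by simp
    show "(1 / h) * (\<Sum>k=1..n. (?dw k)\<^sup>2) \<le> Dn n t" unfolding Dn_def using h by (intro mult_left_mono) auto
    have "(\<Sum>k=1..n. (?dg k)\<^sup>2) \<le> (\<Sum>k=0..n. (?dg k)\<^sup>2)" by (intro sum_mono2) auto
    then show "(1 / h) * (\<Sum>k=1..n. (?dg k)\<^sup>2) \<le> Gg n t" unfolding Gg_def using h by (intro mult_left_mono) auto
  qed (use Lc_nn Ls_pos in auto)
  finally show ?thesis .
qed

end


lemma combine:
  fixes En' Ga' SF RW GW D Gg Ga En eps a1 a2 a3 b1 r0 q0 KR LZ mu Ls Gs :: real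
  assumes eq: "En' = SF + RW + GW"
    and f1: "SF \<le> - (3/4) * D + a1 * Gg + a2 * Ga + eps"
    and f2: "RW \<le> 3 * KR * En + r0"
    and f3: "GW \<le> D / 4 + q0"
    and f4: "Ga' \<le> b1 * Ga + 2 * Ls * D + 2 * Ls * Gg"
    and mu: "mu = 1 / (8 * Ls)" and Ls: "0 < Ls"
    and Gg: "0 \<le> Gg" "Gg \<le> Gs" and Ga: "0 \<le> Ga" and En: "0 \<le> En"
    and c1: "3 * KR \<le> LZ" and c2: "a2 + mu * b1 \<le> mu * LZ" and c3: "a1 + 1/4 \<le> a3" and a3: "0 \<le> a3"
  shows "En' + mu * Ga' \<le> - D / 4 + LZ * (En + mu * Ga) + (a3 * Gs + r0 + q0) + \<bar>eps\<bar>"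
proof -
  have mu0: "0 < mu" using mu Ls by simp
  have m4: "mu * Ga' \<le> mu * (b1 * Ga) + D / 4 + Gg / 4"
  proof -
    have "mu * Ga' \<le> mu * (b1 * Ga + 2 * Ls * D + 2 * Ls * Gg)" using f4 mu0 by (intro mult_left_mono) auto
    also have "\<dots> = mu * (b1 * Ga) + D / 4 + Gg / 4" using mu Ls by (simp add: field_simps)
    finally show ?thesis .
  qed
  have p1: "(a1 + 1/4) * Gg \<le> a3 * Gs" using c3 Gg a3 by (intro mult_mono) auto
  have p2: "(a2 + mu * b1) * Ga \<le> (mu * LZ) * Ga" using c2 Ga by (intro mult_right_mono) auto
  have p3: "3 * KR * En \<le> LZ * En" using c1 En by (intro mult_right_mono) auto
  have e1: "(a1 + 1/4) * Gg = a1 * Gg + Gg / 4" by (simp add: algebra_simps)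
  have e2: "(a2 + mu * b1) * Ga = a2 * Ga + mu * (b1 * Ga)" by (simp add: algebra_simps)
  have e3: "LZ * (En + mu * Ga) = LZ * En + (mu * LZ) * Ga" by (simp add: algebra_simps)
  have "eps \<le> \<bar>eps\<bar>" by simp
  then show ?thesis using eq f1 f2 f3 m4 p1 p2 p3 e1 e2 e3 by linarith
qed

context setting begin

lemma En_decomp: "En' n t = (2 / h) * (\<Sum>k=1..Suc n. wv t k * (aw t k * (s t (Suc k) - s t k) + dw t k * (s t (k - 1) - s t k)))
   + 2 * h * (\<Sum>k=1..Suc n. wv t k * R t k) + - (h * (\<Sum>k=1..Suc n. 2 * wv t k * gd t k))"
proof -
  have pt: "h * (2 * wv t k * (Fs t k - gd t k)) = (2 / h) * (wv t k * (aw t k * (s t (Suc k) - s t k) + dw t k * (s t (k - 1) - s t k)))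
     + 2 * h * (wv t k * R t k) - h * (2 * wv t k * gd t k)" for k
    unfolding Fs_def using h by (simp add: field_simps power2_eq_square)
  have "En' n t = (\<Sum>k=1..Suc n. h * (2 * wv t k * (Fs t k - gd t k)))" unfolding En'_def by (simp only: sum_distrib_left)
  also have "\<dots> = (\<Sum>k=1..Suc n. (2 / h) * (wv t k * (aw t k * (s t (Suc k) - s t k) + dw t k * (s t (k - 1) - s t k)))
     + 2 * h * (wv t k * R t k) - h * (2 * wv t k * gd t k))" using pt by simp
  also have "\<dots> = (2 / h) * (\<Sum>k=1..Suc n. wv t k * (aw t k * (s t (Suc k) - s t k) + dw t k * (s t (k - 1) - s t k)))
   + 2 * h * (\<Sum>k=1..Suc n. wv t k * R t k) + - (h * (\<Sum>k=1..Suc n. 2 * wv t k * gd t k))"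
    by (simp only: sum.distrib sum_subtractf sum_distrib_left[symmetric] diff_conv_add_uminus sum_negf)
  finally show ?thesis .
qed

lemma Aup_nn: "0 \<le> Aup" unfolding Aup_def using phimin phimax by simp

lemma LZ_ge: "3 * KR \<le> LZ" "9 * Ke\<^sup>2 * \<eta>\<^sup>2 + mu * (2 * Lc + Ls) \<le> mu * LZ"
proof -
  show "3 * KR \<le> LZ" unfolding LZ_def by simp
  have "9 * Ke\<^sup>2 * \<eta>\<^sup>2 / mu + 2 * Lc + Ls \<le> LZ" unfolding LZ_def by simp
  then have "mu * (9 * Ke\<^sup>2 * \<eta>\<^sup>2 / mu + 2 * Lc + Ls) \<le> mu * LZ" using mu_pos by (intro mult_left_mono) auto
  moreover have "mu * (9 * Ke\<^sup>2 * \<eta>\<^sup>2 / mu + 2 * Lc + Ls) = 9 * Ke\<^sup>2 * \<eta>\<^sup>2 + mu * (2 * Lc + Ls)"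
    using mu_pos by (simp add: field_simps)
  ultimately show "9 * Ke\<^sup>2 * \<eta>\<^sup>2 + mu * (2 * Lc + Ls) \<le> mu * LZ" by simp
qed

lemma Gg_le: "t \<in> {0..T} \<Longrightarrow> Gg n t \<le> Gstar" unfolding Gg_def by (rule Gg_bd)

lemma En_nn: "0 \<le> En n t" unfolding En_def using h by (intro mult_nonneg_nonneg sum_nonneg) auto

lemma pointwise: "t \<in> {0..T} \<Longrightarrow> En' n t + mu * Ga' n t \<le> - Dn n t / 4 + LZ * (En n t + mu * Ga n t) + C6 + \<bar>eps n t\<bar>"
proof -
  assume t: "t \<in> {0..T}"
  have "En' n t + mu * Ga' n t \<le> - Dn n t / 4 + LZ * (En n t + mu * Ga n t)
      + ((8 * Aup\<^sup>2 + 2) * Gstar + 2 * KR * \<eta>\<^sup>2 + 4 * M\<psi>\<^sup>2 * Jc\<^sup>2) + \<bar>eps n t\<bar>"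
  proof (rule combine[OF En_decomp P1[OF t] P2[OF t] P3[OF t] P4[OF t] mu_def Ls_pos Gg_nn Gg_le[OF t] Ga_nn En_nn LZ_ge])
    show "8 * Aup\<^sup>2 + 1 + 1/4 \<le> 8 * Aup\<^sup>2 + 2" by simp
    show "0 \<le> 8 * Aup\<^sup>2 + 2" by simp
  qed
  then show ?thesis unfolding C6_def .
qed

end


lemma DERIV_sq: "(f has_real_derivative D) (at x) \<Longrightarrow> ((\<lambda>t. (f t)\<^sup>2) has_real_derivative 2 * f x * D) (at x)"
proof -
  assume d: "(f has_real_derivative D) (at x)"
  have "((\<lambda>t. f t * f t) has_real_derivative D * f x + D * f x) (at x)" by (rule DERIV_mult[OF d d])
  then show ?thesis by (simp add: power2_eq_square algebra_simps)
qed

context setting begin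

lemma d_wv: "k \<ge> 1 \<Longrightarrow> 0 < t \<Longrightarrow> t < T \<Longrightarrow> ((\<lambda>t. wv t k) has_real_derivative Fs t k - gd t k) (at t)"
  unfolding wv_def Fs_def by (rule DERIV_diff[OF ds2 gl_deriv])

lemma d_En: "0 < t \<Longrightarrow> t < T \<Longrightarrow> ((\<lambda>t. En n t) has_real_derivative En' n t) (at t)"
proof -
  assume t: "0 < t" "t < T"
  have "((\<lambda>t. \<Sum>k=1..Suc n. (wv t k)\<^sup>2) has_real_derivative (\<Sum>k=1..Suc n. 2 * wv t k * (Fs t k - gd t k))) (at t)"
    by (rule DERIV_sum, rule DERIV_sq, rule d_wv) (use t in auto)
  then show ?thesis unfolding En_def En'_def by (rule DERIV_cmult)
qed

lemma d_Ga: "0 < t \<Longrightarrow> t < T \<Longrightarrow> ((\<lambda>t. Ga n t) has_real_derivative Ga' n t) (at t)"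
proof -
  assume t: "0 < t" "t < T"
  have dd: "((\<lambda>t. c t (Suc k) - c t k) has_real_derivative Gc t (Suc k) - Gc t k) (at t)" if "k \<in> {1..n}" for k
    unfolding Gc_def by (rule DERIV_diff[OF dc dc]) (use that t in auto)
  have "((\<lambda>t. \<Sum>k=1..n. (c t (Suc k) - c t k)\<^sup>2) has_real_derivative (\<Sum>k=1..n. 2 * (c t (Suc k) - c t k) * (Gc t (Suc k) - Gc t k))) (at t)"
    by (rule DERIV_sum, rule DERIV_sq, rule dd)
  then show ?thesis unfolding Ga_def Ga'_def by (rule DERIV_cmult)
qed

lemma c_wv: "continuous_on {0..T} (\<lambda>t. wv t k)" unfolding wv_def by (intro continuous_intros cs gl_cont)
lemma c_En: "continuous_on {0..T} (\<lambda>t. En n t)" unfolding En_def by (intro continuous_intros c_wv)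
lemma c_Ga: "continuous_on {0..T} (\<lambda>t. Ga n t)" unfolding Ga_def by (intro continuous_intros cc)
lemma c_Dn: "continuous_on {0..T} (\<lambda>t. Dn n t)" unfolding Dn_def by (intro continuous_intros c_wv)
lemma c_aw: "continuous_on {0..T} (\<lambda>t. aw t k)"
proof -
  have "\<forall>t\<in>{0..T}. 2 * phi B (c t k) \<noteq> 0" using phi_pos by (metis atLeastAtMost_iff less_irrefl mult_eq_0_iff zero_neq_numeral)
  then show ?thesis unfolding aw_def by (intro continuous_on_divide continuous_intros cont_phi)
qed
lemma c_eps: "continuous_on {0..T} (\<lambda>t. eps n t)" unfolding eps_def by (intro continuous_intros c_aw c_wv cs)

definition Zf where "Zf n t = En n t + mu * Ga n t"

lemma C6_nn: "0 \<le> C6" unfolding C6_def using Gstar_nn KR_nn by (intro add_nonneg_nonneg mult_nonneg_nonneg) auto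
lemma LZ_nn: "0 \<le> LZ" using LZ_ge(1) KR_nn by linarith

lemma phi_step: "t \<in> {0..T} \<Longrightarrow>
  exp (- LZ * t) * Zf n t + integral {0..t} (\<lambda>\<tau>. exp (- LZ * \<tau>) * (Dn n \<tau> / 4))
   - integral {0..t} (\<lambda>\<tau>. C6 + \<bar>eps n \<tau>\<bar>) \<le> Zf n 0"
proof -
  assume t: "t \<in> {0..T}"
  define \<Phi> where "\<Phi> = (\<lambda>t. exp (- LZ * t) * Zf n t + integral {0..t} (\<lambda>\<tau>. exp (- LZ * \<tau>) * (Dn n \<tau> / 4))
   - integral {0..t} (\<lambda>\<tau>. C6 + \<bar>eps n \<tau>\<bar>))"
  have cZ: "continuous_on {0..T} (Zf n)" unfolding Zf_def by (intro continuous_intros c_En c_Ga)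
  have cD: "continuous_on {0..T} (\<lambda>\<tau>. exp (- LZ * \<tau>) * (Dn n \<tau> / 4))" by (intro continuous_intros c_Dn) auto
  have cE: "continuous_on {0..T} (\<lambda>\<tau>. C6 + \<bar>eps n \<tau>\<bar>)" by (intro continuous_intros c_eps)
  have "\<Phi> t \<le> \<Phi> 0"
  proof (rule mono_phi[where \<Phi>'="\<lambda>t. exp (- LZ * t) * (- LZ) * Zf n t + (En' n t + mu * Ga' n t) * exp (- LZ * t)
        + exp (- LZ * t) * (Dn n t / 4) - (C6 + \<bar>eps n t\<bar>)"])
    show "0 \<le> T" using T by simp
    show "continuous_on {0..T} \<Phi>" unfolding \<Phi>_def by (intro continuous_intros cZ cont_int0 cD cE)
    show "t \<in> {0..T}" by fact
    fix x assume x: "0 < x" "x < T"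
    have dZ: "(Zf n has_real_derivative En' n x + mu * Ga' n x) (at x)"
    proof -
      have "((\<lambda>t. En n t + mu * Ga n t) has_real_derivative En' n x + mu * Ga' n x) (at x)"
        by (rule DERIV_add[OF d_En[OF x] DERIV_cmult[OF d_Ga[OF x]]])
      then show ?thesis unfolding Zf_def by (simp add: fun_eq_iff)
    qed
    have de: "((\<lambda>t. exp (- LZ * t)) has_real_derivative exp (- LZ * x) * (- LZ)) (at x)"
      using DERIV_fun_exp[OF DERIV_cmult_Id[of "- LZ"]] by simp
    have d1: "((\<lambda>t. exp (- LZ * t) * Zf n t) has_real_derivative exp (- LZ * x) * (- LZ) * Zf n x + (En' n x + mu * Ga' n x) * exp (- LZ * x)) (at x)"
      by (rule DERIV_mult[OF de dZ])
    show "(\<Phi> has_real_derivative exp (- LZ * x) * (- LZ) * Zf n x + (En' n x + mu * Ga' n x) * exp (- LZ * x)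
        + exp (- LZ * x) * (Dn n x / 4) - (C6 + \<bar>eps n x\<bar>)) (at x)"
      unfolding \<Phi>_def by (rule DERIV_diff[OF DERIV_add[OF d1 deriv_int0[OF cD x]] deriv_int0[OF cE x]])
    show "exp (- LZ * x) * (- LZ) * Zf n x + (En' n x + mu * Ga' n x) * exp (- LZ * x)
        + exp (- LZ * x) * (Dn n x / 4) - (C6 + \<bar>eps n x\<bar>) \<le> 0"
    proof -
      have xx: "x \<in> {0..T}" using x by auto
      have pw: "En' n x + mu * Ga' n x - LZ * Zf n x + Dn n x / 4 \<le> C6 + \<bar>eps n x\<bar>"
        using pointwise[OF xx, of n] unfolding Zf_def by linarith
      have e1: "exp (- LZ * x) \<le> 1" using LZ_nn x by simp
      have "exp (- LZ * x) * (En' n x + mu * Ga' n x - LZ * Zf n x + Dn n x / 4) \<le> exp (- LZ * x) * (C6 + \<bar>eps n x\<bar>)"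
        using pw by (intro mult_left_mono) auto
      also have "\<dots> \<le> 1 * (C6 + \<bar>eps n x\<bar>)" using e1 C6_nn by (intro mult_right_mono) auto
      finally show ?thesis by (simp add: algebra_simps)
    qed
  qed
  then show ?thesis unfolding \<Phi>_def by simp
qed

end


lemma sum_shift1: "(\<Sum>k=1..N. f k) = (\<Sum>j<N. f (Suc j))" for f :: "nat \<Rightarrow> real"
  by (induction N) (auto simp: sum.cl_ivl_Suc)

lemma partial_le_l2: "in_l2 f \<Longrightarrow> 0 < h \<Longrightarrow> h * (\<Sum>k=1..N. (f k)\<^sup>2) \<le> l2sq_r h f"
proof -
  assume f: "in_l2 f" and h: "0 < h"
  have su: "summable (\<lambda>j. (f (Suc j))\<^sup>2)" using f unfolding in_l2_def .
  have "(\<Sum>k=1..N. (f k)\<^sup>2) = (\<Sum>j<N. (f (Suc j))\<^sup>2)" by (rule sum_shift1)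
  also have "\<dots> \<le> (\<Sum>j. (f (Suc j))\<^sup>2)" by (rule sum_le_suminf[OF su]) auto
  finally show ?thesis unfolding l2sq_r_def using h by (intro mult_left_mono) auto
qed

context setting begin

definition Q0 where "Q0 = Ms0\<^sup>2 + mu * Mc0\<^sup>2 + C6 * T"
definition Ie where "Ie n = integral {0..T} (\<lambda>\<tau>. \<bar>eps n \<tau>\<bar>)"

lemma Z0: "Zf n 0 \<le> Ms0\<^sup>2 + mu * Mc0\<^sup>2"
proof -
  have "En n 0 = h * (\<Sum>k=1..Suc n. (s0 k)\<^sup>2)"
    unfolding En_def wv_def by (intro arg_cong[where f="\<lambda>x. h * x"] sum.cong) (auto simp: sinit gl_init)
  also have "\<dots> \<le> l2sq_r h s0" by (rule partial_le_l2[OF s0l2 h])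
  finally have e: "En n 0 \<le> Ms0\<^sup>2" using s0n by simp
  have "Ga n 0 = h * (\<Sum>k=1..n. (Dp h c0 k)\<^sup>2)"
  proof -
    have "Ga n 0 = (1 / h) * (\<Sum>k=1..n. (c0 (Suc k) - c0 k)\<^sup>2)"
      unfolding Ga_def by (intro arg_cong[where f="\<lambda>x. (1 / h) * x"] sum.cong) (auto simp: cinit)
    also have "\<dots> = h * (\<Sum>k=1..n. (Dp h c0 k)\<^sup>2)"
    proof -
      have "h * (\<Sum>k=1..n. (Dp h c0 k)\<^sup>2) = h * (\<Sum>k=1..n. (c0 (Suc k) - c0 k)\<^sup>2 / h\<^sup>2)"
        unfolding Dp_def by (simp add: power_divide)
      also have "\<dots> = h * ((\<Sum>k=1..n. (c0 (Suc k) - c0 k)\<^sup>2) / h\<^sup>2)" by (simp add: sum_divide_distrib)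
      also have "\<dots> = (1 / h) * (\<Sum>k=1..n. (c0 (Suc k) - c0 k)\<^sup>2)" using h by (simp add: power2_eq_square)
      finally show ?thesis by simp
    qed
    finally show ?thesis .
  qed
  also have "\<dots> \<le> l2sq_r h (Dp h c0)" by (rule partial_le_l2[OF c0l2 h])
  finally have g: "Ga n 0 \<le> Mc0\<^sup>2" using c0n by simp
  show ?thesis unfolding Zf_def using e g mu_pos by (simp add: add_mono mult_left_mono)
qed

lemma ie_eq: "integral {0..T} (\<lambda>\<tau>. C6 + \<bar>eps n \<tau>\<bar>) = C6 * T + Ie n"
proof -
  have i: "(\<lambda>\<tau>. \<bar>eps n \<tau>\<bar>) integrable_on {0..T}" by (intro integrable_continuous_real continuous_intros c_eps)
  have "integral {0..T} (\<lambda>\<tau>. C6 + \<bar>eps n \<tau>\<bar>) = integral {0..T} (\<lambda>\<tau>. C6) + integral {0..T} (\<lambda>\<tau>. \<bar>eps n \<tau>\<bar>)"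
    by (rule integral_add[OF _ i]) (intro integrable_continuous_real continuous_on_const)
  then show ?thesis unfolding Ie_def using T by simp
qed

lemma Dn_int_nn: "t \<in> {0..T} \<Longrightarrow> 0 \<le> integral {0..t} (\<lambda>\<tau>. exp (- LZ * \<tau>) * (Dn n \<tau> / 4))"
proof -
  assume t: "t \<in> {0..T}"
  have i: "(\<lambda>\<tau>. exp (- LZ * \<tau>) * (Dn n \<tau> / 4)) integrable_on {0..t}"
    by (rule integrable_continuous_real, rule continuous_on_subset[of "{0..T}"]) (use t in \<open>auto intro!: continuous_intros c_Dn\<close>)
  show ?thesis by (rule integral_nonneg[OF i]) (use Dn_nn in \<open>simp add: zero_le_mult_iff\<close>)
qed

lemma CE_mono: "t \<in> {0..T} \<Longrightarrow> integral {0..t} (\<lambda>\<tau>. C6 + \<bar>eps n \<tau>\<bar>) \<le> C6 * T + Ie n"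
proof -
  assume t: "t \<in> {0..T}"
  have "integral {0..t} (\<lambda>\<tau>. C6 + \<bar>eps n \<tau>\<bar>) \<le> integral {0..T} (\<lambda>\<tau>. C6 + \<bar>eps n \<tau>\<bar>)"
    by (rule int_mono_sub[OF _ _ t]) (use C6_nn in \<open>auto intro!: continuous_intros c_eps\<close>)
  then show ?thesis using ie_eq by simp
qed

lemma EB1: "t \<in> {0..T} \<Longrightarrow> En n t \<le> exp (LZ * T) * (Q0 + Ie n)"
proof -
  assume t: "t \<in> {0..T}"
  have "exp (- LZ * t) * Zf n t \<le> Zf n 0 + integral {0..t} (\<lambda>\<tau>. C6 + \<bar>eps n \<tau>\<bar>)"
    using phi_step[OF t, of n] Dn_int_nn[OF t, of n] by linarith
  also have "\<dots> \<le> Q0 + Ie n" using Z0[of n] CE_mono[OF t, of n] unfolding Q0_def by linarith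
  finally have a: "exp (- LZ * t) * Zf n t \<le> Q0 + Ie n" .
  have "En n t \<le> Zf n t" unfolding Zf_def using Ga_nn mu_pos by (simp add: mult_nonneg_nonneg)
  also have "Zf n t = exp (LZ * t) * (exp (- LZ * t) * Zf n t)" by (simp add: exp_minus field_simps)
  also have "\<dots> \<le> exp (LZ * t) * (Q0 + Ie n)" using a by (intro mult_left_mono) auto
  also have "\<dots> \<le> exp (LZ * T) * (Q0 + Ie n)"
  proof (rule mult_right_mono)
    show "exp (LZ * t) \<le> exp (LZ * T)" using t LZ_nn by (simp add: mult_left_mono)
    have "0 \<le> En n t" by (rule En_nn)
    then show "0 \<le> Q0 + Ie n" using calculation by (meson exp_gt_zero less_le_not_le order_trans zero_le_mult_iff)
  qed
  finally show ?thesis .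
qed

lemma EB2: "integral {0..T} (Dn n) \<le> 4 * exp (LZ * T) * (Q0 + Ie n)"
proof -
  have TT: "T \<in> {0..T}" using T by simp
  have Zn: "0 \<le> Zf n T" unfolding Zf_def using En_nn Ga_nn mu_pos by (simp add: mult_nonneg_nonneg)
  have a: "integral {0..T} (\<lambda>\<tau>. exp (- LZ * \<tau>) * (Dn n \<tau> / 4)) \<le> Q0 + Ie n"
    using phi_step[OF TT, of n] Z0[of n] CE_mono[OF TT, of n] Zn unfolding Q0_def
    by (smt (verit) exp_gt_zero mult_nonneg_nonneg)
  have iD: "(Dn n) integrable_on {0..T}" by (rule integrable_continuous_real[OF c_Dn])
  have "integral {0..T} (\<lambda>\<tau>. exp (- LZ * T) / 4 * Dn n \<tau>) \<le> integral {0..T} (\<lambda>\<tau>. exp (- LZ * \<tau>) * (Dn n \<tau> / 4))"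
  proof (rule integral_le)
    show "(\<lambda>\<tau>. exp (- LZ * T) / 4 * Dn n \<tau>) integrable_on {0..T}" using integrable_on_cmult_left[OF iD, of "exp (- LZ * T) / 4"] by simp
    show "(\<lambda>\<tau>. exp (- LZ * \<tau>) * (Dn n \<tau> / 4)) integrable_on {0..T}"
      by (intro integrable_continuous_real continuous_intros c_Dn) auto
    fix x assume x: "x \<in> {0..T}"
    have "exp (- LZ * T) \<le> exp (- LZ * x)" using x LZ_nn by (simp add: mult_left_mono)
    then show "exp (- LZ * T) / 4 * Dn n x \<le> exp (- LZ * x) * (Dn n x / 4)"
      using Dn_nn[of n x] by (simp add: mult_right_mono)
  qed
  then have "exp (- LZ * T) / 4 * integral {0..T} (Dn n) \<le> Q0 + Ie n" using a by simp
  then have "integral {0..T} (Dn n) \<le> (Q0 + Ie n) * (4 / exp (- LZ * T))"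
    by (simp add: field_simps)
  then show ?thesis by (simp add: exp_minus field_simps)
qed

lemma Ie_nn: "0 \<le> Ie n" unfolding Ie_def by (intro integral_nonneg integrable_continuous_real continuous_intros c_eps) auto

lemma eps_bd: "real (Suc n) * h \<ge> 1 \<Longrightarrow> t \<in> {0..T} \<Longrightarrow> \<bar>eps n t\<bar> \<le> (3 * Aup / h) * ((s t (Suc n))\<^sup>2 + (s t (Suc (Suc n)))\<^sup>2)"
proof -
  assume N: "real (Suc n) * h \<ge> 1" and t: "t \<in> {0..T}"
  have g0: "gl t (Suc n) = 0" unfolding gl_def using chi_zero[of "Suc n"] N by simp
  define a where "a = s t (Suc n)"
  define b where "b = s t (Suc (Suc n))"
  have w: "wv t (Suc n) = a" unfolding wv_def a_def using g0 by simp
  have A: "0 \<le> aw t (Suc n)" "aw t (Suc n) \<le> Aup" using aw_A[OF t, of "Suc n"] by auto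
  have ab: "\<bar>a\<bar> * \<bar>b - a\<bar> \<le> (3/2) * (a\<^sup>2 + b\<^sup>2)"
  proof -
    have "\<bar>a\<bar> * \<bar>b - a\<bar> \<le> \<bar>a\<bar> * (\<bar>b\<bar> + \<bar>a\<bar>)" by (intro mult_left_mono) auto
    also have "\<dots> = \<bar>a\<bar> * \<bar>b\<bar> + a\<^sup>2" by (simp add: algebra_simps power2_eq_square)
    also have "\<bar>a\<bar> * \<bar>b\<bar> \<le> (a\<^sup>2 + b\<^sup>2) / 2" using sum_squares_bound[of "\<bar>a\<bar>" "\<bar>b\<bar>"] by (simp add: power2_eq_square)
    finally have "\<bar>a\<bar> * \<bar>b - a\<bar> \<le> (a\<^sup>2 + b\<^sup>2) / 2 + a\<^sup>2" by simp
    moreover have "0 \<le> b\<^sup>2" by simp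
    moreover have "3 / 2 * (a\<^sup>2 + b\<^sup>2) = 3 / 2 * a\<^sup>2 + 3 / 2 * b\<^sup>2" by (simp add: algebra_simps)
    ultimately show ?thesis by linarith
  qed
  have "\<bar>eps n t\<bar> = (2 / h) * aw t (Suc n) * (\<bar>a\<bar> * \<bar>b - a\<bar>)"
    unfolding eps_def w a_def[symmetric] b_def[symmetric] using h A by (simp add: abs_mult)
  also have "\<dots> \<le> (2 / h) * Aup * ((3/2) * (a\<^sup>2 + b\<^sup>2))"
  proof -
    have "aw t (Suc n) * (\<bar>a\<bar> * \<bar>b - a\<bar>) \<le> Aup * ((3/2) * (a\<^sup>2 + b\<^sup>2))" by (rule mult_mono) (use A ab in auto)
    then have "(2 / h) * (aw t (Suc n) * (\<bar>a\<bar> * \<bar>b - a\<bar>)) \<le> (2 / h) * (Aup * ((3/2) * (a\<^sup>2 + b\<^sup>2)))"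
      using h by (intro mult_left_mono) auto
    then show ?thesis by (simp add: mult.assoc)
  qed
  also have "\<dots> = (3 * Aup / h) * (a\<^sup>2 + b\<^sup>2)" using h by (simp add: field_simps)
  finally show ?thesis unfolding a_def b_def .
qed

lemma Ie_lim: "Ie \<longlonglongrightarrow> 0"
proof -
  define I where "I = (\<lambda>m. integral {0..T} (\<lambda>t. (s t m)\<^sup>2))"
  have I0: "I \<longlonglongrightarrow> 0" unfolding I_def by (rule tail_s)
  have u0: "(\<lambda>n. (3 * Aup / h) * (I (Suc n) + I (Suc (Suc n)))) \<longlonglongrightarrow> (3 * Aup / h) * (0 + 0)"
    by (intro tendsto_mult tendsto_const tendsto_add LIMSEQ_Suc I0)
  then have u: "(\<lambda>n. (3 * Aup / h) * (I (Suc n) + I (Suc (Suc n)))) \<longlonglongrightarrow> 0" by simp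
  obtain n0 :: nat where n0: "real n0 * h \<ge> 1"
    using reals_Archimedean3[OF h] by (metis less_le)
  show ?thesis
  proof (rule tendsto_sandwich[OF _ _ tendsto_const u])
    show "\<forall>\<^sub>F n in sequentially. 0 \<le> Ie n" by (intro always_eventually allI Ie_nn)
    show "\<forall>\<^sub>F n in sequentially. Ie n \<le> 3 * Aup / h * (I (Suc n) + I (Suc (Suc n)))"
    proof (rule eventually_sequentiallyI[of n0])
      fix n assume "n0 \<le> n"
      then have N: "real (Suc n) * h \<ge> 1" using n0 h by (smt (verit) mult_right_mono of_nat_le_iff le_SucI)
      have i1: "(\<lambda>t. (s t m)\<^sup>2) integrable_on {0..T}" for m by (intro integrable_continuous_real continuous_intros cs)
      have "Ie n \<le> integral {0..T} (\<lambda>t. (3 * Aup / h) * ((s t (Suc n))\<^sup>2 + (s t (Suc (Suc n)))\<^sup>2))"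
        unfolding Ie_def
      proof (rule integral_le)
        show "(\<lambda>\<tau>. \<bar>eps n \<tau>\<bar>) integrable_on {0..T}" by (intro integrable_continuous_real continuous_intros c_eps)
        show "(\<lambda>t. (3 * Aup / h) * ((s t (Suc n))\<^sup>2 + (s t (Suc (Suc n)))\<^sup>2)) integrable_on {0..T}"
          by (intro integrable_continuous_real continuous_intros cs)
        fix x assume "x \<in> {0..T}"
        then show "\<bar>eps n x\<bar> \<le> (3 * Aup / h) * ((s x (Suc n))\<^sup>2 + (s x (Suc (Suc n)))\<^sup>2)" by (rule eps_bd[OF N])
      qed
      also have "\<dots> = 3 * Aup / h * (I (Suc n) + I (Suc (Suc n)))"
        unfolding I_def using i1 by (simp add: integral_add)
      finally show "Ie n \<le> 3 * Aup / h * (I (Suc n) + I (Suc (Suc n)))" .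
    qed
  qed
qed

end


context setting begin

definition K1 where "K1 = 2 * exp (LZ * T) * Q0 + 2 * \<eta>\<^sup>2"
definition K2 where "K2 = 8 * exp (LZ * T) * Q0 + 2 * Gstar * T"

lemma lim_le:
  fixes X a b :: real and e :: "nat \<Rightarrow> real"
  assumes "e \<longlonglongrightarrow> 0" "\<And>n. n \<ge> N \<Longrightarrow> X \<le> a + b * e n"
  shows "X \<le> a"
proof -
  have "(\<lambda>n. a + b * e n) \<longlonglongrightarrow> a + b * 0" by (intro tendsto_intros assms(1))
  then have l: "(\<lambda>n. a + b * e n) \<longlonglongrightarrow> a" by simp
  show ?thesis by (rule LIMSEQ_le_const[OF l]) (use assms(2) in auto)
qed

lemma FA: "t \<in> {0..T} \<Longrightarrow> h * (\<Sum>k=1..N. (s t k)\<^sup>2) \<le> K1"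
proof -
  assume t: "t \<in> {0..T}"
  have b: "h * (\<Sum>k=1..N. (s t k)\<^sup>2) \<le> (2 * exp (LZ * T) * Q0 + 2 * \<eta>\<^sup>2) + (2 * exp (LZ * T)) * Ie n" if n: "n \<ge> N" for n
  proof -
    have "h * (\<Sum>k=1..N. (s t k)\<^sup>2) \<le> h * (\<Sum>k=1..Suc n. (s t k)\<^sup>2)"
      using h n by (intro mult_left_mono sum_mono2) auto
    also have "\<dots> \<le> h * (\<Sum>k=1..Suc n. 2 * (wv t k)\<^sup>2 + 2 * (gl t k)\<^sup>2)"
      using h by (intro mult_left_mono sum_mono) (auto simp: wv_def intro: order_trans[OF _ sq_sum_le])
    also have "\<dots> = 2 * En n t + 2 * (h * (\<Sum>k=1..Suc n. (gl t k)\<^sup>2))"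
      unfolding En_def by (simp add: sum.distrib sum_distrib_left algebra_simps)
    also have "\<dots> \<le> 2 * (exp (LZ * T) * (Q0 + Ie n)) + 2 * \<eta>\<^sup>2"
      using EB1[OF t, of n] gsq_bd[OF t, of "Suc n"] by linarith
    finally show ?thesis by (simp add: algebra_simps)
  qed
  show ?thesis unfolding K1_def by (rule lim_le[OF Ie_lim b])
qed

lemma FB: "integral {0..T} (\<lambda>t. h * (\<Sum>k=1..N. (Dp h (s t) k)\<^sup>2)) \<le> K2"
proof -
  have iF: "(\<lambda>t. h * (\<Sum>k=1..N. (Dp h (s t) k)\<^sup>2)) integrable_on {0..T}"
    unfolding Dp_def using h by (intro integrable_continuous_real continuous_intros cs) auto
  have b: "integral {0..T} (\<lambda>t. h * (\<Sum>k=1..N. (Dp h (s t) k)\<^sup>2)) \<le> (8 * exp (LZ * T) * Q0 + 2 * Gstar * T) + (8 * exp (LZ * T)) * Ie n"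
    if n: "n \<ge> N" for n
  proof -
    have pt: "h * (\<Sum>k=1..N. (Dp h (s t) k)\<^sup>2) \<le> 2 * Dn n t + 2 * Gstar" if t: "t \<in> {0..T}" for t
    proof -
      have "h * (\<Sum>k=1..N. (Dp h (s t) k)\<^sup>2) = (1 / h) * (\<Sum>k=1..N. (s t (Suc k) - s t k)\<^sup>2)"
      proof -
        have "h * (\<Sum>k=1..N. (Dp h (s t) k)\<^sup>2) = h * ((\<Sum>k=1..N. (s t (Suc k) - s t k)\<^sup>2) / h\<^sup>2)"
          unfolding Dp_def by (simp add: power_divide sum_divide_distrib)
        then show ?thesis using h by (simp add: power2_eq_square)
      qed
      also have "\<dots> \<le> (1 / h) * (\<Sum>k=1..n. (s t (Suc k) - s t k)\<^sup>2)"
        using h n by (intro mult_left_mono sum_mono2) auto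
      also have "\<dots> \<le> (1 / h) * (\<Sum>k=1..n. 2 * (wv t (Suc k) - wv t k)\<^sup>2 + 2 * (gl t (Suc k) - gl t k)\<^sup>2)"
      proof (intro mult_left_mono sum_mono)
        fix k
        have "s t (Suc k) - s t k = (wv t (Suc k) - wv t k) + (gl t (Suc k) - gl t k)" unfolding wv_def by simp
        then show "(s t (Suc k) - s t k)\<^sup>2 \<le> 2 * (wv t (Suc k) - wv t k)\<^sup>2 + 2 * (gl t (Suc k) - gl t k)\<^sup>2"
          using sq_sum_le by simp
      qed (use h in auto)
      also have "\<dots> = 2 * ((1 / h) * (\<Sum>k=1..n. (wv t (Suc k) - wv t k)\<^sup>2)) + 2 * ((1 / h) * (\<Sum>k=1..n. (gl t (Suc k) - gl t k)\<^sup>2))"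
        by (simp add: sum.distrib sum_distrib_left algebra_simps)
      also have "\<dots> \<le> 2 * Dn n t + 2 * Gstar"
      proof -
        have "(1 / h) * (\<Sum>k=1..n. (wv t (Suc k) - wv t k)\<^sup>2) \<le> Dn n t" unfolding Dn_def using h by (intro mult_left_mono) auto
        moreover have "(1 / h) * (\<Sum>k=1..n. (gl t (Suc k) - gl t k)\<^sup>2) \<le> Gg n t"
          unfolding Gg_def using h by (intro mult_left_mono sum_mono2) auto
        ultimately show ?thesis using Gg_le[OF t, of n] by linarith
      qed
      finally show ?thesis .
    qed
    have "integral {0..T} (\<lambda>t. h * (\<Sum>k=1..N. (Dp h (s t) k)\<^sup>2)) \<le> integral {0..T} (\<lambda>t. 2 * Dn n t + 2 * Gstar)"
    proof (rule integral_le[OF iF])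
      show "(\<lambda>t. 2 * Dn n t + 2 * Gstar) integrable_on {0..T}" by (intro integrable_continuous_real continuous_intros c_Dn)
      fix x assume "x \<in> {0..T}"
      then show "h * (\<Sum>k=1..N. (Dp h (s x) k)\<^sup>2) \<le> 2 * Dn n x + 2 * Gstar" by (rule pt)
    qed
    also have "\<dots> = 2 * integral {0..T} (Dn n) + 2 * Gstar * T"
    proof -
      have iD: "(Dn n) integrable_on {0..T}" by (rule integrable_continuous_real[OF c_Dn])
      have "integral {0..T} (\<lambda>t. 2 * Dn n t + 2 * Gstar) = integral {0..T} (\<lambda>t. 2 * Dn n t) + integral {0..T} (\<lambda>t. 2 * Gstar)"
        by (rule integral_add) (use iD in \<open>auto intro: integrable_on_cmult_left[OF iD, of 2, simplified] integrable_continuous_real continuous_on_const\<close>)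
      then show ?thesis using T by simp
    qed
    also have "\<dots> \<le> 2 * (4 * exp (LZ * T) * (Q0 + Ie n)) + 2 * Gstar * T" using EB2[of n] by linarith
    finally show ?thesis by (simp add: algebra_simps)
  qed
  show ?thesis unfolding K2_def by (rule lim_le[OF Ie_lim b])
qed

definition Kfin where "Kfin = K1 + K2 + 1"

lemma K12_nn: "0 \<le> K1" "0 \<le> K2"
proof -
  have "0 \<le> Q0" unfolding Q0_def using mu_pos C6_nn T by (intro add_nonneg_nonneg mult_nonneg_nonneg) auto
  then show "0 \<le> K1" "0 \<le> K2" unfolding K1_def K2_def using Gstar_nn T by auto
qed

end



lemma sum_ennreal_le:
  fixes f :: "nat \<Rightarrow> real"
  assumes "\<And>n. (\<Sum>i<n. f i) \<le> K" "\<And>i. 0 \<le> f i"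
  shows "(\<Sum>i. ennreal (f i)) \<le> ennreal K"
proof -
  have "(\<Sum>i. ennreal (f i)) = (SUP n. \<Sum>i<n. ennreal (f i))" by (rule suminf_eq_SUP)
  also have "\<dots> \<le> ennreal K"
  proof (rule SUP_least)
    fix n
    have "(\<Sum>i<n. ennreal (f i)) = ennreal (\<Sum>i<n. f i)" using assms(2) by simp
    also have "\<dots> \<le> ennreal K" using assms(1) by (rule ennreal_leI)
    finally show "(\<Sum>i<n. ennreal (f i)) \<le> ennreal K" .
  qed
  finally show ?thesis .
qed

context setting begin

lemma FA_enn: "t \<in> {0..T} \<Longrightarrow> l2sq h (s t) \<le> ennreal K1"
proof -
  assume t: "t \<in> {0..T}"
  show ?thesis unfolding l2sq_def
  proof (rule sum_ennreal_le)
    fix n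
    have "(\<Sum>i<n. h * (s t (Suc i))\<^sup>2) = h * (\<Sum>i<n. (s t (Suc i))\<^sup>2)" by (simp add: sum_distrib_left)
    also have "\<dots> = h * (\<Sum>k=1..n. (s t k)\<^sup>2)" using sum_shift1[of "\<lambda>k. (s t k)\<^sup>2" n] by simp
    also have "\<dots> \<le> K1" by (rule FA[OF t])
    finally show "(\<Sum>i<n. h * (s t (Suc i))\<^sup>2) \<le> K1" .
  qed (use h in simp)
qed

lemma FB_enn: "(\<integral>\<^sup>+ t\<in>{0..T}. l2sq h (Dp h (s t)) \<partial>lborel) \<le> ennreal K2"
proof -
  define F where "F = (\<lambda>i t. h * (Dp h (s t) (Suc i))\<^sup>2)"
  have Fnn: "0 \<le> F i t" for i t unfolding F_def using h by simp
  have cF: "continuous_on {0..T} (F i)" for i unfolding F_def Dp_def using h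
    by (intro continuous_intros cs) auto
  define a where "a = (\<lambda>i t. ennreal (F i t) * indicator {0..T} t)"
  have ma: "a i \<in> borel_measurable lborel" for i
  proof -
    have m1: "(\<lambda>t. indicator {0..T} t *\<^sub>R F i t) \<in> borel_measurable borel"
      by (rule borel_measurable_continuous_on_indicator[OF _ cF]) simp
    have m2: "(\<lambda>t. ennreal (indicator {0..T} t *\<^sub>R F i t)) \<in> borel_measurable borel"
      by (rule measurable_compose[OF m1 measurable_ennreal])
    have e: "(\<lambda>t. ennreal (indicator {0..T} t *\<^sub>R F i t)) = a i"
      unfolding a_def by (auto simp: indicator_def fun_eq_iff)
    show ?thesis using m2 unfolding e by simp
  qed
  have eq1: "(\<integral>\<^sup>+ t\<in>{0..T}. l2sq h (Dp h (s t)) \<partial>lborel) = (\<integral>\<^sup>+ t. (\<Sum>i. a i t) \<partial>lborel)"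
    unfolding l2sq_def a_def F_def by (simp add: ennreal_suminf_multc)
  also have "\<dots> = (\<Sum>i. integral\<^sup>N lborel (a i))" by (rule nn_integral_suminf[OF ma])
  also have "\<dots> = (\<Sum>i. ennreal (integral {0..T} (F i)))"
  proof (rule suminf_cong)
    fix i
    have hi: "(F i has_integral integral {0..T} (F i)) {0..T}"
      by (rule integrable_integral, rule integrable_continuous_real[OF cF])
    have "integral\<^sup>N lborel (\<lambda>x. ennreal (indicator {0..T} x * F i x)) = ennreal (integral {0..T} (F i))"
      by (rule nn_integral_has_integral_lebesgue[OF _ hi]) (rule Fnn)
    moreover have "(\<lambda>x. ennreal (indicator {0..T} x * F i x)) = a i" unfolding a_def by (auto simp: fun_eq_iff indicator_def)
    ultimately show "integral\<^sup>N lborel (a i) = ennreal (integral {0..T} (F i))" by simp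
  qed
  also have "\<dots> \<le> ennreal K2"
  proof (rule sum_ennreal_le)
    fix n
    have "(\<Sum>i<n. integral {0..T} (F i)) = integral {0..T} (\<lambda>t. \<Sum>i<n. F i t)"
      by (rule integral_sum[symmetric]) (auto intro: integrable_continuous_real[OF cF])
    also have "\<dots> = integral {0..T} (\<lambda>t. h * (\<Sum>k=1..n. (Dp h (s t) k)\<^sup>2))"
    proof -
      have "(\<Sum>i<n. F i t) = h * (\<Sum>k=1..n. (Dp h (s t) k)\<^sup>2)" for t
        unfolding F_def using sum_shift1[of "\<lambda>k. (Dp h (s t) k)\<^sup>2" n] by (simp add: sum_distrib_left)
      then show ?thesis by simp
    qed
    also have "\<dots> \<le> K2" by (rule FB)
    finally show "(\<Sum>i<n. integral {0..T} (F i)) \<le> K2" .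
    fix i show "0 \<le> integral {0..T} (F i)"
      by (rule integral_nonneg[OF integrable_continuous_real[OF cF]]) (rule Fnn)
  qed
  finally show ?thesis .
qed

lemma main_bound:
  "(SUP t\<in>{0..T}. l2sq h (s t)) + (\<integral>\<^sup>+ t\<in>{0..T}. l2sq h (Dp h (s t)) \<partial>lborel) \<le> ennreal Kfin"
proof -
  have "(SUP t\<in>{0..T}. l2sq h (s t)) \<le> ennreal K1" by (rule SUP_least) (rule FA_enn)
  then have "(SUP t\<in>{0..T}. l2sq h (s t)) + (\<integral>\<^sup>+ t\<in>{0..T}. l2sq h (Dp h (s t)) \<partial>lborel) \<le> ennreal K1 + ennreal K2"
    using FB_enn by (rule add_mono)
  also have "\<dots> = ennreal (K1 + K2)" using K12_nn by (simp add: ennreal_plus)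
  also have "\<dots> \<le> ennreal Kfin" unfolding Kfin_def by (rule ennreal_leI) simp
  finally show ?thesis .
qed

end

theorem mainTheorem11:
  fixes \<eta> lam C0 cm \<phi>min \<phi>max B T \<beta> M\<psi> Ms0 Mc0 :: real
  assumes "B = -1 \<or> B = 1"
    and "lam > 0" and "T > 0" and "\<eta> > 0"
    and "1/4 < \<beta>" and "\<beta> < 1/2"
    and "0 < cm" and "cm \<le> C0"
    and "0 < \<phi>min"
    and "\<forall>x\<in>{0..C0}. \<phi>min \<le> phi B x \<and> phi B x \<le> \<phi>max"
    and "B = 1 \<longrightarrow> \<eta> < 1"
  shows "\<exists>K>0. \<forall>h \<psi> s0 c0 s c.
     h > 0 \<and>
     holder_bdd \<beta> T \<psi> M\<psi> \<and> (\<forall>t\<in>{0..T}. 0 \<le> \<psi> t \<and> \<psi> t \<le> \<eta>) \<and> \<psi> 0 = 0 \<and>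
     (\<forall>k. 0 \<le> s0 k \<and> s0 k \<le> \<eta>) \<and> s0 0 = 0 \<and>
     in_l2 s0 \<and> in_l2 (Dp h s0) \<and> l2sq_r h s0 \<le> Ms0\<^sup>2 \<and>
     (\<forall>k. cm \<le> c0 k \<and> c0 k \<le> C0) \<and>
     in_l2 (\<lambda>k. C0 - c0 k) \<and> in_l2 (Dp h c0) \<and> l2sq_r h (Dp h c0) \<le> Mc0\<^sup>2 \<and>
     NS_solution h T lam B \<psi> s0 c0 s c
     \<longrightarrow> (SUP t\<in>{0..T}. l2sq h (s t))
         + (\<integral>\<^sup>+ t\<in>{0..T}. l2sq h (Dp h (s t)) \<partial>lborel) \<le> ennreal K"
  proof -
  define K where "K = max 1 (setting.Kfin \<eta> lam C0 \<phi>min \<phi>max T \<beta> M\<psi> Ms0 Mc0)"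
  show ?thesis
  proof (intro exI[of _ K] conjI allI impI)
    show "K > 0" unfolding K_def by simp
    fix h \<psi> s0 c0 s c
    assume H: "h > 0 \<and>
     holder_bdd \<beta> T \<psi> M\<psi> \<and> (\<forall>t\<in>{0..T}. 0 \<le> \<psi> t \<and> \<psi> t \<le> \<eta>) \<and> \<psi> 0 = 0 \<and>
     (\<forall>k. 0 \<le> s0 k \<and> s0 k \<le> \<eta>) \<and> s0 0 = 0 \<and>
     in_l2 s0 \<and> in_l2 (Dp h s0) \<and> l2sq_r h s0 \<le> Ms0\<^sup>2 \<and>
     (\<forall>k. cm \<le> c0 k \<and> c0 k \<le> C0) \<and>
     in_l2 (\<lambda>k. C0 - c0 k) \<and> in_l2 (Dp h c0) \<and> l2sq_r h (Dp h c0) \<le> Mc0\<^sup>2 \<and>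
     NS_solution h T lam B \<psi> s0 c0 s c"
    interpret setting \<eta> lam C0 cm \<phi>min \<phi>max B T \<beta> M\<psi> Ms0 Mc0 h \<psi> s0 c0 s c
    proof (unfold_locales)
    qed (use assms H in blast)+
    have "(SUP t\<in>{0..T}. l2sq h (s t)) + (\<integral>\<^sup>+ t\<in>{0..T}. l2sq h (Dp h (s t)) \<partial>lborel) \<le> ennreal Kfin"
      by (rule main_bound)
    also have "\<dots> \<le> ennreal K" unfolding K_def by (rule ennreal_leI) simp
    finally show "(SUP t\<in>{0..T}. l2sq h (s t)) + (\<integral>\<^sup>+ t\<in>{0..T}. l2sq h (Dp h (s t)) \<partial>lborel) \<le> ennreal K" .
  qed
qed

end
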